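(* For each positive integer $k$, let $w_k$ be the optimal value of the linear program \[ \max\sum_{j=1}^k\alpha_j\ \text{ s.t. } f+\sum_{j=1}^k d_j\le1;\ \alpha_j\le\alpha_{j+1}\ (1\le j<k);\ \alpha_j\le3\alpha_l+3d_j+3d_l\ (1\le j,l\le k);\ x_{jl}\ge\alpha_j-d_l\ (1\le j\le l\le k);\ \sum_{l=j}^k x_{jl}\le f\ (1\le j\le k);\ \alpha_j,d_j,f,x_{jl}\ge0. \] Then $\sup_{k \ge 1} w_k \ge 3.220$. *)

theory Defs
  imports Complex_Main "HOL-Library.Extended_Real"
begin

text \<open>Feasibility for the k-th linear program. Indices j, l range over 1..k;
  values of the variable functions outside that range are irrelevant.\<close>
definition lp_feasible ::
  "nat \<Rightarrow> real \<Rightarrow> (nat \<Rightarrow> real) \<Rightarrow> (nat \<Rightarrow> real) \<Rightarrow> (nat \<Rightarrow> nat \<Rightarrow> real) \<Rightarrow> bool" where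
  "lp_feasible k f \<alpha> d x \<longleftrightarrow>
     f + (\<Sum>j=1..k. d j) \<le> 1 \<and>
     (\<forall>j. 1 \<le> j \<and> j < k \<longrightarrow> \<alpha> j \<le> \<alpha> (j+1)) \<and>
     (\<forall>j\<in>{1..k}. \<forall>l\<in>{1..k}. \<alpha> j \<le> 3 * \<alpha> l + 3 * d j + 3 * d l) \<and>
     (\<forall>j l. 1 \<le> j \<and> j \<le> l \<and> l \<le> k \<longrightarrow> x j l \<ge> \<alpha> j - d l) \<and>
     (\<forall>j\<in>{1..k}. (\<Sum>l=j..k. x j l) \<le> f) \<and>
     (\<forall>j\<in>{1..k}. \<alpha> j \<ge> 0 \<and> d j \<ge> 0) \<and> f \<ge> 0 \<and>
     (\<forall>j l. 1 \<le> j \<and> j \<le> l \<and> l \<le> k \<longrightarrow> x j l \<ge> 0)"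

definition lp_value :: "nat \<Rightarrow> ereal" where
  "lp_value k = Sup {ereal (\<Sum>j=1..k. \<alpha> j) | f \<alpha> d x. lp_feasible k f \<alpha> d x}"

end

theory Submission
  imports Defs
begin


definition Pg :: "(nat \<Rightarrow> int) \<Rightarrow> (nat \<Rightarrow> int) \<Rightarrow> (nat \<Rightarrow> nat) \<Rightarrow> (nat \<Rightarrow> int) \<Rightarrow> (nat \<Rightarrow> int)
   \<Rightarrow> nat \<Rightarrow> nat \<Rightarrow> int \<Rightarrow> int \<Rightarrow> nat \<Rightarrow> bool" where
 "Pg A D Q Pd PA K T F M j = (let a = A j; dd = D j; q = Q j in
   0 \<le> dd \<and> dd \<le> a \<and> a - 3*dd \<le> M \<and> M \<le> 3*a + 3*dd \<and>
   (j < K \<longrightarrow> a \<le> A (j+1)) \<and>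
   j \<le> q \<and> q \<le> K+1 \<and> (q \<le> K \<longrightarrow> T \<le> q \<and> a \<le> D q) \<and> (j < q \<longrightarrow> D (q-1) \<le> a) \<and>
   int (q-j)*a - (Pd q - Pd j) \<le> F \<and>
   Pd (j+1) = Pd j + dd \<and> PA (j+1) = PA j + a \<and>
   (j+1 < T \<longrightarrow> D (j+1) \<le> dd) \<and> (T \<le> j \<and> j < K \<longrightarrow> dd \<le> D (j+1)))"

lemma telescope:
  fixes g h :: "nat \<Rightarrow> 'a::ab_group_add"
  assumes "\<And>j. a \<le> j \<Longrightarrow> j < b \<Longrightarrow> g (Suc j) = g j + h j" "a \<le> b"
  shows "(\<Sum>j=a..<b. h j) = g b - g a"
  using assms
proof (induction b)
  case 0 then show ?case by simp
next
  case (Suc b)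
  show ?case
  proof (cases "a = Suc b")
    case True then show ?thesis by simp
  next
    case False
    then have "a \<le> b" using Suc.prems by simp
    then have "(\<Sum>j=a..<Suc b. h j) = (\<Sum>j=a..<b. h j) + h b" by simp
    also have "(\<Sum>j=a..<b. h j) = g b - g a" by (rule Suc.IH) (use Suc.prems \<open>a \<le> b\<close> in auto)
    also have "g b - g a + h b = g (Suc b) - g a" using Suc.prems(1)[of b] \<open>a \<le> b\<close> by simp
    finally show ?thesis .
  qed
qed

lemma mono_steps:
  fixes f :: "nat \<Rightarrow> int"
  assumes "\<And>i. a \<le> i \<Longrightarrow> i < b \<Longrightarrow> f i \<le> f (Suc i)" "a \<le> x" "x \<le> y" "y \<le> b"
  shows "f x \<le> f y"
  using assms
proof (induction y)
  case 0 then show ?case by simp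
next
  case (Suc y)
  show ?case
  proof (cases "x = Suc y")
    case True then show ?thesis by simp
  next
    case False
    then have "f x \<le> f y" using Suc by simp
    also have "f y \<le> f (Suc y)" using Suc.prems False by simp
    finally show ?thesis .
  qed
qed

lemma anti_steps:
  fixes f :: "nat \<Rightarrow> int"
  assumes "\<And>i. a \<le> i \<Longrightarrow> i < b \<Longrightarrow> f (Suc i) \<le> f i" "a \<le> x" "x \<le> y" "y \<le> b"
  shows "f y \<le> f x"
  using mono_steps[of a b "\<lambda>i. - f i" x y] assms by simp

lemma key_int:
  assumes P: "\<forall>j\<in>{1..K}. Pg A D Q Pd PA K T F M j" and j: "1 \<le> j" "j \<le> K"
  shows "(\<Sum>l=j..K. max 0 (A j - D l)) \<le> F"
proof -
  have Pj: "Pg A D Q Pd PA K T F M j" using P j by simp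
  define q where "q = Q j"
  have jq: "j \<le> q" "q \<le> K+1" using Pj unfolding Pg_def q_def Let_def by auto
  have dinc: "D i \<le> D (Suc i)" if "1 \<le> i" "T \<le> i" "i < K" for i
  proof -
    have "Pg A D Q Pd PA K T F M i" using P that by simp
    then show ?thesis using that unfolding Pg_def Let_def by simp
  qed
  have ddec: "D (Suc i) \<le> D i" if "1 \<le> i" "Suc i < T" "i \<le> K" for i
  proof -
    have "Pg A D Q Pd PA K T F M i" using P that by simp
    then show ?thesis using that unfolding Pg_def Let_def by simp
  qed
  have hi: "max 0 (A j - D l) = 0" if "q \<le> l" "l \<le> K" for l
  proof -
    have "q \<le> K" using that by simp
    then have "T \<le> q" "A j \<le> D q" using Pj unfolding Pg_def q_def Let_def by auto
    moreover have "D q \<le> D l" using mono_steps[of q K D q l] dinc that \<open>T \<le> q\<close> jq j by auto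
    ultimately show ?thesis by simp
  qed
  have lo: "max 0 (A j - D l) = A j - D l" if "j \<le> l" "l < q" for l
  proof -
    have a1: "D j \<le> A j" using Pj unfolding Pg_def Let_def by auto
    have a2: "D (q-1) \<le> A j" using Pj that unfolding Pg_def q_def Let_def by auto
    show ?thesis
    proof (cases "l < T")
      case True
      then have "D l \<le> D j" using anti_steps[of j "l" D j l] ddec that j jq True by auto
      then show ?thesis using a1 by simp
    next
      case False
      then have "D l \<le> D (q-1)" using mono_steps[of l K D l "q-1"] dinc that jq j False by auto
      then show ?thesis using a2 by simp
    qed
  qed
  have split: "{j..K} = {j..<q} \<union> {q..K}" using jq by auto
  have "(\<Sum>l=j..K. max 0 (A j - D l)) = (\<Sum>l=j..<q. max 0 (A j - D l)) + (\<Sum>l=q..K. max 0 (A j - D l))"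
    unfolding split by (rule sum.union_disjoint) auto
  also have "(\<Sum>l=q..K. max 0 (A j - D l)) = 0" using hi by simp
  also have "(\<Sum>l=j..<q. max 0 (A j - D l)) = (\<Sum>l=j..<q. A j - D l)" using lo by simp
  also have "\<dots> = int (q-j) * A j - (\<Sum>l=j..<q. D l)" by (simp add: sum_subtractf)
  also have "(\<Sum>l=j..<q. D l) = Pd q - Pd j"
  proof (rule telescope)
    fix i assume "j \<le> i" "i < q"
    then have "Pg A D Q Pd PA K T F M i" using P j jq by auto
    then show "Pd (Suc i) = Pd i + D i" unfolding Pg_def Let_def by simp
  qed (use jq in auto)
  finally have eq: "(\<Sum>l=j..K. max 0 (A j - D l)) = int (q-j) * A j - (Pd q - Pd j)" by simp
  have le: "int (q-j) * A j - (Pd q - Pd j) \<le> F" using Pj unfolding Pg_def q_def Let_def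
    by (elim conjE) assumption
  show ?thesis using eq le by simp
qed

lemma max_div:
  assumes "(s::real) > 0" shows "max 0 (a/s - b/s) = max 0 (a - b) / s"
proof (cases "a \<le> b")
  case True
  then have "(a - b) / s \<le> 0" using assms by (simp add: divide_nonpos_pos)
  then show ?thesis using True by (simp add: diff_divide_distrib[symmetric] max_def)
next
  case False
  then have "(a - b) / s \<ge> 0" using assms by simp
  then show ?thesis using False by (simp add: diff_divide_distrib[symmetric] max_def)
qed

lemma main_gen:
  fixes A D Pd PA :: "nat \<Rightarrow> int" and Q :: "nat \<Rightarrow> nat"
  assumes P: "\<forall>j\<in>{1..K}. Pg A D Q Pd PA K T F M j" and K1: "1 \<le> K"
    and P1: "Pd 1 = 0" and PA1: "PA 1 = 0" and F0: "0 \<le> F" and Spos: "0 < F + Pd (Suc K)"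
    and obj: "322 * (F + Pd (Suc K)) \<le> 100 * PA (Suc K)"
  shows "(SUP k\<in>{1::nat..}. lp_value k) \<ge> ereal 3.220"
proof -
  define s where "s = real_of_int (F + Pd (Suc K))"
  have s0: "s > 0" using Spos unfolding s_def by simp
  define \<alpha> where "\<alpha> j = real_of_int (A j) / s" for j
  define d where "d j = real_of_int (D j) / s" for j
  define f where "f = real_of_int F / s"
  define x where "x j l = max 0 (\<alpha> j - d l)" for j l
  have Pj: "Pg A D Q Pd PA K T F M j" if "1 \<le> j" "j \<le> K" for j using P that by simp
  have sumD: "(\<Sum>j=1..K. D j) = Pd (Suc K) - Pd 1"
  proof -
    have "(\<Sum>j=1..<Suc K. D j) = Pd (Suc K) - Pd 1"
    proof (rule telescope)
      fix j assume "1 \<le> j" "j < Suc K"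
      then show "Pd (Suc j) = Pd j + D j" using Pj[of j] unfolding Pg_def Let_def by simp
    qed (use K1 in simp)
    then show ?thesis by (simp add: atLeastLessThanSuc_atLeastAtMost)
  qed
  have sumA: "(\<Sum>j=1..K. A j) = PA (Suc K) - PA 1"
  proof -
    have "(\<Sum>j=1..<Suc K. A j) = PA (Suc K) - PA 1"
    proof (rule telescope)
      fix j assume "1 \<le> j" "j < Suc K"
      then show "PA (Suc j) = PA j + A j" using Pj[of j] unfolding Pg_def Let_def by simp
    qed (use K1 in simp)
    then show ?thesis by (simp add: atLeastLessThanSuc_atLeastAtMost)
  qed
  have c1: "f + (\<Sum>j=1..K. d j) \<le> 1"
  proof -
    have "f + (\<Sum>j=1..K. d j) = real_of_int (F + (\<Sum>j=1..K. D j)) / s"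
      unfolding f_def d_def by (simp add: sum_divide_distrib[symmetric] add_divide_distrib)
    also have "\<dots> = 1" using sumD P1 s0 unfolding s_def by simp
    finally show ?thesis by simp
  qed
  have c2: "\<forall>j. 1 \<le> j \<and> j < K \<longrightarrow> \<alpha> j \<le> \<alpha> (j+1)"
  proof (intro allI impI)
    fix j assume j: "1 \<le> j \<and> j < K"
    then have "A j \<le> A (j+1)" using Pj[of j] unfolding Pg_def Let_def by simp
    then show "\<alpha> j \<le> \<alpha> (j+1)" unfolding \<alpha>_def using s0 by (simp add: divide_right_mono)
  qed
  have c3: "\<forall>j\<in>{1..K}. \<forall>l\<in>{1..K}. \<alpha> j \<le> 3 * \<alpha> l + 3 * d j + 3 * d l"
  proof (intro ballI)
    fix j l assume j: "j \<in> {1..K}" and l: "l \<in> {1..K}"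
    have "A j - 3 * D j \<le> M" using Pj[of j] j unfolding Pg_def Let_def by simp
    moreover have "M \<le> 3 * A l + 3 * D l" using Pj[of l] l unfolding Pg_def Let_def by simp
    ultimately have "real_of_int (A j) \<le> real_of_int (3 * A l + 3 * D j + 3 * D l)" by simp
    then have "real_of_int (A j) / s \<le> real_of_int (3 * A l + 3 * D j + 3 * D l) / s"
      using s0 by (simp add: divide_right_mono)
    then show "\<alpha> j \<le> 3 * \<alpha> l + 3 * d j + 3 * d l" unfolding \<alpha>_def d_def
      by (simp add: add_divide_distrib)
  qed
  have c4: "\<forall>j l. 1 \<le> j \<and> j \<le> l \<and> l \<le> K \<longrightarrow> x j l \<ge> \<alpha> j - d l" unfolding x_def by simp
  have c5: "\<forall>j\<in>{1..K}. (\<Sum>l=j..K. x j l) \<le> f"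
  proof
    fix j assume j: "j \<in> {1..K}"
    have "(\<Sum>l=j..K. x j l) = (\<Sum>l=j..K. real_of_int (max 0 (A j - D l)) / s)"
      unfolding x_def \<alpha>_def d_def using max_div[OF s0] by (simp add: of_int_max)
    also have "\<dots> = real_of_int (\<Sum>l=j..K. max 0 (A j - D l)) / s"
      by (simp add: sum_divide_distrib[symmetric])
    also have "\<dots> \<le> real_of_int F / s"
    proof -
      have "(\<Sum>l=j..K. max 0 (A j - D l)) \<le> F" using key_int[OF P, of j] j by simp
      then have "real_of_int (\<Sum>l=j..K. max 0 (A j - D l)) \<le> real_of_int F" by (simp only: of_int_le_iff)
      then show ?thesis by (rule divide_right_mono) (use s0 in simp)
    qed
    finally show "(\<Sum>l=j..K. x j l) \<le> f" unfolding f_def .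
  qed
  have c6: "\<forall>j\<in>{1..K}. \<alpha> j \<ge> 0 \<and> d j \<ge> 0"
  proof
    fix j assume j: "j \<in> {1..K}"
    then have "0 \<le> D j" "D j \<le> A j" using Pj[of j] unfolding Pg_def Let_def by auto
    then show "\<alpha> j \<ge> 0 \<and> d j \<ge> 0" unfolding \<alpha>_def d_def using s0 by simp
  qed
  have c7: "f \<ge> 0" unfolding f_def using F0 s0 by simp
  have c8: "\<forall>j l. 1 \<le> j \<and> j \<le> l \<and> l \<le> K \<longrightarrow> x j l \<ge> 0" unfolding x_def by simp
  have feas: "lp_feasible K f \<alpha> d x" unfolding lp_feasible_def
    using c1 c2 c3 c4 c5 c6 c7 c8 by blast
  have objv: "(\<Sum>j=1..K. \<alpha> j) \<ge> 3.220"
  proof -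
    have "(\<Sum>j=1..K. \<alpha> j) = real_of_int (\<Sum>j=1..K. A j) / s"
      unfolding \<alpha>_def by (simp add: sum_divide_distrib[symmetric])
    also have "\<dots> = real_of_int (PA (Suc K)) / s" using sumA PA1 by simp
    finally have e: "(\<Sum>j=1..K. \<alpha> j) = real_of_int (PA (Suc K)) / s" .
    have "3.220 * s \<le> real_of_int (PA (Suc K))"
    proof -
      have "real_of_int (322 * (F + Pd (Suc K))) \<le> real_of_int (100 * PA (Suc K))"
        using obj by linarith
      then show ?thesis unfolding s_def by simp
    qed
    then show ?thesis using e s0 by (simp add: pos_le_divide_eq)
  qed
  have "ereal (\<Sum>j=1..K. \<alpha> j) \<le> lp_value K"
    unfolding lp_value_def by (rule Sup_upper) (use feas in blast)
  also have "lp_value K \<le> (SUP k\<in>{1::nat..}. lp_value k)"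
    by (rule SUP_upper) (use K1 in simp)
  finally show ?thesis using objv by (meson ereal_less_eq(3) order_trans)
qed


type_synonym rowt = "int \<times> int \<times> nat \<times> int \<times> int"
definition tN_512_0 :: "num \<Rightarrow> rowt" where "tN_512_0 m = (case m of Num.One \<Rightarrow> (191433, 50309, 551, 2534019, 19967123) | Num.Bit0 m' \<Rightarrow> (0,0,0,0,0) | Num.Bit1 m' \<Rightarrow> (0,0,0,0,0))"
definition tN_512_1 :: "num \<Rightarrow> rowt" where "tN_512_1 m = (case m of Num.One \<Rightarrow> (195147, 51547, 551, 2584328, 20158556) | Num.Bit0 m' \<Rightarrow> (0,0,0,0,0) | Num.Bit1 m' \<Rightarrow> (0,0,0,0,0))"
definition tN_512_2 :: "num \<Rightarrow> rowt" where "tN_512_2 m = (case m of Num.One \<Rightarrow> (199029, 52841, 551, 2635875, 20353703) | Num.Bit0 m' \<Rightarrow> (0,0,0,0,0) | Num.Bit1 m' \<Rightarrow> (0,0,0,0,0))"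
definition tN_512_3 :: "num \<Rightarrow> rowt" where "tN_512_3 m = (case m of Num.One \<Rightarrow> (203088, 54194, 551, 2688716, 20552732) | Num.Bit0 m' \<Rightarrow> (0,0,0,0,0) | Num.Bit1 m' \<Rightarrow> (0,0,0,0,0))"
definition tN_512_4 :: "num \<Rightarrow> rowt" where "tN_512_4 m = (case m of Num.One \<Rightarrow> (207342, 55612, 551, 2742910, 20755820) | Num.Bit0 m' \<Rightarrow> (0,0,0,0,0) | Num.Bit1 m' \<Rightarrow> (0,0,0,0,0))"
definition tN_512_5 :: "num \<Rightarrow> rowt" where "tN_512_5 m = (case m of Num.One \<Rightarrow> (211806, 57100, 551, 2798522, 20963162) | Num.Bit0 m' \<Rightarrow> (0,0,0,0,0) | Num.Bit1 m' \<Rightarrow> (0,0,0,0,0))"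
definition tN_512_6 :: "num \<Rightarrow> rowt" where "tN_512_6 m = (case m of Num.One \<Rightarrow> (216495, 58663, 551, 2855622, 21174968) | Num.Bit0 m' \<Rightarrow> (0,0,0,0,0) | Num.Bit1 m' \<Rightarrow> (0,0,0,0,0))"
definition tN_512_7 :: "num \<Rightarrow> rowt" where "tN_512_7 m = (case m of Num.One \<Rightarrow> (221427, 60307, 551, 2914285, 21391463) | Num.Bit0 m' \<Rightarrow> (0,0,0,0,0) | Num.Bit1 m' \<Rightarrow> (0,0,0,0,0))"
definition tN_512_8 :: "num \<Rightarrow> rowt" where "tN_512_8 m = (case m of Num.One \<Rightarrow> (226623, 62039, 551, 2974592, 21612890) | Num.Bit0 m' \<Rightarrow> (0,0,0,0,0) | Num.Bit1 m' \<Rightarrow> (0,0,0,0,0))"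
definition tN_512_9 :: "num \<Rightarrow> rowt" where "tN_512_9 m = (case m of Num.One \<Rightarrow> (232110, 63868, 551, 3036631, 21839513) | Num.Bit0 m' \<Rightarrow> (0,0,0,0,0) | Num.Bit1 m' \<Rightarrow> (0,0,0,0,0))"
definition tN_512_10 :: "num \<Rightarrow> rowt" where "tN_512_10 m = (case m of Num.One \<Rightarrow> (237912, 65802, 551, 3100499, 22071623) | Num.Bit0 m' \<Rightarrow> (0,0,0,0,0) | Num.Bit1 m' \<Rightarrow> (0,0,0,0,0))"
definition tN_512_11 :: "num \<Rightarrow> rowt" where "tN_512_11 m = (case m of Num.One \<Rightarrow> (244059, 67851, 551, 3166301, 22309535) | Num.Bit0 m' \<Rightarrow> (0,0,0,0,0) | Num.Bit1 m' \<Rightarrow> (0,0,0,0,0))"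
definition tN_512_12 :: "num \<Rightarrow> rowt" where "tN_512_12 m = (case m of Num.One \<Rightarrow> (250584, 70026, 551, 3234152, 22553594) | Num.Bit0 m' \<Rightarrow> (0,0,0,0,0) | Num.Bit1 m' \<Rightarrow> (0,0,0,0,0))"
definition tN_512_13 :: "num \<Rightarrow> rowt" where "tN_512_13 m = (case m of Num.One \<Rightarrow> (257529, 72341, 551, 3304178, 22804178) | Num.Bit0 m' \<Rightarrow> (0,0,0,0,0) | Num.Bit1 m' \<Rightarrow> (0,0,0,0,0))"
definition tN_512_14 :: "num \<Rightarrow> rowt" where "tN_512_14 m = (case m of Num.One \<Rightarrow> (264936, 74810, 551, 3376519, 23061707) | Num.Bit0 m' \<Rightarrow> (0,0,0,0,0) | Num.Bit1 m' \<Rightarrow> (0,0,0,0,0))"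
definition tN_512_15 :: "num \<Rightarrow> rowt" where "tN_512_15 m = (case m of Num.One \<Rightarrow> (272859, 77451, 551, 3451329, 23326643) | Num.Bit0 m' \<Rightarrow> (0,0,0,0,0) | Num.Bit1 m' \<Rightarrow> (0,0,0,0,0))"
definition tN_512_16 :: "num \<Rightarrow> rowt" where "tN_512_16 m = (case m of Num.One \<Rightarrow> (281355, 80283, 551, 3528780, 23599502) | Num.Bit0 m' \<Rightarrow> (0,0,0,0,0) | Num.Bit1 m' \<Rightarrow> (0,0,0,0,0))"
definition tN_512_17 :: "num \<Rightarrow> rowt" where "tN_512_17 m = (case m of Num.One \<Rightarrow> (290496, 83330, 551, 3609063, 23880857) | Num.Bit0 m' \<Rightarrow> (0,0,0,0,0) | Num.Bit1 m' \<Rightarrow> (0,0,0,0,0))"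
definition tN_512_18 :: "num \<Rightarrow> rowt" where "tN_512_18 m = (case m of Num.One \<Rightarrow> (300360, 86618, 551, 3692393, 24171353) | Num.Bit0 m' \<Rightarrow> (0,0,0,0,0) | Num.Bit1 m' \<Rightarrow> (0,0,0,0,0))"
definition tN_512_19 :: "num \<Rightarrow> rowt" where "tN_512_19 m = (case m of Num.One \<Rightarrow> (311046, 90180, 551, 3779011, 24471713) | Num.Bit0 m' \<Rightarrow> (0,0,0,0,0) | Num.Bit1 m' \<Rightarrow> (0,0,0,0,0))"
definition tN_512_20 :: "num \<Rightarrow> rowt" where "tN_512_20 m = (case m of Num.One \<Rightarrow> (322671, 94055, 551, 3869191, 24782759) | Num.Bit0 m' \<Rightarrow> (0,0,0,0,0) | Num.Bit1 m' \<Rightarrow> (0,0,0,0,0))"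
definition tN_512_21 :: "num \<Rightarrow> rowt" where "tN_512_21 m = (case m of Num.One \<Rightarrow> (335373, 98289, 551, 3963246, 25105430) | Num.Bit0 m' \<Rightarrow> (0,0,0,0,0) | Num.Bit1 m' \<Rightarrow> (0,0,0,0,0))"
definition tN_512_22 :: "num \<Rightarrow> rowt" where "tN_512_22 m = (case m of Num.One \<Rightarrow> (349320, 102938, 551, 4061535, 25440803) | Num.Bit0 m' \<Rightarrow> (0,0,0,0,0) | Num.Bit1 m' \<Rightarrow> (0,0,0,0,0))"
definition tN_512_23 :: "num \<Rightarrow> rowt" where "tN_512_23 m = (case m of Num.One \<Rightarrow> (364719, 108071, 551, 4164473, 25790123) | Num.Bit0 m' \<Rightarrow> (0,0,0,0,0) | Num.Bit1 m' \<Rightarrow> (0,0,0,0,0))"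
definition tN_512_24 :: "num \<Rightarrow> rowt" where "tN_512_24 m = (case m of Num.One \<Rightarrow> (381828, 113774, 551, 4272544, 26154842) | Num.Bit0 m' \<Rightarrow> (0,0,0,0,0) | Num.Bit1 m' \<Rightarrow> (0,0,0,0,0))"
definition tN_512_25 :: "num \<Rightarrow> rowt" where "tN_512_25 m = (case m of Num.One \<Rightarrow> (400974, 120156, 551, 4386318, 26536670) | Num.Bit0 m' \<Rightarrow> (0,0,0,0,0) | Num.Bit1 m' \<Rightarrow> (0,0,0,0,0))"
definition tN_512_26 :: "num \<Rightarrow> rowt" where "tN_512_26 m = (case m of Num.One \<Rightarrow> (405147, 121547, 551, 4506474, 26937644) | Num.Bit0 m' \<Rightarrow> (0,0,0,0,0) | Num.Bit1 m' \<Rightarrow> (0,0,0,0,0))"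
definition tN_512_27 :: "num \<Rightarrow> rowt" where "tN_512_27 m = (case m of Num.One \<Rightarrow> (405147, 121547, 551, 4628021, 27342791) | Num.Bit0 m' \<Rightarrow> (0,0,0,0,0) | Num.Bit1 m' \<Rightarrow> (0,0,0,0,0))"
definition tN_512_28 :: "num \<Rightarrow> rowt" where "tN_512_28 m = (case m of Num.One \<Rightarrow> (405147, 121547, 551, 4749568, 27747938) | Num.Bit0 m' \<Rightarrow> (0,0,0,0,0) | Num.Bit1 m' \<Rightarrow> (0,0,0,0,0))"
definition tN_512_29 :: "num \<Rightarrow> rowt" where "tN_512_29 m = (case m of Num.One \<Rightarrow> (405147, 121547, 551, 4871115, 28153085) | Num.Bit0 m' \<Rightarrow> (0,0,0,0,0) | Num.Bit1 m' \<Rightarrow> (0,0,0,0,0))"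
definition tN_512_30 :: "num \<Rightarrow> rowt" where "tN_512_30 m = (case m of Num.One \<Rightarrow> (405147, 121547, 551, 4992662, 28558232) | Num.Bit0 m' \<Rightarrow> (0,0,0,0,0) | Num.Bit1 m' \<Rightarrow> (0,0,0,0,0))"
definition tN_512_31 :: "num \<Rightarrow> rowt" where "tN_512_31 m = (case m of Num.One \<Rightarrow> (405147, 121547, 551, 5114209, 28963379) | Num.Bit0 m' \<Rightarrow> (0,0,0,0,0) | Num.Bit1 m' \<Rightarrow> (0,0,0,0,0))"
definition tN_512_32 :: "num \<Rightarrow> rowt" where "tN_512_32 m = (case m of Num.One \<Rightarrow> (405147, 121547, 551, 5235756, 29368526) | Num.Bit0 m' \<Rightarrow> (0,0,0,0,0) | Num.Bit1 m' \<Rightarrow> (0,0,0,0,0))"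
definition tN_512_33 :: "num \<Rightarrow> rowt" where "tN_512_33 m = (case m of Num.One \<Rightarrow> (405147, 121547, 551, 5357303, 29773673) | Num.Bit0 m' \<Rightarrow> (0,0,0,0,0) | Num.Bit1 m' \<Rightarrow> (0,0,0,0,0))"
definition tN_512_34 :: "num \<Rightarrow> rowt" where "tN_512_34 m = (case m of Num.One \<Rightarrow> (405147, 121547, 551, 5478850, 30178820) | Num.Bit0 m' \<Rightarrow> (0,0,0,0,0) | Num.Bit1 m' \<Rightarrow> (0,0,0,0,0))"
definition tN_512_35 :: "num \<Rightarrow> rowt" where "tN_512_35 m = (case m of Num.One \<Rightarrow> (405147, 121547, 551, 5600397, 30583967) | Num.Bit0 m' \<Rightarrow> (0,0,0,0,0) | Num.Bit1 m' \<Rightarrow> (0,0,0,0,0))"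
definition tN_512_36 :: "num \<Rightarrow> rowt" where "tN_512_36 m = (case m of Num.One \<Rightarrow> (405147, 121547, 551, 5721944, 30989114) | Num.Bit0 m' \<Rightarrow> (0,0,0,0,0) | Num.Bit1 m' \<Rightarrow> (0,0,0,0,0))"
definition tN_512_37 :: "num \<Rightarrow> rowt" where "tN_512_37 m = (case m of Num.One \<Rightarrow> (405147, 121547, 551, 5843491, 31394261) | Num.Bit0 m' \<Rightarrow> (0,0,0,0,0) | Num.Bit1 m' \<Rightarrow> (0,0,0,0,0))"
definition tN_512_38 :: "num \<Rightarrow> rowt" where "tN_512_38 m = (case m of Num.One \<Rightarrow> (405147, 121547, 551, 5965038, 31799408) | Num.Bit0 m' \<Rightarrow> (0,0,0,0,0) | Num.Bit1 m' \<Rightarrow> (0,0,0,0,0))"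
definition tN_512_39 :: "num \<Rightarrow> rowt" where "tN_512_39 m = (case m of Num.One \<Rightarrow> (0, 0, 0, 6086585, 32204555) | Num.Bit0 m' \<Rightarrow> (0,0,0,0,0) | Num.Bit1 m' \<Rightarrow> (0,0,0,0,0))"
definition tN_256_0 :: "num \<Rightarrow> rowt" where "tN_256_0 m = (case m of Num.One \<Rightarrow> (22533, 0, 471, 218779, 3740060) | Num.Bit0 m' \<Rightarrow> tN_512_0 m' | Num.Bit1 m' \<Rightarrow> (0,0,0,0,0))"
definition tN_256_1 :: "num \<Rightarrow> rowt" where "tN_256_1 m = (case m of Num.One \<Rightarrow> (22638, 0, 472, 218779, 3762593) | Num.Bit0 m' \<Rightarrow> tN_512_1 m' | Num.Bit1 m' \<Rightarrow> (0,0,0,0,0))"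
definition tN_256_2 :: "num \<Rightarrow> rowt" where "tN_256_2 m = (case m of Num.One \<Rightarrow> (22744, 0, 472, 218779, 3785231) | Num.Bit0 m' \<Rightarrow> tN_512_2 m' | Num.Bit1 m' \<Rightarrow> (0,0,0,0,0))"
definition tN_256_3 :: "num \<Rightarrow> rowt" where "tN_256_3 m = (case m of Num.One \<Rightarrow> (22850, 0, 472, 218779, 3807975) | Num.Bit0 m' \<Rightarrow> tN_512_3 m' | Num.Bit1 m' \<Rightarrow> (0,0,0,0,0))"
definition tN_256_4 :: "num \<Rightarrow> rowt" where "tN_256_4 m = (case m of Num.One \<Rightarrow> (22958, 0, 472, 218779, 3830825) | Num.Bit0 m' \<Rightarrow> tN_512_4 m' | Num.Bit1 m' \<Rightarrow> (0,0,0,0,0))"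
definition tN_256_5 :: "num \<Rightarrow> rowt" where "tN_256_5 m = (case m of Num.One \<Rightarrow> (23067, 0, 473, 218779, 3853783) | Num.Bit0 m' \<Rightarrow> tN_512_5 m' | Num.Bit1 m' \<Rightarrow> (0,0,0,0,0))"
definition tN_256_6 :: "num \<Rightarrow> rowt" where "tN_256_6 m = (case m of Num.One \<Rightarrow> (23176, 0, 473, 218779, 3876850) | Num.Bit0 m' \<Rightarrow> tN_512_6 m' | Num.Bit1 m' \<Rightarrow> (0,0,0,0,0))"
definition tN_256_7 :: "num \<Rightarrow> rowt" where "tN_256_7 m = (case m of Num.One \<Rightarrow> (23286, 0, 473, 218779, 3900026) | Num.Bit0 m' \<Rightarrow> tN_512_7 m' | Num.Bit1 m' \<Rightarrow> (0,0,0,0,0))"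
definition tN_256_8 :: "num \<Rightarrow> rowt" where "tN_256_8 m = (case m of Num.One \<Rightarrow> (23398, 0, 473, 218779, 3923312) | Num.Bit0 m' \<Rightarrow> tN_512_8 m' | Num.Bit1 m' \<Rightarrow> (0,0,0,0,0))"
definition tN_256_9 :: "num \<Rightarrow> rowt" where "tN_256_9 m = (case m of Num.One \<Rightarrow> (23510, 0, 474, 218779, 3946710) | Num.Bit0 m' \<Rightarrow> tN_512_9 m' | Num.Bit1 m' \<Rightarrow> (0,0,0,0,0))"
definition tN_256_10 :: "num \<Rightarrow> rowt" where "tN_256_10 m = (case m of Num.One \<Rightarrow> (23623, 0, 474, 218779, 3970220) | Num.Bit0 m' \<Rightarrow> tN_512_10 m' | Num.Bit1 m' \<Rightarrow> (0,0,0,0,0))"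
definition tN_256_11 :: "num \<Rightarrow> rowt" where "tN_256_11 m = (case m of Num.One \<Rightarrow> (23737, 0, 474, 218779, 3993843) | Num.Bit0 m' \<Rightarrow> tN_512_11 m' | Num.Bit1 m' \<Rightarrow> (0,0,0,0,0))"
definition tN_256_12 :: "num \<Rightarrow> rowt" where "tN_256_12 m = (case m of Num.One \<Rightarrow> (23853, 0, 474, 218779, 4017580) | Num.Bit0 m' \<Rightarrow> tN_512_12 m' | Num.Bit1 m' \<Rightarrow> (0,0,0,0,0))"
definition tN_256_13 :: "num \<Rightarrow> rowt" where "tN_256_13 m = (case m of Num.One \<Rightarrow> (23969, 0, 475, 218779, 4041433) | Num.Bit0 m' \<Rightarrow> tN_512_13 m' | Num.Bit1 m' \<Rightarrow> (0,0,0,0,0))"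
definition tN_256_14 :: "num \<Rightarrow> rowt" where "tN_256_14 m = (case m of Num.One \<Rightarrow> (24086, 0, 475, 218779, 4065402) | Num.Bit0 m' \<Rightarrow> tN_512_14 m' | Num.Bit1 m' \<Rightarrow> (0,0,0,0,0))"
definition tN_256_15 :: "num \<Rightarrow> rowt" where "tN_256_15 m = (case m of Num.One \<Rightarrow> (24204, 0, 475, 218779, 4089488) | Num.Bit0 m' \<Rightarrow> tN_512_15 m' | Num.Bit1 m' \<Rightarrow> (0,0,0,0,0))"
definition tN_256_16 :: "num \<Rightarrow> rowt" where "tN_256_16 m = (case m of Num.One \<Rightarrow> (24323, 0, 475, 218779, 4113692) | Num.Bit0 m' \<Rightarrow> tN_512_16 m' | Num.Bit1 m' \<Rightarrow> (0,0,0,0,0))"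
definition tN_256_17 :: "num \<Rightarrow> rowt" where "tN_256_17 m = (case m of Num.One \<Rightarrow> (24443, 0, 476, 218779, 4138015) | Num.Bit0 m' \<Rightarrow> tN_512_17 m' | Num.Bit1 m' \<Rightarrow> (0,0,0,0,0))"
definition tN_256_18 :: "num \<Rightarrow> rowt" where "tN_256_18 m = (case m of Num.One \<Rightarrow> (24564, 0, 476, 218779, 4162458) | Num.Bit0 m' \<Rightarrow> tN_512_18 m' | Num.Bit1 m' \<Rightarrow> (0,0,0,0,0))"
definition tN_256_19 :: "num \<Rightarrow> rowt" where "tN_256_19 m = (case m of Num.One \<Rightarrow> (24687, 0, 476, 218779, 4187022) | Num.Bit0 m' \<Rightarrow> tN_512_19 m' | Num.Bit1 m' \<Rightarrow> (0,0,0,0,0))"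
definition tN_256_20 :: "num \<Rightarrow> rowt" where "tN_256_20 m = (case m of Num.One \<Rightarrow> (24810, 0, 476, 218779, 4211709) | Num.Bit0 m' \<Rightarrow> tN_512_20 m' | Num.Bit1 m' \<Rightarrow> (0,0,0,0,0))"
definition tN_256_21 :: "num \<Rightarrow> rowt" where "tN_256_21 m = (case m of Num.One \<Rightarrow> (24935, 0, 477, 218779, 4236519) | Num.Bit0 m' \<Rightarrow> tN_512_21 m' | Num.Bit1 m' \<Rightarrow> (0,0,0,0,0))"
definition tN_256_22 :: "num \<Rightarrow> rowt" where "tN_256_22 m = (case m of Num.One \<Rightarrow> (25060, 0, 477, 218779, 4261454) | Num.Bit0 m' \<Rightarrow> tN_512_22 m' | Num.Bit1 m' \<Rightarrow> (0,0,0,0,0))"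
definition tN_256_23 :: "num \<Rightarrow> rowt" where "tN_256_23 m = (case m of Num.One \<Rightarrow> (25187, 0, 477, 218779, 4286514) | Num.Bit0 m' \<Rightarrow> tN_512_23 m' | Num.Bit1 m' \<Rightarrow> (0,0,0,0,0))"
definition tN_256_24 :: "num \<Rightarrow> rowt" where "tN_256_24 m = (case m of Num.One \<Rightarrow> (25314, 0, 477, 218779, 4311701) | Num.Bit0 m' \<Rightarrow> tN_512_24 m' | Num.Bit1 m' \<Rightarrow> (0,0,0,0,0))"
definition tN_256_25 :: "num \<Rightarrow> rowt" where "tN_256_25 m = (case m of Num.One \<Rightarrow> (25443, 0, 478, 218779, 4337015) | Num.Bit0 m' \<Rightarrow> tN_512_25 m' | Num.Bit1 m' \<Rightarrow> (0,0,0,0,0))"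
definition tN_256_26 :: "num \<Rightarrow> rowt" where "tN_256_26 m = (case m of Num.One \<Rightarrow> (25573, 0, 478, 218779, 4362458) | Num.Bit0 m' \<Rightarrow> tN_512_26 m' | Num.Bit1 m' \<Rightarrow> (0,0,0,0,0))"
definition tN_256_27 :: "num \<Rightarrow> rowt" where "tN_256_27 m = (case m of Num.One \<Rightarrow> (25704, 0, 478, 218779, 4388031) | Num.Bit0 m' \<Rightarrow> tN_512_27 m' | Num.Bit1 m' \<Rightarrow> (0,0,0,0,0))"
definition tN_256_28 :: "num \<Rightarrow> rowt" where "tN_256_28 m = (case m of Num.One \<Rightarrow> (25837, 0, 478, 218779, 4413735) | Num.Bit0 m' \<Rightarrow> tN_512_28 m' | Num.Bit1 m' \<Rightarrow> (0,0,0,0,0))"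
definition tN_256_29 :: "num \<Rightarrow> rowt" where "tN_256_29 m = (case m of Num.One \<Rightarrow> (25971, 0, 479, 218779, 4439572) | Num.Bit0 m' \<Rightarrow> tN_512_29 m' | Num.Bit1 m' \<Rightarrow> (0,0,0,0,0))"
definition tN_256_30 :: "num \<Rightarrow> rowt" where "tN_256_30 m = (case m of Num.One \<Rightarrow> (26105, 0, 479, 218779, 4465543) | Num.Bit0 m' \<Rightarrow> tN_512_30 m' | Num.Bit1 m' \<Rightarrow> (0,0,0,0,0))"
definition tN_256_31 :: "num \<Rightarrow> rowt" where "tN_256_31 m = (case m of Num.One \<Rightarrow> (26241, 0, 479, 218779, 4491648) | Num.Bit0 m' \<Rightarrow> tN_512_31 m' | Num.Bit1 m' \<Rightarrow> (0,0,0,0,0))"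
definition tN_256_32 :: "num \<Rightarrow> rowt" where "tN_256_32 m = (case m of Num.One \<Rightarrow> (26379, 0, 479, 218779, 4517889) | Num.Bit0 m' \<Rightarrow> tN_512_32 m' | Num.Bit1 m' \<Rightarrow> (0,0,0,0,0))"
definition tN_256_33 :: "num \<Rightarrow> rowt" where "tN_256_33 m = (case m of Num.One \<Rightarrow> (26517, 0, 480, 218779, 4544268) | Num.Bit0 m' \<Rightarrow> tN_512_33 m' | Num.Bit1 m' \<Rightarrow> (0,0,0,0,0))"
definition tN_256_34 :: "num \<Rightarrow> rowt" where "tN_256_34 m = (case m of Num.One \<Rightarrow> (26657, 0, 480, 218779, 4570785) | Num.Bit0 m' \<Rightarrow> tN_512_34 m' | Num.Bit1 m' \<Rightarrow> (0,0,0,0,0))"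
definition tN_256_35 :: "num \<Rightarrow> rowt" where "tN_256_35 m = (case m of Num.One \<Rightarrow> (26798, 0, 480, 218779, 4597442) | Num.Bit0 m' \<Rightarrow> tN_512_35 m' | Num.Bit1 m' \<Rightarrow> (0,0,0,0,0))"
definition tN_256_36 :: "num \<Rightarrow> rowt" where "tN_256_36 m = (case m of Num.One \<Rightarrow> (26940, 0, 480, 218779, 4624240) | Num.Bit0 m' \<Rightarrow> tN_512_36 m' | Num.Bit1 m' \<Rightarrow> (0,0,0,0,0))"
definition tN_256_37 :: "num \<Rightarrow> rowt" where "tN_256_37 m = (case m of Num.One \<Rightarrow> (27084, 0, 481, 218779, 4651180) | Num.Bit0 m' \<Rightarrow> tN_512_37 m' | Num.Bit1 m' \<Rightarrow> (0,0,0,0,0))"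
definition tN_256_38 :: "num \<Rightarrow> rowt" where "tN_256_38 m = (case m of Num.One \<Rightarrow> (27229, 0, 481, 218779, 4678264) | Num.Bit0 m' \<Rightarrow> tN_512_38 m' | Num.Bit1 m' \<Rightarrow> (0,0,0,0,0))"
definition tN_256_39 :: "num \<Rightarrow> rowt" where "tN_256_39 m = (case m of Num.One \<Rightarrow> (27375, 0, 481, 218779, 4705493) | Num.Bit0 m' \<Rightarrow> tN_512_39 m' | Num.Bit1 m' \<Rightarrow> (0,0,0,0,0))"
definition tN_256_40 :: "num \<Rightarrow> rowt" where "tN_256_40 m = (case m of Num.One \<Rightarrow> (27523, 0, 482, 218779, 4732868) | Num.Bit0 m' \<Rightarrow> (0,0,0,0,0) | Num.Bit1 m' \<Rightarrow> (0,0,0,0,0))"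
definition tN_256_41 :: "num \<Rightarrow> rowt" where "tN_256_41 m = (case m of Num.One \<Rightarrow> (27672, 0, 482, 218779, 4760391) | Num.Bit0 m' \<Rightarrow> (0,0,0,0,0) | Num.Bit1 m' \<Rightarrow> (0,0,0,0,0))"
definition tN_256_42 :: "num \<Rightarrow> rowt" where "tN_256_42 m = (case m of Num.One \<Rightarrow> (27822, 0, 482, 218779, 4788063) | Num.Bit0 m' \<Rightarrow> (0,0,0,0,0) | Num.Bit1 m' \<Rightarrow> (0,0,0,0,0))"
definition tN_256_43 :: "num \<Rightarrow> rowt" where "tN_256_43 m = (case m of Num.One \<Rightarrow> (27974, 0, 483, 218779, 4815885) | Num.Bit0 m' \<Rightarrow> (0,0,0,0,0) | Num.Bit1 m' \<Rightarrow> (0,0,0,0,0))"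
definition tN_256_44 :: "num \<Rightarrow> rowt" where "tN_256_44 m = (case m of Num.One \<Rightarrow> (28127, 0, 483, 218779, 4843859) | Num.Bit0 m' \<Rightarrow> (0,0,0,0,0) | Num.Bit1 m' \<Rightarrow> (0,0,0,0,0))"
definition tN_256_45 :: "num \<Rightarrow> rowt" where "tN_256_45 m = (case m of Num.One \<Rightarrow> (28281, 0, 483, 218779, 4871986) | Num.Bit0 m' \<Rightarrow> (0,0,0,0,0) | Num.Bit1 m' \<Rightarrow> (0,0,0,0,0))"
definition tN_256_46 :: "num \<Rightarrow> rowt" where "tN_256_46 m = (case m of Num.One \<Rightarrow> (28437, 0, 484, 218779, 4900267) | Num.Bit0 m' \<Rightarrow> (0,0,0,0,0) | Num.Bit1 m' \<Rightarrow> (0,0,0,0,0))"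
definition tN_256_47 :: "num \<Rightarrow> rowt" where "tN_256_47 m = (case m of Num.One \<Rightarrow> (28594, 0, 484, 218779, 4928704) | Num.Bit0 m' \<Rightarrow> (0,0,0,0,0) | Num.Bit1 m' \<Rightarrow> (0,0,0,0,0))"
definition tN_256_48 :: "num \<Rightarrow> rowt" where "tN_256_48 m = (case m of Num.One \<Rightarrow> (28753, 0, 484, 218779, 4957298) | Num.Bit0 m' \<Rightarrow> (0,0,0,0,0) | Num.Bit1 m' \<Rightarrow> (0,0,0,0,0))"
definition tN_256_49 :: "num \<Rightarrow> rowt" where "tN_256_49 m = (case m of Num.One \<Rightarrow> (28914, 0, 485, 218779, 4986051) | Num.Bit0 m' \<Rightarrow> (0,0,0,0,0) | Num.Bit1 m' \<Rightarrow> (0,0,0,0,0))"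
definition tN_256_50 :: "num \<Rightarrow> rowt" where "tN_256_50 m = (case m of Num.One \<Rightarrow> (29075, 0, 485, 218779, 5014965) | Num.Bit0 m' \<Rightarrow> (0,0,0,0,0) | Num.Bit1 m' \<Rightarrow> (0,0,0,0,0))"
definition tN_256_51 :: "num \<Rightarrow> rowt" where "tN_256_51 m = (case m of Num.One \<Rightarrow> (29239, 0, 485, 218779, 5044040) | Num.Bit0 m' \<Rightarrow> (0,0,0,0,0) | Num.Bit1 m' \<Rightarrow> (0,0,0,0,0))"
definition tN_256_52 :: "num \<Rightarrow> rowt" where "tN_256_52 m = (case m of Num.One \<Rightarrow> (29404, 0, 486, 218779, 5073279) | Num.Bit0 m' \<Rightarrow> (0,0,0,0,0) | Num.Bit1 m' \<Rightarrow> (0,0,0,0,0))"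
definition tN_256_53 :: "num \<Rightarrow> rowt" where "tN_256_53 m = (case m of Num.One \<Rightarrow> (29570, 0, 486, 218779, 5102683) | Num.Bit0 m' \<Rightarrow> (0,0,0,0,0) | Num.Bit1 m' \<Rightarrow> (0,0,0,0,0))"
definition tN_256_54 :: "num \<Rightarrow> rowt" where "tN_256_54 m = (case m of Num.One \<Rightarrow> (29738, 0, 486, 218779, 5132253) | Num.Bit0 m' \<Rightarrow> (0,0,0,0,0) | Num.Bit1 m' \<Rightarrow> (0,0,0,0,0))"
definition tN_256_55 :: "num \<Rightarrow> rowt" where "tN_256_55 m = (case m of Num.One \<Rightarrow> (29907, 0, 487, 218779, 5161991) | Num.Bit0 m' \<Rightarrow> (0,0,0,0,0) | Num.Bit1 m' \<Rightarrow> (0,0,0,0,0))"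
definition tN_256_56 :: "num \<Rightarrow> rowt" where "tN_256_56 m = (case m of Num.One \<Rightarrow> (30078, 0, 487, 218779, 5191898) | Num.Bit0 m' \<Rightarrow> (0,0,0,0,0) | Num.Bit1 m' \<Rightarrow> (0,0,0,0,0))"
definition tN_256_57 :: "num \<Rightarrow> rowt" where "tN_256_57 m = (case m of Num.One \<Rightarrow> (30251, 0, 487, 218779, 5221976) | Num.Bit0 m' \<Rightarrow> (0,0,0,0,0) | Num.Bit1 m' \<Rightarrow> (0,0,0,0,0))"
definition tN_256_58 :: "num \<Rightarrow> rowt" where "tN_256_58 m = (case m of Num.One \<Rightarrow> (30426, 0, 488, 218779, 5252227) | Num.Bit0 m' \<Rightarrow> (0,0,0,0,0) | Num.Bit1 m' \<Rightarrow> (0,0,0,0,0))"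
definition tN_256_59 :: "num \<Rightarrow> rowt" where "tN_256_59 m = (case m of Num.One \<Rightarrow> (30602, 0, 488, 218779, 5282653) | Num.Bit0 m' \<Rightarrow> (0,0,0,0,0) | Num.Bit1 m' \<Rightarrow> (0,0,0,0,0))"
definition tN_256_60 :: "num \<Rightarrow> rowt" where "tN_256_60 m = (case m of Num.One \<Rightarrow> (30780, 0, 488, 218779, 5313255) | Num.Bit0 m' \<Rightarrow> (0,0,0,0,0) | Num.Bit1 m' \<Rightarrow> (0,0,0,0,0))"
definition tN_256_61 :: "num \<Rightarrow> rowt" where "tN_256_61 m = (case m of Num.One \<Rightarrow> (30960, 0, 489, 218779, 5344035) | Num.Bit0 m' \<Rightarrow> (0,0,0,0,0) | Num.Bit1 m' \<Rightarrow> (0,0,0,0,0))"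
definition tN_256_62 :: "num \<Rightarrow> rowt" where "tN_256_62 m = (case m of Num.One \<Rightarrow> (31141, 0, 489, 218779, 5374995) | Num.Bit0 m' \<Rightarrow> (0,0,0,0,0) | Num.Bit1 m' \<Rightarrow> (0,0,0,0,0))"
definition tN_256_63 :: "num \<Rightarrow> rowt" where "tN_256_63 m = (case m of Num.One \<Rightarrow> (31324, 0, 489, 218779, 5406136) | Num.Bit0 m' \<Rightarrow> (0,0,0,0,0) | Num.Bit1 m' \<Rightarrow> (0,0,0,0,0))"
definition tN_256_64 :: "num \<Rightarrow> rowt" where "tN_256_64 m = (case m of Num.One \<Rightarrow> (31509, 0, 490, 218779, 5437460) | Num.Bit0 m' \<Rightarrow> (0,0,0,0,0) | Num.Bit1 m' \<Rightarrow> (0,0,0,0,0))"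
definition tN_256_65 :: "num \<Rightarrow> rowt" where "tN_256_65 m = (case m of Num.One \<Rightarrow> (31696, 0, 490, 218779, 5468969) | Num.Bit0 m' \<Rightarrow> (0,0,0,0,0) | Num.Bit1 m' \<Rightarrow> (0,0,0,0,0))"
definition tN_256_66 :: "num \<Rightarrow> rowt" where "tN_256_66 m = (case m of Num.One \<Rightarrow> (31884, 0, 490, 218779, 5500665) | Num.Bit0 m' \<Rightarrow> (0,0,0,0,0) | Num.Bit1 m' \<Rightarrow> (0,0,0,0,0))"
definition tN_256_67 :: "num \<Rightarrow> rowt" where "tN_256_67 m = (case m of Num.One \<Rightarrow> (32075, 0, 491, 218779, 5532549) | Num.Bit0 m' \<Rightarrow> (0,0,0,0,0) | Num.Bit1 m' \<Rightarrow> (0,0,0,0,0))"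
definition tN_256_68 :: "num \<Rightarrow> rowt" where "tN_256_68 m = (case m of Num.One \<Rightarrow> (32267, 0, 491, 218779, 5564624) | Num.Bit0 m' \<Rightarrow> (0,0,0,0,0) | Num.Bit1 m' \<Rightarrow> (0,0,0,0,0))"
definition tN_256_69 :: "num \<Rightarrow> rowt" where "tN_256_69 m = (case m of Num.One \<Rightarrow> (32462, 0, 491, 218779, 5596891) | Num.Bit0 m' \<Rightarrow> (0,0,0,0,0) | Num.Bit1 m' \<Rightarrow> (0,0,0,0,0))"
definition tN_256_70 :: "num \<Rightarrow> rowt" where "tN_256_70 m = (case m of Num.One \<Rightarrow> (32658, 0, 492, 218779, 5629353) | Num.Bit0 m' \<Rightarrow> (0,0,0,0,0) | Num.Bit1 m' \<Rightarrow> (0,0,0,0,0))"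
definition tN_256_71 :: "num \<Rightarrow> rowt" where "tN_256_71 m = (case m of Num.One \<Rightarrow> (32856, 0, 492, 218779, 5662011) | Num.Bit0 m' \<Rightarrow> (0,0,0,0,0) | Num.Bit1 m' \<Rightarrow> (0,0,0,0,0))"
definition tN_256_72 :: "num \<Rightarrow> rowt" where "tN_256_72 m = (case m of Num.One \<Rightarrow> (33057, 0, 492, 218779, 5694867) | Num.Bit0 m' \<Rightarrow> (0,0,0,0,0) | Num.Bit1 m' \<Rightarrow> (0,0,0,0,0))"
definition tN_256_73 :: "num \<Rightarrow> rowt" where "tN_256_73 m = (case m of Num.One \<Rightarrow> (33259, 0, 493, 218779, 5727924) | Num.Bit0 m' \<Rightarrow> (0,0,0,0,0) | Num.Bit1 m' \<Rightarrow> (0,0,0,0,0))"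
definition tN_256_74 :: "num \<Rightarrow> rowt" where "tN_256_74 m = (case m of Num.One \<Rightarrow> (33463, 0, 493, 218779, 5761183) | Num.Bit0 m' \<Rightarrow> (0,0,0,0,0) | Num.Bit1 m' \<Rightarrow> (0,0,0,0,0))"
definition tN_256_75 :: "num \<Rightarrow> rowt" where "tN_256_75 m = (case m of Num.One \<Rightarrow> (33670, 0, 493, 218779, 5794646) | Num.Bit0 m' \<Rightarrow> (0,0,0,0,0) | Num.Bit1 m' \<Rightarrow> (0,0,0,0,0))"
definition tN_256_76 :: "num \<Rightarrow> rowt" where "tN_256_76 m = (case m of Num.One \<Rightarrow> (33879, 0, 494, 218779, 5828316) | Num.Bit0 m' \<Rightarrow> (0,0,0,0,0) | Num.Bit1 m' \<Rightarrow> (0,0,0,0,0))"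
definition tN_256_77 :: "num \<Rightarrow> rowt" where "tN_256_77 m = (case m of Num.One \<Rightarrow> (34089, 0, 494, 218779, 5862195) | Num.Bit0 m' \<Rightarrow> (0,0,0,0,0) | Num.Bit1 m' \<Rightarrow> (0,0,0,0,0))"
definition tN_256_78 :: "num \<Rightarrow> rowt" where "tN_256_78 m = (case m of Num.One \<Rightarrow> (34302, 0, 494, 218779, 5896284) | Num.Bit0 m' \<Rightarrow> (0,0,0,0,0) | Num.Bit1 m' \<Rightarrow> (0,0,0,0,0))"
definition tN_256_79 :: "num \<Rightarrow> rowt" where "tN_256_79 m = (case m of Num.One \<Rightarrow> (34518, 0, 495, 218779, 5930586) | Num.Bit0 m' \<Rightarrow> (0,0,0,0,0) | Num.Bit1 m' \<Rightarrow> (0,0,0,0,0))"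
definition tN_256_80 :: "num \<Rightarrow> rowt" where "tN_256_80 m = (case m of Num.One \<Rightarrow> (34735, 0, 495, 218779, 5965104) | Num.Bit0 m' \<Rightarrow> (0,0,0,0,0) | Num.Bit1 m' \<Rightarrow> (0,0,0,0,0))"
definition tN_256_81 :: "num \<Rightarrow> rowt" where "tN_256_81 m = (case m of Num.One \<Rightarrow> (34955, 0, 495, 218779, 5999839) | Num.Bit0 m' \<Rightarrow> (0,0,0,0,0) | Num.Bit1 m' \<Rightarrow> (0,0,0,0,0))"
definition tN_256_82 :: "num \<Rightarrow> rowt" where "tN_256_82 m = (case m of Num.One \<Rightarrow> (35177, 0, 496, 218779, 6034794) | Num.Bit0 m' \<Rightarrow> (0,0,0,0,0) | Num.Bit1 m' \<Rightarrow> (0,0,0,0,0))"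
definition tN_256_83 :: "num \<Rightarrow> rowt" where "tN_256_83 m = (case m of Num.One \<Rightarrow> (35401, 0, 496, 218779, 6069971) | Num.Bit0 m' \<Rightarrow> (0,0,0,0,0) | Num.Bit1 m' \<Rightarrow> (0,0,0,0,0))"
definition tN_256_84 :: "num \<Rightarrow> rowt" where "tN_256_84 m = (case m of Num.One \<Rightarrow> (35628, 0, 496, 218779, 6105372) | Num.Bit0 m' \<Rightarrow> (0,0,0,0,0) | Num.Bit1 m' \<Rightarrow> (0,0,0,0,0))"
definition tN_256_85 :: "num \<Rightarrow> rowt" where "tN_256_85 m = (case m of Num.One \<Rightarrow> (35858, 0, 497, 218779, 6141000) | Num.Bit0 m' \<Rightarrow> (0,0,0,0,0) | Num.Bit1 m' \<Rightarrow> (0,0,0,0,0))"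
definition tN_256_86 :: "num \<Rightarrow> rowt" where "tN_256_86 m = (case m of Num.One \<Rightarrow> (36089, 0, 497, 218779, 6176858) | Num.Bit0 m' \<Rightarrow> (0,0,0,0,0) | Num.Bit1 m' \<Rightarrow> (0,0,0,0,0))"
definition tN_256_87 :: "num \<Rightarrow> rowt" where "tN_256_87 m = (case m of Num.One \<Rightarrow> (36323, 0, 497, 218779, 6212947) | Num.Bit0 m' \<Rightarrow> (0,0,0,0,0) | Num.Bit1 m' \<Rightarrow> (0,0,0,0,0))"
definition tN_256_88 :: "num \<Rightarrow> rowt" where "tN_256_88 m = (case m of Num.One \<Rightarrow> (36560, 0, 498, 218779, 6249270) | Num.Bit0 m' \<Rightarrow> (0,0,0,0,0) | Num.Bit1 m' \<Rightarrow> (0,0,0,0,0))"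
definition tN_256_89 :: "num \<Rightarrow> rowt" where "tN_256_89 m = (case m of Num.One \<Rightarrow> (36799, 0, 498, 218779, 6285830) | Num.Bit0 m' \<Rightarrow> (0,0,0,0,0) | Num.Bit1 m' \<Rightarrow> (0,0,0,0,0))"
definition tN_256_90 :: "num \<Rightarrow> rowt" where "tN_256_90 m = (case m of Num.One \<Rightarrow> (37041, 0, 498, 218779, 6322629) | Num.Bit0 m' \<Rightarrow> (0,0,0,0,0) | Num.Bit1 m' \<Rightarrow> (0,0,0,0,0))"
definition tN_256_91 :: "num \<Rightarrow> rowt" where "tN_256_91 m = (case m of Num.One \<Rightarrow> (37286, 0, 499, 218779, 6359670) | Num.Bit0 m' \<Rightarrow> (0,0,0,0,0) | Num.Bit1 m' \<Rightarrow> (0,0,0,0,0))"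
definition tN_256_92 :: "num \<Rightarrow> rowt" where "tN_256_92 m = (case m of Num.One \<Rightarrow> (37533, 0, 499, 218779, 6396956) | Num.Bit0 m' \<Rightarrow> (0,0,0,0,0) | Num.Bit1 m' \<Rightarrow> (0,0,0,0,0))"
definition tN_256_93 :: "num \<Rightarrow> rowt" where "tN_256_93 m = (case m of Num.One \<Rightarrow> (37783, 0, 499, 218779, 6434489) | Num.Bit0 m' \<Rightarrow> (0,0,0,0,0) | Num.Bit1 m' \<Rightarrow> (0,0,0,0,0))"
definition tN_256_94 :: "num \<Rightarrow> rowt" where "tN_256_94 m = (case m of Num.One \<Rightarrow> (38036, 0, 500, 218779, 6472272) | Num.Bit0 m' \<Rightarrow> (0,0,0,0,0) | Num.Bit1 m' \<Rightarrow> (0,0,0,0,0))"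
definition tN_256_95 :: "num \<Rightarrow> rowt" where "tN_256_95 m = (case m of Num.One \<Rightarrow> (38292, 0, 500, 218779, 6510308) | Num.Bit0 m' \<Rightarrow> (0,0,0,0,0) | Num.Bit1 m' \<Rightarrow> (0,0,0,0,0))"
definition tN_256_96 :: "num \<Rightarrow> rowt" where "tN_256_96 m = (case m of Num.One \<Rightarrow> (38550, 0, 500, 218779, 6548600) | Num.Bit0 m' \<Rightarrow> (0,0,0,0,0) | Num.Bit1 m' \<Rightarrow> (0,0,0,0,0))"
definition tN_256_97 :: "num \<Rightarrow> rowt" where "tN_256_97 m = (case m of Num.One \<Rightarrow> (38812, 0, 501, 218779, 6587150) | Num.Bit0 m' \<Rightarrow> (0,0,0,0,0) | Num.Bit1 m' \<Rightarrow> (0,0,0,0,0))"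
definition tN_256_98 :: "num \<Rightarrow> rowt" where "tN_256_98 m = (case m of Num.One \<Rightarrow> (39076, 0, 501, 218779, 6625962) | Num.Bit0 m' \<Rightarrow> (0,0,0,0,0) | Num.Bit1 m' \<Rightarrow> (0,0,0,0,0))"
definition tN_256_99 :: "num \<Rightarrow> rowt" where "tN_256_99 m = (case m of Num.One \<Rightarrow> (39344, 0, 501, 218779, 6665038) | Num.Bit0 m' \<Rightarrow> (0,0,0,0,0) | Num.Bit1 m' \<Rightarrow> (0,0,0,0,0))"
definition tN_256_100 :: "num \<Rightarrow> rowt" where "tN_256_100 m = (case m of Num.One \<Rightarrow> (39614, 0, 502, 218779, 6704382) | Num.Bit0 m' \<Rightarrow> (0,0,0,0,0) | Num.Bit1 m' \<Rightarrow> (0,0,0,0,0))"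
definition tN_256_101 :: "num \<Rightarrow> rowt" where "tN_256_101 m = (case m of Num.One \<Rightarrow> (39887, 0, 502, 218779, 6743996) | Num.Bit0 m' \<Rightarrow> (0,0,0,0,0) | Num.Bit1 m' \<Rightarrow> (0,0,0,0,0))"
definition tN_256_102 :: "num \<Rightarrow> rowt" where "tN_256_102 m = (case m of Num.One \<Rightarrow> (40164, 0, 502, 218779, 6783883) | Num.Bit0 m' \<Rightarrow> (0,0,0,0,0) | Num.Bit1 m' \<Rightarrow> (0,0,0,0,0))"
definition tN_256_103 :: "num \<Rightarrow> rowt" where "tN_256_103 m = (case m of Num.One \<Rightarrow> (40444, 0, 503, 218779, 6824047) | Num.Bit0 m' \<Rightarrow> (0,0,0,0,0) | Num.Bit1 m' \<Rightarrow> (0,0,0,0,0))"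
definition tN_256_104 :: "num \<Rightarrow> rowt" where "tN_256_104 m = (case m of Num.One \<Rightarrow> (40725, 73, 503, 218779, 6864491) | Num.Bit0 m' \<Rightarrow> (0,0,0,0,0) | Num.Bit1 m' \<Rightarrow> (0,0,0,0,0))"
definition tN_256_105 :: "num \<Rightarrow> rowt" where "tN_256_105 m = (case m of Num.One \<Rightarrow> (41010, 168, 503, 218852, 6905216) | Num.Bit0 m' \<Rightarrow> (0,0,0,0,0) | Num.Bit1 m' \<Rightarrow> (0,0,0,0,0))"
definition tN_256_106 :: "num \<Rightarrow> rowt" where "tN_256_106 m = (case m of Num.One \<Rightarrow> (41301, 265, 504, 219020, 6946226) | Num.Bit0 m' \<Rightarrow> (0,0,0,0,0) | Num.Bit1 m' \<Rightarrow> (0,0,0,0,0))"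
definition tN_256_107 :: "num \<Rightarrow> rowt" where "tN_256_107 m = (case m of Num.One \<Rightarrow> (41592, 362, 504, 219285, 6987527) | Num.Bit0 m' \<Rightarrow> (0,0,0,0,0) | Num.Bit1 m' \<Rightarrow> (0,0,0,0,0))"
definition tN_256_108 :: "num \<Rightarrow> rowt" where "tN_256_108 m = (case m of Num.One \<Rightarrow> (41886, 460, 504, 219647, 7029119) | Num.Bit0 m' \<Rightarrow> (0,0,0,0,0) | Num.Bit1 m' \<Rightarrow> (0,0,0,0,0))"
definition tN_256_109 :: "num \<Rightarrow> rowt" where "tN_256_109 m = (case m of Num.One \<Rightarrow> (42183, 559, 505, 220107, 7071005) | Num.Bit0 m' \<Rightarrow> (0,0,0,0,0) | Num.Bit1 m' \<Rightarrow> (0,0,0,0,0))"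
definition tN_256_110 :: "num \<Rightarrow> rowt" where "tN_256_110 m = (case m of Num.One \<Rightarrow> (42483, 659, 505, 220666, 7113188) | Num.Bit0 m' \<Rightarrow> (0,0,0,0,0) | Num.Bit1 m' \<Rightarrow> (0,0,0,0,0))"
definition tN_256_111 :: "num \<Rightarrow> rowt" where "tN_256_111 m = (case m of Num.One \<Rightarrow> (42786, 760, 505, 221325, 7155671) | Num.Bit0 m' \<Rightarrow> (0,0,0,0,0) | Num.Bit1 m' \<Rightarrow> (0,0,0,0,0))"
definition tN_256_112 :: "num \<Rightarrow> rowt" where "tN_256_112 m = (case m of Num.One \<Rightarrow> (43089, 861, 506, 222085, 7198457) | Num.Bit0 m' \<Rightarrow> (0,0,0,0,0) | Num.Bit1 m' \<Rightarrow> (0,0,0,0,0))"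
definition tN_256_113 :: "num \<Rightarrow> rowt" where "tN_256_113 m = (case m of Num.One \<Rightarrow> (43398, 964, 506, 222946, 7241546) | Num.Bit0 m' \<Rightarrow> (0,0,0,0,0) | Num.Bit1 m' \<Rightarrow> (0,0,0,0,0))"
definition tN_256_114 :: "num \<Rightarrow> rowt" where "tN_256_114 m = (case m of Num.One \<Rightarrow> (43710, 1068, 506, 223910, 7284944) | Num.Bit0 m' \<Rightarrow> (0,0,0,0,0) | Num.Bit1 m' \<Rightarrow> (0,0,0,0,0))"
definition tN_256_115 :: "num \<Rightarrow> rowt" where "tN_256_115 m = (case m of Num.One \<Rightarrow> (44025, 1173, 507, 224978, 7328654) | Num.Bit0 m' \<Rightarrow> (0,0,0,0,0) | Num.Bit1 m' \<Rightarrow> (0,0,0,0,0))"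
definition tN_256_116 :: "num \<Rightarrow> rowt" where "tN_256_116 m = (case m of Num.One \<Rightarrow> (44343, 1279, 507, 226151, 7372679) | Num.Bit0 m' \<Rightarrow> (0,0,0,0,0) | Num.Bit1 m' \<Rightarrow> (0,0,0,0,0))"
definition tN_256_117 :: "num \<Rightarrow> rowt" where "tN_256_117 m = (case m of Num.One \<Rightarrow> (44664, 1386, 507, 227430, 7417022) | Num.Bit0 m' \<Rightarrow> (0,0,0,0,0) | Num.Bit1 m' \<Rightarrow> (0,0,0,0,0))"
definition tN_256_118 :: "num \<Rightarrow> rowt" where "tN_256_118 m = (case m of Num.One \<Rightarrow> (44988, 1494, 508, 228816, 7461686) | Num.Bit0 m' \<Rightarrow> (0,0,0,0,0) | Num.Bit1 m' \<Rightarrow> (0,0,0,0,0))"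
definition tN_256_119 :: "num \<Rightarrow> rowt" where "tN_256_119 m = (case m of Num.One \<Rightarrow> (45315, 1603, 508, 230310, 7506674) | Num.Bit0 m' \<Rightarrow> (0,0,0,0,0) | Num.Bit1 m' \<Rightarrow> (0,0,0,0,0))"
definition tN_256_120 :: "num \<Rightarrow> rowt" where "tN_256_120 m = (case m of Num.One \<Rightarrow> (45648, 1714, 508, 231913, 7551989) | Num.Bit0 m' \<Rightarrow> (0,0,0,0,0) | Num.Bit1 m' \<Rightarrow> (0,0,0,0,0))"
definition tN_256_121 :: "num \<Rightarrow> rowt" where "tN_256_121 m = (case m of Num.One \<Rightarrow> (45981, 1825, 509, 233627, 7597637) | Num.Bit0 m' \<Rightarrow> (0,0,0,0,0) | Num.Bit1 m' \<Rightarrow> (0,0,0,0,0))"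
definition tN_256_122 :: "num \<Rightarrow> rowt" where "tN_256_122 m = (case m of Num.One \<Rightarrow> (46317, 1937, 509, 235452, 7643618) | Num.Bit0 m' \<Rightarrow> (0,0,0,0,0) | Num.Bit1 m' \<Rightarrow> (0,0,0,0,0))"
definition tN_256_123 :: "num \<Rightarrow> rowt" where "tN_256_123 m = (case m of Num.One \<Rightarrow> (46659, 2051, 509, 237389, 7689935) | Num.Bit0 m' \<Rightarrow> (0,0,0,0,0) | Num.Bit1 m' \<Rightarrow> (0,0,0,0,0))"
definition tN_256_124 :: "num \<Rightarrow> rowt" where "tN_256_124 m = (case m of Num.One \<Rightarrow> (47004, 2166, 510, 239440, 7736594) | Num.Bit0 m' \<Rightarrow> (0,0,0,0,0) | Num.Bit1 m' \<Rightarrow> (0,0,0,0,0))"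
definition tN_256_125 :: "num \<Rightarrow> rowt" where "tN_256_125 m = (case m of Num.One \<Rightarrow> (47352, 2282, 510, 241606, 7783598) | Num.Bit0 m' \<Rightarrow> (0,0,0,0,0) | Num.Bit1 m' \<Rightarrow> (0,0,0,0,0))"
definition tN_256_126 :: "num \<Rightarrow> rowt" where "tN_256_126 m = (case m of Num.One \<Rightarrow> (47703, 2399, 510, 243888, 7830950) | Num.Bit0 m' \<Rightarrow> (0,0,0,0,0) | Num.Bit1 m' \<Rightarrow> (0,0,0,0,0))"
definition tN_256_127 :: "num \<Rightarrow> rowt" where "tN_256_127 m = (case m of Num.One \<Rightarrow> (48060, 2518, 511, 246287, 7878653) | Num.Bit0 m' \<Rightarrow> (0,0,0,0,0) | Num.Bit1 m' \<Rightarrow> (0,0,0,0,0))"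
definition tN_256_128 :: "num \<Rightarrow> rowt" where "tN_256_128 m = (case m of Num.One \<Rightarrow> (48420, 2638, 511, 248805, 7926713) | Num.Bit0 m' \<Rightarrow> (0,0,0,0,0) | Num.Bit1 m' \<Rightarrow> (0,0,0,0,0))"
definition tN_256_129 :: "num \<Rightarrow> rowt" where "tN_256_129 m = (case m of Num.One \<Rightarrow> (48783, 2759, 511, 251443, 7975133) | Num.Bit0 m' \<Rightarrow> (0,0,0,0,0) | Num.Bit1 m' \<Rightarrow> (0,0,0,0,0))"
definition tN_256_130 :: "num \<Rightarrow> rowt" where "tN_256_130 m = (case m of Num.One \<Rightarrow> (49149, 2881, 512, 254202, 8023916) | Num.Bit0 m' \<Rightarrow> (0,0,0,0,0) | Num.Bit1 m' \<Rightarrow> (0,0,0,0,0))"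
definition tN_256_131 :: "num \<Rightarrow> rowt" where "tN_256_131 m = (case m of Num.One \<Rightarrow> (49521, 3005, 512, 257083, 8073065) | Num.Bit0 m' \<Rightarrow> (0,0,0,0,0) | Num.Bit1 m' \<Rightarrow> (0,0,0,0,0))"
definition tN_256_132 :: "num \<Rightarrow> rowt" where "tN_256_132 m = (case m of Num.One \<Rightarrow> (49896, 3130, 512, 260088, 8122586) | Num.Bit0 m' \<Rightarrow> (0,0,0,0,0) | Num.Bit1 m' \<Rightarrow> (0,0,0,0,0))"
definition tN_256_133 :: "num \<Rightarrow> rowt" where "tN_256_133 m = (case m of Num.One \<Rightarrow> (50277, 3257, 512, 263218, 8172482) | Num.Bit0 m' \<Rightarrow> (0,0,0,0,0) | Num.Bit1 m' \<Rightarrow> (0,0,0,0,0))"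
definition tN_256_134 :: "num \<Rightarrow> rowt" where "tN_256_134 m = (case m of Num.One \<Rightarrow> (50658, 3384, 513, 266475, 8222759) | Num.Bit0 m' \<Rightarrow> (0,0,0,0,0) | Num.Bit1 m' \<Rightarrow> (0,0,0,0,0))"
definition tN_256_135 :: "num \<Rightarrow> rowt" where "tN_256_135 m = (case m of Num.One \<Rightarrow> (51045, 3513, 513, 269859, 8273417) | Num.Bit0 m' \<Rightarrow> (0,0,0,0,0) | Num.Bit1 m' \<Rightarrow> (0,0,0,0,0))"
definition tN_256_136 :: "num \<Rightarrow> rowt" where "tN_256_136 m = (case m of Num.One \<Rightarrow> (51438, 3644, 513, 273372, 8324462) | Num.Bit0 m' \<Rightarrow> (0,0,0,0,0) | Num.Bit1 m' \<Rightarrow> (0,0,0,0,0))"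
definition tN_256_137 :: "num \<Rightarrow> rowt" where "tN_256_137 m = (case m of Num.One \<Rightarrow> (51834, 3776, 514, 277016, 8375900) | Num.Bit0 m' \<Rightarrow> (0,0,0,0,0) | Num.Bit1 m' \<Rightarrow> (0,0,0,0,0))"
definition tN_256_138 :: "num \<Rightarrow> rowt" where "tN_256_138 m = (case m of Num.One \<Rightarrow> (52236, 3910, 514, 280792, 8427734) | Num.Bit0 m' \<Rightarrow> (0,0,0,0,0) | Num.Bit1 m' \<Rightarrow> (0,0,0,0,0))"
definition tN_256_139 :: "num \<Rightarrow> rowt" where "tN_256_139 m = (case m of Num.One \<Rightarrow> (52641, 4045, 514, 284702, 8479970) | Num.Bit0 m' \<Rightarrow> (0,0,0,0,0) | Num.Bit1 m' \<Rightarrow> (0,0,0,0,0))"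
definition tN_256_140 :: "num \<Rightarrow> rowt" where "tN_256_140 m = (case m of Num.One \<Rightarrow> (53052, 4182, 515, 288747, 8532611) | Num.Bit0 m' \<Rightarrow> (0,0,0,0,0) | Num.Bit1 m' \<Rightarrow> (0,0,0,0,0))"
definition tN_256_141 :: "num \<Rightarrow> rowt" where "tN_256_141 m = (case m of Num.One \<Rightarrow> (53466, 4320, 515, 292929, 8585663) | Num.Bit0 m' \<Rightarrow> (0,0,0,0,0) | Num.Bit1 m' \<Rightarrow> (0,0,0,0,0))"
definition tN_256_142 :: "num \<Rightarrow> rowt" where "tN_256_142 m = (case m of Num.One \<Rightarrow> (53886, 4460, 515, 297249, 8639129) | Num.Bit0 m' \<Rightarrow> (0,0,0,0,0) | Num.Bit1 m' \<Rightarrow> (0,0,0,0,0))"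
definition tN_256_143 :: "num \<Rightarrow> rowt" where "tN_256_143 m = (case m of Num.One \<Rightarrow> (54309, 4601, 516, 301709, 8693015) | Num.Bit0 m' \<Rightarrow> (0,0,0,0,0) | Num.Bit1 m' \<Rightarrow> (0,0,0,0,0))"
definition tN_256_144 :: "num \<Rightarrow> rowt" where "tN_256_144 m = (case m of Num.One \<Rightarrow> (54738, 4744, 516, 306310, 8747324) | Num.Bit0 m' \<Rightarrow> (0,0,0,0,0) | Num.Bit1 m' \<Rightarrow> (0,0,0,0,0))"
definition tN_256_145 :: "num \<Rightarrow> rowt" where "tN_256_145 m = (case m of Num.One \<Rightarrow> (55173, 4889, 516, 311054, 8802062) | Num.Bit0 m' \<Rightarrow> (0,0,0,0,0) | Num.Bit1 m' \<Rightarrow> (0,0,0,0,0))"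
definition tN_256_146 :: "num \<Rightarrow> rowt" where "tN_256_146 m = (case m of Num.One \<Rightarrow> (55614, 5036, 517, 315943, 8857235) | Num.Bit0 m' \<Rightarrow> (0,0,0,0,0) | Num.Bit1 m' \<Rightarrow> (0,0,0,0,0))"
definition tN_256_147 :: "num \<Rightarrow> rowt" where "tN_256_147 m = (case m of Num.One \<Rightarrow> (56058, 5184, 517, 320979, 8912849) | Num.Bit0 m' \<Rightarrow> (0,0,0,0,0) | Num.Bit1 m' \<Rightarrow> (0,0,0,0,0))"
definition tN_256_148 :: "num \<Rightarrow> rowt" where "tN_256_148 m = (case m of Num.One \<Rightarrow> (56508, 5334, 517, 326163, 8968907) | Num.Bit0 m' \<Rightarrow> (0,0,0,0,0) | Num.Bit1 m' \<Rightarrow> (0,0,0,0,0))"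
definition tN_256_149 :: "num \<Rightarrow> rowt" where "tN_256_149 m = (case m of Num.One \<Rightarrow> (56967, 5487, 517, 331497, 9025415) | Num.Bit0 m' \<Rightarrow> (0,0,0,0,0) | Num.Bit1 m' \<Rightarrow> (0,0,0,0,0))"
definition tN_256_150 :: "num \<Rightarrow> rowt" where "tN_256_150 m = (case m of Num.One \<Rightarrow> (57426, 5640, 518, 336984, 9082382) | Num.Bit0 m' \<Rightarrow> (0,0,0,0,0) | Num.Bit1 m' \<Rightarrow> (0,0,0,0,0))"
definition tN_256_151 :: "num \<Rightarrow> rowt" where "tN_256_151 m = (case m of Num.One \<Rightarrow> (57894, 5796, 518, 342624, 9139808) | Num.Bit0 m' \<Rightarrow> (0,0,0,0,0) | Num.Bit1 m' \<Rightarrow> (0,0,0,0,0))"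
definition tN_256_152 :: "num \<Rightarrow> rowt" where "tN_256_152 m = (case m of Num.One \<Rightarrow> (58368, 5954, 518, 348420, 9197702) | Num.Bit0 m' \<Rightarrow> (0,0,0,0,0) | Num.Bit1 m' \<Rightarrow> (0,0,0,0,0))"
definition tN_256_153 :: "num \<Rightarrow> rowt" where "tN_256_153 m = (case m of Num.One \<Rightarrow> (58845, 6113, 519, 354374, 9256070) | Num.Bit0 m' \<Rightarrow> (0,0,0,0,0) | Num.Bit1 m' \<Rightarrow> (0,0,0,0,0))"
definition tN_256_154 :: "num \<Rightarrow> rowt" where "tN_256_154 m = (case m of Num.One \<Rightarrow> (59331, 6275, 519, 360487, 9314915) | Num.Bit0 m' \<Rightarrow> (0,0,0,0,0) | Num.Bit1 m' \<Rightarrow> (0,0,0,0,0))"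
definition tN_256_155 :: "num \<Rightarrow> rowt" where "tN_256_155 m = (case m of Num.One \<Rightarrow> (59820, 6438, 519, 366762, 9374246) | Num.Bit0 m' \<Rightarrow> (0,0,0,0,0) | Num.Bit1 m' \<Rightarrow> (0,0,0,0,0))"
definition tN_256_156 :: "num \<Rightarrow> rowt" where "tN_256_156 m = (case m of Num.One \<Rightarrow> (60321, 6605, 520, 373200, 9434066) | Num.Bit0 m' \<Rightarrow> (0,0,0,0,0) | Num.Bit1 m' \<Rightarrow> (0,0,0,0,0))"
definition tN_256_157 :: "num \<Rightarrow> rowt" where "tN_256_157 m = (case m of Num.One \<Rightarrow> (60822, 6772, 520, 379805, 9494387) | Num.Bit0 m' \<Rightarrow> (0,0,0,0,0) | Num.Bit1 m' \<Rightarrow> (0,0,0,0,0))"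
definition tN_256_158 :: "num \<Rightarrow> rowt" where "tN_256_158 m = (case m of Num.One \<Rightarrow> (61332, 6942, 520, 386577, 9555209) | Num.Bit0 m' \<Rightarrow> (0,0,0,0,0) | Num.Bit1 m' \<Rightarrow> (0,0,0,0,0))"
definition tN_256_159 :: "num \<Rightarrow> rowt" where "tN_256_159 m = (case m of Num.One \<Rightarrow> (61851, 7115, 520, 393519, 9616541) | Num.Bit0 m' \<Rightarrow> (0,0,0,0,0) | Num.Bit1 m' \<Rightarrow> (0,0,0,0,0))"
definition tN_256_160 :: "num \<Rightarrow> rowt" where "tN_256_160 m = (case m of Num.One \<Rightarrow> (62373, 7289, 521, 400634, 9678392) | Num.Bit0 m' \<Rightarrow> (0,0,0,0,0) | Num.Bit1 m' \<Rightarrow> (0,0,0,0,0))"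
definition tN_256_161 :: "num \<Rightarrow> rowt" where "tN_256_161 m = (case m of Num.One \<Rightarrow> (62904, 7466, 521, 407923, 9740765) | Num.Bit0 m' \<Rightarrow> (0,0,0,0,0) | Num.Bit1 m' \<Rightarrow> (0,0,0,0,0))"
definition tN_256_162 :: "num \<Rightarrow> rowt" where "tN_256_162 m = (case m of Num.One \<Rightarrow> (63441, 7645, 521, 415389, 9803669) | Num.Bit0 m' \<Rightarrow> (0,0,0,0,0) | Num.Bit1 m' \<Rightarrow> (0,0,0,0,0))"
definition tN_256_163 :: "num \<Rightarrow> rowt" where "tN_256_163 m = (case m of Num.One \<Rightarrow> (63987, 7827, 522, 423034, 9867110) | Num.Bit0 m' \<Rightarrow> (0,0,0,0,0) | Num.Bit1 m' \<Rightarrow> (0,0,0,0,0))"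
definition tN_256_164 :: "num \<Rightarrow> rowt" where "tN_256_164 m = (case m of Num.One \<Rightarrow> (64536, 8010, 522, 430861, 9931097) | Num.Bit0 m' \<Rightarrow> (0,0,0,0,0) | Num.Bit1 m' \<Rightarrow> (0,0,0,0,0))"
definition tN_256_165 :: "num \<Rightarrow> rowt" where "tN_256_165 m = (case m of Num.One \<Rightarrow> (65097, 8197, 522, 438871, 9995633) | Num.Bit0 m' \<Rightarrow> (0,0,0,0,0) | Num.Bit1 m' \<Rightarrow> (0,0,0,0,0))"
definition tN_256_166 :: "num \<Rightarrow> rowt" where "tN_256_166 m = (case m of Num.One \<Rightarrow> (65667, 8387, 522, 447068, 10060730) | Num.Bit0 m' \<Rightarrow> (0,0,0,0,0) | Num.Bit1 m' \<Rightarrow> (0,0,0,0,0))"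
definition tN_256_167 :: "num \<Rightarrow> rowt" where "tN_256_167 m = (case m of Num.One \<Rightarrow> (66240, 8578, 523, 455455, 10126397) | Num.Bit0 m' \<Rightarrow> (0,0,0,0,0) | Num.Bit1 m' \<Rightarrow> (0,0,0,0,0))"
definition tN_256_168 :: "num \<Rightarrow> rowt" where "tN_256_168 m = (case m of Num.One \<Rightarrow> (66822, 8772, 523, 464033, 10192637) | Num.Bit0 m' \<Rightarrow> (0,0,0,0,0) | Num.Bit1 m' \<Rightarrow> (0,0,0,0,0))"
definition tN_256_169 :: "num \<Rightarrow> rowt" where "tN_256_169 m = (case m of Num.One \<Rightarrow> (67416, 8970, 523, 472805, 10259459) | Num.Bit0 m' \<Rightarrow> (0,0,0,0,0) | Num.Bit1 m' \<Rightarrow> (0,0,0,0,0))"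
definition tN_256_170 :: "num \<Rightarrow> rowt" where "tN_256_170 m = (case m of Num.One \<Rightarrow> (68016, 9170, 524, 481775, 10326875) | Num.Bit0 m' \<Rightarrow> (0,0,0,0,0) | Num.Bit1 m' \<Rightarrow> (0,0,0,0,0))"
definition tN_256_171 :: "num \<Rightarrow> rowt" where "tN_256_171 m = (case m of Num.One \<Rightarrow> (68622, 9372, 524, 490945, 10394891) | Num.Bit0 m' \<Rightarrow> (0,0,0,0,0) | Num.Bit1 m' \<Rightarrow> (0,0,0,0,0))"
definition tN_256_172 :: "num \<Rightarrow> rowt" where "tN_256_172 m = (case m of Num.One \<Rightarrow> (69240, 9578, 524, 500317, 10463513) | Num.Bit0 m' \<Rightarrow> (0,0,0,0,0) | Num.Bit1 m' \<Rightarrow> (0,0,0,0,0))"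
definition tN_256_173 :: "num \<Rightarrow> rowt" where "tN_256_173 m = (case m of Num.One \<Rightarrow> (69867, 9787, 524, 509895, 10532753) | Num.Bit0 m' \<Rightarrow> (0,0,0,0,0) | Num.Bit1 m' \<Rightarrow> (0,0,0,0,0))"
definition tN_256_174 :: "num \<Rightarrow> rowt" where "tN_256_174 m = (case m of Num.One \<Rightarrow> (70503, 9999, 525, 519682, 10602620) | Num.Bit0 m' \<Rightarrow> (0,0,0,0,0) | Num.Bit1 m' \<Rightarrow> (0,0,0,0,0))"
definition tN_256_175 :: "num \<Rightarrow> rowt" where "tN_256_175 m = (case m of Num.One \<Rightarrow> (71145, 10213, 525, 529681, 10673123) | Num.Bit0 m' \<Rightarrow> (0,0,0,0,0) | Num.Bit1 m' \<Rightarrow> (0,0,0,0,0))"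
definition tN_256_176 :: "num \<Rightarrow> rowt" where "tN_256_176 m = (case m of Num.One \<Rightarrow> (71802, 10432, 525, 539894, 10744268) | Num.Bit0 m' \<Rightarrow> (0,0,0,0,0) | Num.Bit1 m' \<Rightarrow> (0,0,0,0,0))"
definition tN_256_177 :: "num \<Rightarrow> rowt" where "tN_256_177 m = (case m of Num.One \<Rightarrow> (72465, 10653, 526, 550326, 10816070) | Num.Bit0 m' \<Rightarrow> (0,0,0,0,0) | Num.Bit1 m' \<Rightarrow> (0,0,0,0,0))"
definition tN_256_178 :: "num \<Rightarrow> rowt" where "tN_256_178 m = (case m of Num.One \<Rightarrow> (73137, 10877, 526, 560979, 10888535) | Num.Bit0 m' \<Rightarrow> (0,0,0,0,0) | Num.Bit1 m' \<Rightarrow> (0,0,0,0,0))"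
definition tN_256_179 :: "num \<Rightarrow> rowt" where "tN_256_179 m = (case m of Num.One \<Rightarrow> (73824, 11106, 526, 571856, 10961672) | Num.Bit0 m' \<Rightarrow> (0,0,0,0,0) | Num.Bit1 m' \<Rightarrow> (0,0,0,0,0))"
definition tN_256_180 :: "num \<Rightarrow> rowt" where "tN_256_180 m = (case m of Num.One \<Rightarrow> (74520, 11338, 526, 582962, 11035496) | Num.Bit0 m' \<Rightarrow> (0,0,0,0,0) | Num.Bit1 m' \<Rightarrow> (0,0,0,0,0))"
definition tN_256_181 :: "num \<Rightarrow> rowt" where "tN_256_181 m = (case m of Num.One \<Rightarrow> (75225, 11573, 527, 594300, 11110016) | Num.Bit0 m' \<Rightarrow> (0,0,0,0,0) | Num.Bit1 m' \<Rightarrow> (0,0,0,0,0))"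
definition tN_256_182 :: "num \<Rightarrow> rowt" where "tN_256_182 m = (case m of Num.One \<Rightarrow> (75939, 11811, 527, 605873, 11185241) | Num.Bit0 m' \<Rightarrow> (0,0,0,0,0) | Num.Bit1 m' \<Rightarrow> (0,0,0,0,0))"
definition tN_256_183 :: "num \<Rightarrow> rowt" where "tN_256_183 m = (case m of Num.One \<Rightarrow> (76668, 12054, 527, 617684, 11261180) | Num.Bit0 m' \<Rightarrow> (0,0,0,0,0) | Num.Bit1 m' \<Rightarrow> (0,0,0,0,0))"
definition tN_256_184 :: "num \<Rightarrow> rowt" where "tN_256_184 m = (case m of Num.One \<Rightarrow> (77412, 12302, 527, 629738, 11337848) | Num.Bit0 m' \<Rightarrow> (0,0,0,0,0) | Num.Bit1 m' \<Rightarrow> (0,0,0,0,0))"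
definition tN_256_185 :: "num \<Rightarrow> rowt" where "tN_256_185 m = (case m of Num.One \<Rightarrow> (78159, 12551, 528, 642040, 11415260) | Num.Bit0 m' \<Rightarrow> (0,0,0,0,0) | Num.Bit1 m' \<Rightarrow> (0,0,0,0,0))"
definition tN_256_186 :: "num \<Rightarrow> rowt" where "tN_256_186 m = (case m of Num.One \<Rightarrow> (78924, 12806, 528, 654591, 11493419) | Num.Bit0 m' \<Rightarrow> (0,0,0,0,0) | Num.Bit1 m' \<Rightarrow> (0,0,0,0,0))"
definition tN_256_187 :: "num \<Rightarrow> rowt" where "tN_256_187 m = (case m of Num.One \<Rightarrow> (79701, 13065, 528, 667397, 11572343) | Num.Bit0 m' \<Rightarrow> (0,0,0,0,0) | Num.Bit1 m' \<Rightarrow> (0,0,0,0,0))"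
definition tN_256_188 :: "num \<Rightarrow> rowt" where "tN_256_188 m = (case m of Num.One \<Rightarrow> (80493, 13329, 529, 680462, 11652044) | Num.Bit0 m' \<Rightarrow> (0,0,0,0,0) | Num.Bit1 m' \<Rightarrow> (0,0,0,0,0))"
definition tN_256_189 :: "num \<Rightarrow> rowt" where "tN_256_189 m = (case m of Num.One \<Rightarrow> (81291, 13595, 529, 693791, 11732537) | Num.Bit0 m' \<Rightarrow> (0,0,0,0,0) | Num.Bit1 m' \<Rightarrow> (0,0,0,0,0))"
definition tN_256_190 :: "num \<Rightarrow> rowt" where "tN_256_190 m = (case m of Num.One \<Rightarrow> (82107, 13867, 529, 707386, 11813828) | Num.Bit0 m' \<Rightarrow> (0,0,0,0,0) | Num.Bit1 m' \<Rightarrow> (0,0,0,0,0))"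
definition tN_256_191 :: "num \<Rightarrow> rowt" where "tN_256_191 m = (case m of Num.One \<Rightarrow> (82938, 14144, 529, 721253, 11895935) | Num.Bit0 m' \<Rightarrow> (0,0,0,0,0) | Num.Bit1 m' \<Rightarrow> (0,0,0,0,0))"
definition tN_256_192 :: "num \<Rightarrow> rowt" where "tN_256_192 m = (case m of Num.One \<Rightarrow> (83784, 14426, 530, 735397, 11978873) | Num.Bit0 m' \<Rightarrow> (0,0,0,0,0) | Num.Bit1 m' \<Rightarrow> (0,0,0,0,0))"
definition tN_256_193 :: "num \<Rightarrow> rowt" where "tN_256_193 m = (case m of Num.One \<Rightarrow> (84639, 14711, 530, 749823, 12062657) | Num.Bit0 m' \<Rightarrow> (0,0,0,0,0) | Num.Bit1 m' \<Rightarrow> (0,0,0,0,0))"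
definition tN_256_194 :: "num \<Rightarrow> rowt" where "tN_256_194 m = (case m of Num.One \<Rightarrow> (85512, 15002, 530, 764534, 12147296) | Num.Bit0 m' \<Rightarrow> (0,0,0,0,0) | Num.Bit1 m' \<Rightarrow> (0,0,0,0,0))"
definition tN_256_195 :: "num \<Rightarrow> rowt" where "tN_256_195 m = (case m of Num.One \<Rightarrow> (86406, 15300, 530, 779536, 12232808) | Num.Bit0 m' \<Rightarrow> (0,0,0,0,0) | Num.Bit1 m' \<Rightarrow> (0,0,0,0,0))"
definition tN_256_196 :: "num \<Rightarrow> rowt" where "tN_256_196 m = (case m of Num.One \<Rightarrow> (87309, 15601, 531, 794836, 12319214) | Num.Bit0 m' \<Rightarrow> (0,0,0,0,0) | Num.Bit1 m' \<Rightarrow> (0,0,0,0,0))"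
definition tN_256_197 :: "num \<Rightarrow> rowt" where "tN_256_197 m = (case m of Num.One \<Rightarrow> (88227, 15907, 531, 810437, 12406523) | Num.Bit0 m' \<Rightarrow> (0,0,0,0,0) | Num.Bit1 m' \<Rightarrow> (0,0,0,0,0))"
definition tN_256_198 :: "num \<Rightarrow> rowt" where "tN_256_198 m = (case m of Num.One \<Rightarrow> (89166, 16220, 531, 826344, 12494750) | Num.Bit0 m' \<Rightarrow> (0,0,0,0,0) | Num.Bit1 m' \<Rightarrow> (0,0,0,0,0))"
definition tN_256_199 :: "num \<Rightarrow> rowt" where "tN_256_199 m = (case m of Num.One \<Rightarrow> (90126, 16540, 531, 842564, 12583916) | Num.Bit0 m' \<Rightarrow> (0,0,0,0,0) | Num.Bit1 m' \<Rightarrow> (0,0,0,0,0))"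
definition tN_256_200 :: "num \<Rightarrow> rowt" where "tN_256_200 m = (case m of Num.One \<Rightarrow> (91095, 16863, 532, 859104, 12674042) | Num.Bit0 m' \<Rightarrow> (0,0,0,0,0) | Num.Bit1 m' \<Rightarrow> (0,0,0,0,0))"
definition tN_256_201 :: "num \<Rightarrow> rowt" where "tN_256_201 m = (case m of Num.One \<Rightarrow> (92085, 17193, 532, 875967, 12765137) | Num.Bit0 m' \<Rightarrow> (0,0,0,0,0) | Num.Bit1 m' \<Rightarrow> (0,0,0,0,0))"
definition tN_256_202 :: "num \<Rightarrow> rowt" where "tN_256_202 m = (case m of Num.One \<Rightarrow> (93099, 17531, 532, 893160, 12857222) | Num.Bit0 m' \<Rightarrow> (0,0,0,0,0) | Num.Bit1 m' \<Rightarrow> (0,0,0,0,0))"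
definition tN_256_203 :: "num \<Rightarrow> rowt" where "tN_256_203 m = (case m of Num.One \<Rightarrow> (94131, 17875, 533, 910691, 12950321) | Num.Bit0 m' \<Rightarrow> (0,0,0,0,0) | Num.Bit1 m' \<Rightarrow> (0,0,0,0,0))"
definition tN_256_204 :: "num \<Rightarrow> rowt" where "tN_256_204 m = (case m of Num.One \<Rightarrow> (95178, 18224, 533, 928566, 13044452) | Num.Bit0 m' \<Rightarrow> (0,0,0,0,0) | Num.Bit1 m' \<Rightarrow> (0,0,0,0,0))"
definition tN_256_205 :: "num \<Rightarrow> rowt" where "tN_256_205 m = (case m of Num.One \<Rightarrow> (96246, 18580, 533, 946790, 13139630) | Num.Bit0 m' \<Rightarrow> (0,0,0,0,0) | Num.Bit1 m' \<Rightarrow> (0,0,0,0,0))"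
definition tN_256_206 :: "num \<Rightarrow> rowt" where "tN_256_206 m = (case m of Num.One \<Rightarrow> (97341, 18945, 533, 965370, 13235876) | Num.Bit0 m' \<Rightarrow> (0,0,0,0,0) | Num.Bit1 m' \<Rightarrow> (0,0,0,0,0))"
definition tN_256_207 :: "num \<Rightarrow> rowt" where "tN_256_207 m = (case m of Num.One \<Rightarrow> (98457, 19317, 534, 984315, 13333217) | Num.Bit0 m' \<Rightarrow> (0,0,0,0,0) | Num.Bit1 m' \<Rightarrow> (0,0,0,0,0))"
definition tN_256_208 :: "num \<Rightarrow> rowt" where "tN_256_208 m = (case m of Num.One \<Rightarrow> (99588, 19694, 534, 1003632, 13431674) | Num.Bit0 m' \<Rightarrow> (0,0,0,0,0) | Num.Bit1 m' \<Rightarrow> (0,0,0,0,0))"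
definition tN_256_209 :: "num \<Rightarrow> rowt" where "tN_256_209 m = (case m of Num.One \<Rightarrow> (100746, 20080, 534, 1023326, 13531262) | Num.Bit0 m' \<Rightarrow> (0,0,0,0,0) | Num.Bit1 m' \<Rightarrow> (0,0,0,0,0))"
definition tN_256_210 :: "num \<Rightarrow> rowt" where "tN_256_210 m = (case m of Num.One \<Rightarrow> (101931, 20475, 534, 1043406, 13632008) | Num.Bit0 m' \<Rightarrow> (0,0,0,0,0) | Num.Bit1 m' \<Rightarrow> (0,0,0,0,0))"
definition tN_256_211 :: "num \<Rightarrow> rowt" where "tN_256_211 m = (case m of Num.One \<Rightarrow> (103146, 20880, 535, 1063881, 13733939) | Num.Bit0 m' \<Rightarrow> (0,0,0,0,0) | Num.Bit1 m' \<Rightarrow> (0,0,0,0,0))"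
definition tN_256_212 :: "num \<Rightarrow> rowt" where "tN_256_212 m = (case m of Num.One \<Rightarrow> (104373, 21289, 535, 1084761, 13837085) | Num.Bit0 m' \<Rightarrow> (0,0,0,0,0) | Num.Bit1 m' \<Rightarrow> (0,0,0,0,0))"
definition tN_256_213 :: "num \<Rightarrow> rowt" where "tN_256_213 m = (case m of Num.One \<Rightarrow> (105630, 21708, 535, 1106050, 13941458) | Num.Bit0 m' \<Rightarrow> (0,0,0,0,0) | Num.Bit1 m' \<Rightarrow> (0,0,0,0,0))"
definition tN_256_214 :: "num \<Rightarrow> rowt" where "tN_256_214 m = (case m of Num.One \<Rightarrow> (106923, 22139, 535, 1127758, 14047088) | Num.Bit0 m' \<Rightarrow> (0,0,0,0,0) | Num.Bit1 m' \<Rightarrow> (0,0,0,0,0))"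
definition tN_256_215 :: "num \<Rightarrow> rowt" where "tN_256_215 m = (case m of Num.One \<Rightarrow> (108246, 22580, 536, 1149897, 14154011) | Num.Bit0 m' \<Rightarrow> (0,0,0,0,0) | Num.Bit1 m' \<Rightarrow> (0,0,0,0,0))"
definition tN_256_216 :: "num \<Rightarrow> rowt" where "tN_256_216 m = (case m of Num.One \<Rightarrow> (109584, 23026, 536, 1172477, 14262257) | Num.Bit0 m' \<Rightarrow> (0,0,0,0,0) | Num.Bit1 m' \<Rightarrow> (0,0,0,0,0))"
definition tN_256_217 :: "num \<Rightarrow> rowt" where "tN_256_217 m = (case m of Num.One \<Rightarrow> (110958, 23484, 536, 1195503, 14371841) | Num.Bit0 m' \<Rightarrow> (0,0,0,0,0) | Num.Bit1 m' \<Rightarrow> (0,0,0,0,0))"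
definition tN_256_218 :: "num \<Rightarrow> rowt" where "tN_256_218 m = (case m of Num.One \<Rightarrow> (112368, 23954, 536, 1218987, 14482799) | Num.Bit0 m' \<Rightarrow> (0,0,0,0,0) | Num.Bit1 m' \<Rightarrow> (0,0,0,0,0))"
definition tN_256_219 :: "num \<Rightarrow> rowt" where "tN_256_219 m = (case m of Num.One \<Rightarrow> (113817, 24437, 537, 1242941, 14595167) | Num.Bit0 m' \<Rightarrow> (0,0,0,0,0) | Num.Bit1 m' \<Rightarrow> (0,0,0,0,0))"
definition tN_256_220 :: "num \<Rightarrow> rowt" where "tN_256_220 m = (case m of Num.One \<Rightarrow> (115281, 24925, 537, 1267378, 14708984) | Num.Bit0 m' \<Rightarrow> (0,0,0,0,0) | Num.Bit1 m' \<Rightarrow> (0,0,0,0,0))"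
definition tN_256_221 :: "num \<Rightarrow> rowt" where "tN_256_221 m = (case m of Num.One \<Rightarrow> (116787, 25427, 537, 1292303, 14824265) | Num.Bit0 m' \<Rightarrow> (0,0,0,0,0) | Num.Bit1 m' \<Rightarrow> (0,0,0,0,0))"
definition tN_256_222 :: "num \<Rightarrow> rowt" where "tN_256_222 m = (case m of Num.One \<Rightarrow> (118335, 25943, 537, 1317730, 14941052) | Num.Bit0 m' \<Rightarrow> (0,0,0,0,0) | Num.Bit1 m' \<Rightarrow> (0,0,0,0,0))"
definition tN_256_223 :: "num \<Rightarrow> rowt" where "tN_256_223 m = (case m of Num.One \<Rightarrow> (119931, 26475, 537, 1343673, 15059387) | Num.Bit0 m' \<Rightarrow> (0,0,0,0,0) | Num.Bit1 m' \<Rightarrow> (0,0,0,0,0))"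
definition tN_256_224 :: "num \<Rightarrow> rowt" where "tN_256_224 m = (case m of Num.One \<Rightarrow> (121545, 27013, 538, 1370148, 15179318) | Num.Bit0 m' \<Rightarrow> (0,0,0,0,0) | Num.Bit1 m' \<Rightarrow> (0,0,0,0,0))"
definition tN_256_225 :: "num \<Rightarrow> rowt" where "tN_256_225 m = (case m of Num.One \<Rightarrow> (122895, 27463, 551, 1397161, 15300863) | Num.Bit0 m' \<Rightarrow> (0,0,0,0,0) | Num.Bit1 m' \<Rightarrow> (0,0,0,0,0))"
definition tN_256_226 :: "num \<Rightarrow> rowt" where "tN_256_226 m = (case m of Num.One \<Rightarrow> (124278, 27924, 551, 1424624, 15423758) | Num.Bit0 m' \<Rightarrow> (0,0,0,0,0) | Num.Bit1 m' \<Rightarrow> (0,0,0,0,0))"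
definition tN_256_227 :: "num \<Rightarrow> rowt" where "tN_256_227 m = (case m of Num.One \<Rightarrow> (125694, 28396, 551, 1452548, 15548036) | Num.Bit0 m' \<Rightarrow> (0,0,0,0,0) | Num.Bit1 m' \<Rightarrow> (0,0,0,0,0))"
definition tN_256_228 :: "num \<Rightarrow> rowt" where "tN_256_228 m = (case m of Num.One \<Rightarrow> (127149, 28881, 551, 1480944, 15673730) | Num.Bit0 m' \<Rightarrow> (0,0,0,0,0) | Num.Bit1 m' \<Rightarrow> (0,0,0,0,0))"
definition tN_256_229 :: "num \<Rightarrow> rowt" where "tN_256_229 m = (case m of Num.One \<Rightarrow> (128637, 29377, 551, 1509825, 15800879) | Num.Bit0 m' \<Rightarrow> (0,0,0,0,0) | Num.Bit1 m' \<Rightarrow> (0,0,0,0,0))"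
definition tN_256_230 :: "num \<Rightarrow> rowt" where "tN_256_230 m = (case m of Num.One \<Rightarrow> (130164, 29886, 551, 1539202, 15929516) | Num.Bit0 m' \<Rightarrow> (0,0,0,0,0) | Num.Bit1 m' \<Rightarrow> (0,0,0,0,0))"
definition tN_256_231 :: "num \<Rightarrow> rowt" where "tN_256_231 m = (case m of Num.One \<Rightarrow> (131730, 30408, 551, 1569088, 16059680) | Num.Bit0 m' \<Rightarrow> (0,0,0,0,0) | Num.Bit1 m' \<Rightarrow> (0,0,0,0,0))"
definition tN_256_232 :: "num \<Rightarrow> rowt" where "tN_256_232 m = (case m of Num.One \<Rightarrow> (133338, 30944, 551, 1599496, 16191410) | Num.Bit0 m' \<Rightarrow> (0,0,0,0,0) | Num.Bit1 m' \<Rightarrow> (0,0,0,0,0))"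
definition tN_256_233 :: "num \<Rightarrow> rowt" where "tN_256_233 m = (case m of Num.One \<Rightarrow> (134991, 31495, 551, 1630440, 16324748) | Num.Bit0 m' \<Rightarrow> (0,0,0,0,0) | Num.Bit1 m' \<Rightarrow> (0,0,0,0,0))"
definition tN_256_234 :: "num \<Rightarrow> rowt" where "tN_256_234 m = (case m of Num.One \<Rightarrow> (136686, 32060, 551, 1661935, 16459739) | Num.Bit0 m' \<Rightarrow> (0,0,0,0,0) | Num.Bit1 m' \<Rightarrow> (0,0,0,0,0))"
definition tN_256_235 :: "num \<Rightarrow> rowt" where "tN_256_235 m = (case m of Num.One \<Rightarrow> (138432, 32642, 551, 1693995, 16596425) | Num.Bit0 m' \<Rightarrow> (0,0,0,0,0) | Num.Bit1 m' \<Rightarrow> (0,0,0,0,0))"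
definition tN_256_236 :: "num \<Rightarrow> rowt" where "tN_256_236 m = (case m of Num.One \<Rightarrow> (140223, 33239, 551, 1726637, 16734857) | Num.Bit0 m' \<Rightarrow> (0,0,0,0,0) | Num.Bit1 m' \<Rightarrow> (0,0,0,0,0))"
definition tN_256_237 :: "num \<Rightarrow> rowt" where "tN_256_237 m = (case m of Num.One \<Rightarrow> (142068, 33854, 551, 1759876, 16875080) | Num.Bit0 m' \<Rightarrow> (0,0,0,0,0) | Num.Bit1 m' \<Rightarrow> (0,0,0,0,0))"
definition tN_256_238 :: "num \<Rightarrow> rowt" where "tN_256_238 m = (case m of Num.One \<Rightarrow> (143967, 34487, 551, 1793730, 17017148) | Num.Bit0 m' \<Rightarrow> (0,0,0,0,0) | Num.Bit1 m' \<Rightarrow> (0,0,0,0,0))"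
definition tN_256_239 :: "num \<Rightarrow> rowt" where "tN_256_239 m = (case m of Num.One \<Rightarrow> (145923, 35139, 551, 1828217, 17161115) | Num.Bit0 m' \<Rightarrow> (0,0,0,0,0) | Num.Bit1 m' \<Rightarrow> (0,0,0,0,0))"
definition tN_256_240 :: "num \<Rightarrow> rowt" where "tN_256_240 m = (case m of Num.One \<Rightarrow> (147936, 35810, 551, 1863356, 17307038) | Num.Bit0 m' \<Rightarrow> (0,0,0,0,0) | Num.Bit1 m' \<Rightarrow> (0,0,0,0,0))"
definition tN_256_241 :: "num \<Rightarrow> rowt" where "tN_256_241 m = (case m of Num.One \<Rightarrow> (150012, 36502, 551, 1899166, 17454974) | Num.Bit0 m' \<Rightarrow> (0,0,0,0,0) | Num.Bit1 m' \<Rightarrow> (0,0,0,0,0))"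
definition tN_256_242 :: "num \<Rightarrow> rowt" where "tN_256_242 m = (case m of Num.One \<Rightarrow> (152154, 37216, 551, 1935668, 17604986) | Num.Bit0 m' \<Rightarrow> (0,0,0,0,0) | Num.Bit1 m' \<Rightarrow> (0,0,0,0,0))"
definition tN_256_243 :: "num \<Rightarrow> rowt" where "tN_256_243 m = (case m of Num.One \<Rightarrow> (154365, 37953, 551, 1972884, 17757140) | Num.Bit0 m' \<Rightarrow> (0,0,0,0,0) | Num.Bit1 m' \<Rightarrow> (0,0,0,0,0))"
definition tN_256_244 :: "num \<Rightarrow> rowt" where "tN_256_244 m = (case m of Num.One \<Rightarrow> (156648, 38714, 551, 2010837, 17911505) | Num.Bit0 m' \<Rightarrow> (0,0,0,0,0) | Num.Bit1 m' \<Rightarrow> (0,0,0,0,0))"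
definition tN_256_245 :: "num \<Rightarrow> rowt" where "tN_256_245 m = (case m of Num.One \<Rightarrow> (159006, 39500, 551, 2049551, 18068153) | Num.Bit0 m' \<Rightarrow> (0,0,0,0,0) | Num.Bit1 m' \<Rightarrow> (0,0,0,0,0))"
definition tN_256_246 :: "num \<Rightarrow> rowt" where "tN_256_246 m = (case m of Num.One \<Rightarrow> (161445, 40313, 551, 2089051, 18227159) | Num.Bit0 m' \<Rightarrow> (0,0,0,0,0) | Num.Bit1 m' \<Rightarrow> (0,0,0,0,0))"
definition tN_256_247 :: "num \<Rightarrow> rowt" where "tN_256_247 m = (case m of Num.One \<Rightarrow> (163968, 41154, 551, 2129364, 18388604) | Num.Bit0 m' \<Rightarrow> (0,0,0,0,0) | Num.Bit1 m' \<Rightarrow> (0,0,0,0,0))"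
definition tN_256_248 :: "num \<Rightarrow> rowt" where "tN_256_248 m = (case m of Num.One \<Rightarrow> (166581, 42025, 551, 2170518, 18552572) | Num.Bit0 m' \<Rightarrow> (0,0,0,0,0) | Num.Bit1 m' \<Rightarrow> (0,0,0,0,0))"
definition tN_256_249 :: "num \<Rightarrow> rowt" where "tN_256_249 m = (case m of Num.One \<Rightarrow> (169290, 42928, 551, 2212543, 18719153) | Num.Bit0 m' \<Rightarrow> (0,0,0,0,0) | Num.Bit1 m' \<Rightarrow> (0,0,0,0,0))"
definition tN_256_250 :: "num \<Rightarrow> rowt" where "tN_256_250 m = (case m of Num.One \<Rightarrow> (172098, 43864, 551, 2255471, 18888443) | Num.Bit0 m' \<Rightarrow> (0,0,0,0,0) | Num.Bit1 m' \<Rightarrow> (0,0,0,0,0))"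
definition tN_256_251 :: "num \<Rightarrow> rowt" where "tN_256_251 m = (case m of Num.One \<Rightarrow> (175014, 44836, 551, 2299335, 19060541) | Num.Bit0 m' \<Rightarrow> (0,0,0,0,0) | Num.Bit1 m' \<Rightarrow> (0,0,0,0,0))"
definition tN_256_252 :: "num \<Rightarrow> rowt" where "tN_256_252 m = (case m of Num.One \<Rightarrow> (178041, 45845, 551, 2344171, 19235555) | Num.Bit0 m' \<Rightarrow> (0,0,0,0,0) | Num.Bit1 m' \<Rightarrow> (0,0,0,0,0))"
definition tN_256_253 :: "num \<Rightarrow> rowt" where "tN_256_253 m = (case m of Num.One \<Rightarrow> (181188, 46894, 551, 2390016, 19413596) | Num.Bit0 m' \<Rightarrow> (0,0,0,0,0) | Num.Bit1 m' \<Rightarrow> (0,0,0,0,0))"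
definition tN_256_254 :: "num \<Rightarrow> rowt" where "tN_256_254 m = (case m of Num.One \<Rightarrow> (184464, 47986, 551, 2436910, 19594784) | Num.Bit0 m' \<Rightarrow> (0,0,0,0,0) | Num.Bit1 m' \<Rightarrow> (0,0,0,0,0))"
definition tN_256_255 :: "num \<Rightarrow> rowt" where "tN_256_255 m = (case m of Num.One \<Rightarrow> (187875, 49123, 551, 2484896, 19779248) | Num.Bit0 m' \<Rightarrow> (0,0,0,0,0) | Num.Bit1 m' \<Rightarrow> (0,0,0,0,0))"
definition tN_128_0 :: "num \<Rightarrow> rowt" where "tN_128_0 m = (case m of Num.One \<Rightarrow> (13843, 0, 446, 218779, 1497256) | Num.Bit0 m' \<Rightarrow> tN_256_0 m' | Num.Bit1 m' \<Rightarrow> tN_256_128 m')"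
definition tN_128_1 :: "num \<Rightarrow> rowt" where "tN_128_1 m = (case m of Num.One \<Rightarrow> (13886, 0, 447, 218779, 1511099) | Num.Bit0 m' \<Rightarrow> tN_256_1 m' | Num.Bit1 m' \<Rightarrow> tN_256_129 m')"
definition tN_128_2 :: "num \<Rightarrow> rowt" where "tN_128_2 m = (case m of Num.One \<Rightarrow> (13930, 0, 447, 218779, 1524985) | Num.Bit0 m' \<Rightarrow> tN_256_2 m' | Num.Bit1 m' \<Rightarrow> tN_256_130 m')"
definition tN_128_3 :: "num \<Rightarrow> rowt" where "tN_128_3 m = (case m of Num.One \<Rightarrow> (13974, 0, 447, 218779, 1538915) | Num.Bit0 m' \<Rightarrow> tN_256_3 m' | Num.Bit1 m' \<Rightarrow> tN_256_131 m')"
definition tN_128_4 :: "num \<Rightarrow> rowt" where "tN_128_4 m = (case m of Num.One \<Rightarrow> (14019, 0, 447, 218779, 1552889) | Num.Bit0 m' \<Rightarrow> tN_256_4 m' | Num.Bit1 m' \<Rightarrow> tN_256_132 m')"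
definition tN_128_5 :: "num \<Rightarrow> rowt" where "tN_128_5 m = (case m of Num.One \<Rightarrow> (14063, 0, 447, 218779, 1566908) | Num.Bit0 m' \<Rightarrow> tN_256_5 m' | Num.Bit1 m' \<Rightarrow> tN_256_133 m')"
definition tN_128_6 :: "num \<Rightarrow> rowt" where "tN_128_6 m = (case m of Num.One \<Rightarrow> (14108, 0, 447, 218779, 1580971) | Num.Bit0 m' \<Rightarrow> tN_256_6 m' | Num.Bit1 m' \<Rightarrow> tN_256_134 m')"
definition tN_128_7 :: "num \<Rightarrow> rowt" where "tN_128_7 m = (case m of Num.One \<Rightarrow> (14153, 0, 448, 218779, 1595079) | Num.Bit0 m' \<Rightarrow> tN_256_7 m' | Num.Bit1 m' \<Rightarrow> tN_256_135 m')"
definition tN_128_8 :: "num \<Rightarrow> rowt" where "tN_128_8 m = (case m of Num.One \<Rightarrow> (14199, 0, 448, 218779, 1609232) | Num.Bit0 m' \<Rightarrow> tN_256_8 m' | Num.Bit1 m' \<Rightarrow> tN_256_136 m')"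
definition tN_128_9 :: "num \<Rightarrow> rowt" where "tN_128_9 m = (case m of Num.One \<Rightarrow> (14244, 0, 448, 218779, 1623431) | Num.Bit0 m' \<Rightarrow> tN_256_9 m' | Num.Bit1 m' \<Rightarrow> tN_256_137 m')"
definition tN_128_10 :: "num \<Rightarrow> rowt" where "tN_128_10 m = (case m of Num.One \<Rightarrow> (14290, 0, 448, 218779, 1637675) | Num.Bit0 m' \<Rightarrow> tN_256_10 m' | Num.Bit1 m' \<Rightarrow> tN_256_138 m')"
definition tN_128_11 :: "num \<Rightarrow> rowt" where "tN_128_11 m = (case m of Num.One \<Rightarrow> (14337, 0, 448, 218779, 1651965) | Num.Bit0 m' \<Rightarrow> tN_256_11 m' | Num.Bit1 m' \<Rightarrow> tN_256_139 m')"
definition tN_128_12 :: "num \<Rightarrow> rowt" where "tN_128_12 m = (case m of Num.One \<Rightarrow> (14383, 0, 448, 218779, 1666302) | Num.Bit0 m' \<Rightarrow> tN_256_12 m' | Num.Bit1 m' \<Rightarrow> tN_256_140 m')"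
definition tN_128_13 :: "num \<Rightarrow> rowt" where "tN_128_13 m = (case m of Num.One \<Rightarrow> (14430, 0, 449, 218779, 1680685) | Num.Bit0 m' \<Rightarrow> tN_256_13 m' | Num.Bit1 m' \<Rightarrow> tN_256_141 m')"
definition tN_128_14 :: "num \<Rightarrow> rowt" where "tN_128_14 m = (case m of Num.One \<Rightarrow> (14477, 0, 449, 218779, 1695115) | Num.Bit0 m' \<Rightarrow> tN_256_14 m' | Num.Bit1 m' \<Rightarrow> tN_256_142 m')"
definition tN_128_15 :: "num \<Rightarrow> rowt" where "tN_128_15 m = (case m of Num.One \<Rightarrow> (14524, 0, 449, 218779, 1709592) | Num.Bit0 m' \<Rightarrow> tN_256_15 m' | Num.Bit1 m' \<Rightarrow> tN_256_143 m')"
definition tN_128_16 :: "num \<Rightarrow> rowt" where "tN_128_16 m = (case m of Num.One \<Rightarrow> (14572, 0, 449, 218779, 1724116) | Num.Bit0 m' \<Rightarrow> tN_256_16 m' | Num.Bit1 m' \<Rightarrow> tN_256_144 m')"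
definition tN_128_17 :: "num \<Rightarrow> rowt" where "tN_128_17 m = (case m of Num.One \<Rightarrow> (14620, 0, 449, 218779, 1738688) | Num.Bit0 m' \<Rightarrow> tN_256_17 m' | Num.Bit1 m' \<Rightarrow> tN_256_145 m')"
definition tN_128_18 :: "num \<Rightarrow> rowt" where "tN_128_18 m = (case m of Num.One \<Rightarrow> (14668, 0, 449, 218779, 1753308) | Num.Bit0 m' \<Rightarrow> tN_256_18 m' | Num.Bit1 m' \<Rightarrow> tN_256_146 m')"
definition tN_128_19 :: "num \<Rightarrow> rowt" where "tN_128_19 m = (case m of Num.One \<Rightarrow> (14717, 0, 450, 218779, 1767976) | Num.Bit0 m' \<Rightarrow> tN_256_19 m' | Num.Bit1 m' \<Rightarrow> tN_256_147 m')"
definition tN_128_20 :: "num \<Rightarrow> rowt" where "tN_128_20 m = (case m of Num.One \<Rightarrow> (14765, 0, 450, 218779, 1782693) | Num.Bit0 m' \<Rightarrow> tN_256_20 m' | Num.Bit1 m' \<Rightarrow> tN_256_148 m')"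
definition tN_128_21 :: "num \<Rightarrow> rowt" where "tN_128_21 m = (case m of Num.One \<Rightarrow> (14815, 0, 450, 218779, 1797458) | Num.Bit0 m' \<Rightarrow> tN_256_21 m' | Num.Bit1 m' \<Rightarrow> tN_256_149 m')"
definition tN_128_22 :: "num \<Rightarrow> rowt" where "tN_128_22 m = (case m of Num.One \<Rightarrow> (14864, 0, 450, 218779, 1812273) | Num.Bit0 m' \<Rightarrow> tN_256_22 m' | Num.Bit1 m' \<Rightarrow> tN_256_150 m')"
definition tN_128_23 :: "num \<Rightarrow> rowt" where "tN_128_23 m = (case m of Num.One \<Rightarrow> (14914, 0, 450, 218779, 1827137) | Num.Bit0 m' \<Rightarrow> tN_256_23 m' | Num.Bit1 m' \<Rightarrow> tN_256_151 m')"
definition tN_128_24 :: "num \<Rightarrow> rowt" where "tN_128_24 m = (case m of Num.One \<Rightarrow> (14964, 0, 450, 218779, 1842051) | Num.Bit0 m' \<Rightarrow> tN_256_24 m' | Num.Bit1 m' \<Rightarrow> tN_256_152 m')"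
definition tN_128_25 :: "num \<Rightarrow> rowt" where "tN_128_25 m = (case m of Num.One \<Rightarrow> (15014, 0, 451, 218779, 1857015) | Num.Bit0 m' \<Rightarrow> tN_256_25 m' | Num.Bit1 m' \<Rightarrow> tN_256_153 m')"
definition tN_128_26 :: "num \<Rightarrow> rowt" where "tN_128_26 m = (case m of Num.One \<Rightarrow> (15065, 0, 451, 218779, 1872029) | Num.Bit0 m' \<Rightarrow> tN_256_26 m' | Num.Bit1 m' \<Rightarrow> tN_256_154 m')"
definition tN_128_27 :: "num \<Rightarrow> rowt" where "tN_128_27 m = (case m of Num.One \<Rightarrow> (15115, 0, 451, 218779, 1887094) | Num.Bit0 m' \<Rightarrow> tN_256_27 m' | Num.Bit1 m' \<Rightarrow> tN_256_155 m')"
definition tN_128_28 :: "num \<Rightarrow> rowt" where "tN_128_28 m = (case m of Num.One \<Rightarrow> (15167, 0, 451, 218779, 1902209) | Num.Bit0 m' \<Rightarrow> tN_256_28 m' | Num.Bit1 m' \<Rightarrow> tN_256_156 m')"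
definition tN_128_29 :: "num \<Rightarrow> rowt" where "tN_128_29 m = (case m of Num.One \<Rightarrow> (15218, 0, 451, 218779, 1917376) | Num.Bit0 m' \<Rightarrow> tN_256_29 m' | Num.Bit1 m' \<Rightarrow> tN_256_157 m')"
definition tN_128_30 :: "num \<Rightarrow> rowt" where "tN_128_30 m = (case m of Num.One \<Rightarrow> (15270, 0, 451, 218779, 1932594) | Num.Bit0 m' \<Rightarrow> tN_256_30 m' | Num.Bit1 m' \<Rightarrow> tN_256_158 m')"
definition tN_128_31 :: "num \<Rightarrow> rowt" where "tN_128_31 m = (case m of Num.One \<Rightarrow> (15322, 0, 452, 218779, 1947864) | Num.Bit0 m' \<Rightarrow> tN_256_31 m' | Num.Bit1 m' \<Rightarrow> tN_256_159 m')"
definition tN_128_32 :: "num \<Rightarrow> rowt" where "tN_128_32 m = (case m of Num.One \<Rightarrow> (15375, 0, 452, 218779, 1963186) | Num.Bit0 m' \<Rightarrow> tN_256_32 m' | Num.Bit1 m' \<Rightarrow> tN_256_160 m')"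
definition tN_128_33 :: "num \<Rightarrow> rowt" where "tN_128_33 m = (case m of Num.One \<Rightarrow> (15428, 0, 452, 218779, 1978561) | Num.Bit0 m' \<Rightarrow> tN_256_33 m' | Num.Bit1 m' \<Rightarrow> tN_256_161 m')"
definition tN_128_34 :: "num \<Rightarrow> rowt" where "tN_128_34 m = (case m of Num.One \<Rightarrow> (15481, 0, 452, 218779, 1993989) | Num.Bit0 m' \<Rightarrow> tN_256_34 m' | Num.Bit1 m' \<Rightarrow> tN_256_162 m')"
definition tN_128_35 :: "num \<Rightarrow> rowt" where "tN_128_35 m = (case m of Num.One \<Rightarrow> (15534, 0, 452, 218779, 2009470) | Num.Bit0 m' \<Rightarrow> tN_256_35 m' | Num.Bit1 m' \<Rightarrow> tN_256_163 m')"
definition tN_128_36 :: "num \<Rightarrow> rowt" where "tN_128_36 m = (case m of Num.One \<Rightarrow> (15588, 0, 452, 218779, 2025004) | Num.Bit0 m' \<Rightarrow> tN_256_36 m' | Num.Bit1 m' \<Rightarrow> tN_256_164 m')"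
definition tN_128_37 :: "num \<Rightarrow> rowt" where "tN_128_37 m = (case m of Num.One \<Rightarrow> (15643, 0, 453, 218779, 2040592) | Num.Bit0 m' \<Rightarrow> tN_256_37 m' | Num.Bit1 m' \<Rightarrow> tN_256_165 m')"
definition tN_128_38 :: "num \<Rightarrow> rowt" where "tN_128_38 m = (case m of Num.One \<Rightarrow> (15697, 0, 453, 218779, 2056235) | Num.Bit0 m' \<Rightarrow> tN_256_38 m' | Num.Bit1 m' \<Rightarrow> tN_256_166 m')"
definition tN_128_39 :: "num \<Rightarrow> rowt" where "tN_128_39 m = (case m of Num.One \<Rightarrow> (15752, 0, 453, 218779, 2071932) | Num.Bit0 m' \<Rightarrow> tN_256_39 m' | Num.Bit1 m' \<Rightarrow> tN_256_167 m')"
definition tN_128_40 :: "num \<Rightarrow> rowt" where "tN_128_40 m = (case m of Num.One \<Rightarrow> (15807, 0, 453, 218779, 2087684) | Num.Bit0 m' \<Rightarrow> tN_256_40 m' | Num.Bit1 m' \<Rightarrow> tN_256_168 m')"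
definition tN_128_41 :: "num \<Rightarrow> rowt" where "tN_128_41 m = (case m of Num.One \<Rightarrow> (15863, 0, 453, 218779, 2103491) | Num.Bit0 m' \<Rightarrow> tN_256_41 m' | Num.Bit1 m' \<Rightarrow> tN_256_169 m')"
definition tN_128_42 :: "num \<Rightarrow> rowt" where "tN_128_42 m = (case m of Num.One \<Rightarrow> (15919, 0, 454, 218779, 2119354) | Num.Bit0 m' \<Rightarrow> tN_256_42 m' | Num.Bit1 m' \<Rightarrow> tN_256_170 m')"
definition tN_128_43 :: "num \<Rightarrow> rowt" where "tN_128_43 m = (case m of Num.One \<Rightarrow> (15975, 0, 454, 218779, 2135273) | Num.Bit0 m' \<Rightarrow> tN_256_43 m' | Num.Bit1 m' \<Rightarrow> tN_256_171 m')"
definition tN_128_44 :: "num \<Rightarrow> rowt" where "tN_128_44 m = (case m of Num.One \<Rightarrow> (16032, 0, 454, 218779, 2151248) | Num.Bit0 m' \<Rightarrow> tN_256_44 m' | Num.Bit1 m' \<Rightarrow> tN_256_172 m')"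
definition tN_128_45 :: "num \<Rightarrow> rowt" where "tN_128_45 m = (case m of Num.One \<Rightarrow> (16089, 0, 454, 218779, 2167280) | Num.Bit0 m' \<Rightarrow> tN_256_45 m' | Num.Bit1 m' \<Rightarrow> tN_256_173 m')"
definition tN_128_46 :: "num \<Rightarrow> rowt" where "tN_128_46 m = (case m of Num.One \<Rightarrow> (16146, 0, 454, 218779, 2183369) | Num.Bit0 m' \<Rightarrow> tN_256_46 m' | Num.Bit1 m' \<Rightarrow> tN_256_174 m')"
definition tN_128_47 :: "num \<Rightarrow> rowt" where "tN_128_47 m = (case m of Num.One \<Rightarrow> (16204, 0, 454, 218779, 2199515) | Num.Bit0 m' \<Rightarrow> tN_256_47 m' | Num.Bit1 m' \<Rightarrow> tN_256_175 m')"
definition tN_128_48 :: "num \<Rightarrow> rowt" where "tN_128_48 m = (case m of Num.One \<Rightarrow> (16262, 0, 455, 218779, 2215719) | Num.Bit0 m' \<Rightarrow> tN_256_48 m' | Num.Bit1 m' \<Rightarrow> tN_256_176 m')"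
definition tN_128_49 :: "num \<Rightarrow> rowt" where "tN_128_49 m = (case m of Num.One \<Rightarrow> (16321, 0, 455, 218779, 2231981) | Num.Bit0 m' \<Rightarrow> tN_256_49 m' | Num.Bit1 m' \<Rightarrow> tN_256_177 m')"
definition tN_128_50 :: "num \<Rightarrow> rowt" where "tN_128_50 m = (case m of Num.One \<Rightarrow> (16380, 0, 455, 218779, 2248302) | Num.Bit0 m' \<Rightarrow> tN_256_50 m' | Num.Bit1 m' \<Rightarrow> tN_256_178 m')"
definition tN_128_51 :: "num \<Rightarrow> rowt" where "tN_128_51 m = (case m of Num.One \<Rightarrow> (16439, 0, 455, 218779, 2264682) | Num.Bit0 m' \<Rightarrow> tN_256_51 m' | Num.Bit1 m' \<Rightarrow> tN_256_179 m')"
definition tN_128_52 :: "num \<Rightarrow> rowt" where "tN_128_52 m = (case m of Num.One \<Rightarrow> (16499, 0, 455, 218779, 2281121) | Num.Bit0 m' \<Rightarrow> tN_256_52 m' | Num.Bit1 m' \<Rightarrow> tN_256_180 m')"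
definition tN_128_53 :: "num \<Rightarrow> rowt" where "tN_128_53 m = (case m of Num.One \<Rightarrow> (16559, 0, 456, 218779, 2297620) | Num.Bit0 m' \<Rightarrow> tN_256_53 m' | Num.Bit1 m' \<Rightarrow> tN_256_181 m')"
definition tN_128_54 :: "num \<Rightarrow> rowt" where "tN_128_54 m = (case m of Num.One \<Rightarrow> (16619, 0, 456, 218779, 2314179) | Num.Bit0 m' \<Rightarrow> tN_256_54 m' | Num.Bit1 m' \<Rightarrow> tN_256_182 m')"
definition tN_128_55 :: "num \<Rightarrow> rowt" where "tN_128_55 m = (case m of Num.One \<Rightarrow> (16680, 0, 456, 218779, 2330798) | Num.Bit0 m' \<Rightarrow> tN_256_55 m' | Num.Bit1 m' \<Rightarrow> tN_256_183 m')"
definition tN_128_56 :: "num \<Rightarrow> rowt" where "tN_128_56 m = (case m of Num.One \<Rightarrow> (16742, 0, 456, 218779, 2347478) | Num.Bit0 m' \<Rightarrow> tN_256_56 m' | Num.Bit1 m' \<Rightarrow> tN_256_184 m')"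
definition tN_128_57 :: "num \<Rightarrow> rowt" where "tN_128_57 m = (case m of Num.One \<Rightarrow> (16803, 0, 456, 218779, 2364220) | Num.Bit0 m' \<Rightarrow> tN_256_57 m' | Num.Bit1 m' \<Rightarrow> tN_256_185 m')"
definition tN_128_58 :: "num \<Rightarrow> rowt" where "tN_128_58 m = (case m of Num.One \<Rightarrow> (16866, 0, 457, 218779, 2381023) | Num.Bit0 m' \<Rightarrow> tN_256_58 m' | Num.Bit1 m' \<Rightarrow> tN_256_186 m')"
definition tN_128_59 :: "num \<Rightarrow> rowt" where "tN_128_59 m = (case m of Num.One \<Rightarrow> (16928, 0, 457, 218779, 2397889) | Num.Bit0 m' \<Rightarrow> tN_256_59 m' | Num.Bit1 m' \<Rightarrow> tN_256_187 m')"
definition tN_128_60 :: "num \<Rightarrow> rowt" where "tN_128_60 m = (case m of Num.One \<Rightarrow> (16991, 0, 457, 218779, 2414817) | Num.Bit0 m' \<Rightarrow> tN_256_60 m' | Num.Bit1 m' \<Rightarrow> tN_256_188 m')"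
definition tN_128_61 :: "num \<Rightarrow> rowt" where "tN_128_61 m = (case m of Num.One \<Rightarrow> (17054, 0, 457, 218779, 2431808) | Num.Bit0 m' \<Rightarrow> tN_256_61 m' | Num.Bit1 m' \<Rightarrow> tN_256_189 m')"
definition tN_128_62 :: "num \<Rightarrow> rowt" where "tN_128_62 m = (case m of Num.One \<Rightarrow> (17118, 0, 457, 218779, 2448862) | Num.Bit0 m' \<Rightarrow> tN_256_62 m' | Num.Bit1 m' \<Rightarrow> tN_256_190 m')"
definition tN_128_63 :: "num \<Rightarrow> rowt" where "tN_128_63 m = (case m of Num.One \<Rightarrow> (17183, 0, 457, 218779, 2465980) | Num.Bit0 m' \<Rightarrow> tN_256_63 m' | Num.Bit1 m' \<Rightarrow> tN_256_191 m')"
definition tN_128_64 :: "num \<Rightarrow> rowt" where "tN_128_64 m = (case m of Num.One \<Rightarrow> (17247, 0, 458, 218779, 2483163) | Num.Bit0 m' \<Rightarrow> tN_256_64 m' | Num.Bit1 m' \<Rightarrow> tN_256_192 m')"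
definition tN_128_65 :: "num \<Rightarrow> rowt" where "tN_128_65 m = (case m of Num.One \<Rightarrow> (17312, 0, 458, 218779, 2500410) | Num.Bit0 m' \<Rightarrow> tN_256_65 m' | Num.Bit1 m' \<Rightarrow> tN_256_193 m')"
definition tN_128_66 :: "num \<Rightarrow> rowt" where "tN_128_66 m = (case m of Num.One \<Rightarrow> (17378, 0, 458, 218779, 2517722) | Num.Bit0 m' \<Rightarrow> tN_256_66 m' | Num.Bit1 m' \<Rightarrow> tN_256_194 m')"
definition tN_128_67 :: "num \<Rightarrow> rowt" where "tN_128_67 m = (case m of Num.One \<Rightarrow> (17444, 0, 458, 218779, 2535100) | Num.Bit0 m' \<Rightarrow> tN_256_67 m' | Num.Bit1 m' \<Rightarrow> tN_256_195 m')"
definition tN_128_68 :: "num \<Rightarrow> rowt" where "tN_128_68 m = (case m of Num.One \<Rightarrow> (17511, 0, 458, 218779, 2552544) | Num.Bit0 m' \<Rightarrow> tN_256_68 m' | Num.Bit1 m' \<Rightarrow> tN_256_196 m')"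
definition tN_128_69 :: "num \<Rightarrow> rowt" where "tN_128_69 m = (case m of Num.One \<Rightarrow> (17578, 0, 459, 218779, 2570055) | Num.Bit0 m' \<Rightarrow> tN_256_69 m' | Num.Bit1 m' \<Rightarrow> tN_256_197 m')"
definition tN_128_70 :: "num \<Rightarrow> rowt" where "tN_128_70 m = (case m of Num.One \<Rightarrow> (17645, 0, 459, 218779, 2587633) | Num.Bit0 m' \<Rightarrow> tN_256_70 m' | Num.Bit1 m' \<Rightarrow> tN_256_198 m')"
definition tN_128_71 :: "num \<Rightarrow> rowt" where "tN_128_71 m = (case m of Num.One \<Rightarrow> (17713, 0, 459, 218779, 2605278) | Num.Bit0 m' \<Rightarrow> tN_256_71 m' | Num.Bit1 m' \<Rightarrow> tN_256_199 m')"
definition tN_128_72 :: "num \<Rightarrow> rowt" where "tN_128_72 m = (case m of Num.One \<Rightarrow> (17781, 0, 459, 218779, 2622991) | Num.Bit0 m' \<Rightarrow> tN_256_72 m' | Num.Bit1 m' \<Rightarrow> tN_256_200 m')"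
definition tN_128_73 :: "num \<Rightarrow> rowt" where "tN_128_73 m = (case m of Num.One \<Rightarrow> (17850, 0, 459, 218779, 2640772) | Num.Bit0 m' \<Rightarrow> tN_256_73 m' | Num.Bit1 m' \<Rightarrow> tN_256_201 m')"
definition tN_128_74 :: "num \<Rightarrow> rowt" where "tN_128_74 m = (case m of Num.One \<Rightarrow> (17919, 0, 460, 218779, 2658622) | Num.Bit0 m' \<Rightarrow> tN_256_74 m' | Num.Bit1 m' \<Rightarrow> tN_256_202 m')"
definition tN_128_75 :: "num \<Rightarrow> rowt" where "tN_128_75 m = (case m of Num.One \<Rightarrow> (17989, 0, 460, 218779, 2676541) | Num.Bit0 m' \<Rightarrow> tN_256_75 m' | Num.Bit1 m' \<Rightarrow> tN_256_203 m')"
definition tN_128_76 :: "num \<Rightarrow> rowt" where "tN_128_76 m = (case m of Num.One \<Rightarrow> (18059, 0, 460, 218779, 2694530) | Num.Bit0 m' \<Rightarrow> tN_256_76 m' | Num.Bit1 m' \<Rightarrow> tN_256_204 m')"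
definition tN_128_77 :: "num \<Rightarrow> rowt" where "tN_128_77 m = (case m of Num.One \<Rightarrow> (18130, 0, 460, 218779, 2712589) | Num.Bit0 m' \<Rightarrow> tN_256_77 m' | Num.Bit1 m' \<Rightarrow> tN_256_205 m')"
definition tN_128_78 :: "num \<Rightarrow> rowt" where "tN_128_78 m = (case m of Num.One \<Rightarrow> (18202, 0, 460, 218779, 2730719) | Num.Bit0 m' \<Rightarrow> tN_256_78 m' | Num.Bit1 m' \<Rightarrow> tN_256_206 m')"
definition tN_128_79 :: "num \<Rightarrow> rowt" where "tN_128_79 m = (case m of Num.One \<Rightarrow> (18273, 0, 461, 218779, 2748921) | Num.Bit0 m' \<Rightarrow> tN_256_79 m' | Num.Bit1 m' \<Rightarrow> tN_256_207 m')"
definition tN_128_80 :: "num \<Rightarrow> rowt" where "tN_128_80 m = (case m of Num.One \<Rightarrow> (18346, 0, 461, 218779, 2767194) | Num.Bit0 m' \<Rightarrow> tN_256_80 m' | Num.Bit1 m' \<Rightarrow> tN_256_208 m')"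
definition tN_128_81 :: "num \<Rightarrow> rowt" where "tN_128_81 m = (case m of Num.One \<Rightarrow> (18418, 0, 461, 218779, 2785540) | Num.Bit0 m' \<Rightarrow> tN_256_81 m' | Num.Bit1 m' \<Rightarrow> tN_256_209 m')"
definition tN_128_82 :: "num \<Rightarrow> rowt" where "tN_128_82 m = (case m of Num.One \<Rightarrow> (18492, 0, 461, 218779, 2803958) | Num.Bit0 m' \<Rightarrow> tN_256_82 m' | Num.Bit1 m' \<Rightarrow> tN_256_210 m')"
definition tN_128_83 :: "num \<Rightarrow> rowt" where "tN_128_83 m = (case m of Num.One \<Rightarrow> (18566, 0, 461, 218779, 2822450) | Num.Bit0 m' \<Rightarrow> tN_256_83 m' | Num.Bit1 m' \<Rightarrow> tN_256_211 m')"
definition tN_128_84 :: "num \<Rightarrow> rowt" where "tN_128_84 m = (case m of Num.One \<Rightarrow> (18640, 0, 462, 218779, 2841016) | Num.Bit0 m' \<Rightarrow> tN_256_84 m' | Num.Bit1 m' \<Rightarrow> tN_256_212 m')"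
definition tN_128_85 :: "num \<Rightarrow> rowt" where "tN_128_85 m = (case m of Num.One \<Rightarrow> (18715, 0, 462, 218779, 2859656) | Num.Bit0 m' \<Rightarrow> tN_256_85 m' | Num.Bit1 m' \<Rightarrow> tN_256_213 m')"
definition tN_128_86 :: "num \<Rightarrow> rowt" where "tN_128_86 m = (case m of Num.One \<Rightarrow> (18790, 0, 462, 218779, 2878371) | Num.Bit0 m' \<Rightarrow> tN_256_86 m' | Num.Bit1 m' \<Rightarrow> tN_256_214 m')"
definition tN_128_87 :: "num \<Rightarrow> rowt" where "tN_128_87 m = (case m of Num.One \<Rightarrow> (18866, 0, 462, 218779, 2897161) | Num.Bit0 m' \<Rightarrow> tN_256_87 m' | Num.Bit1 m' \<Rightarrow> tN_256_215 m')"
definition tN_128_88 :: "num \<Rightarrow> rowt" where "tN_128_88 m = (case m of Num.One \<Rightarrow> (18943, 0, 462, 218779, 2916027) | Num.Bit0 m' \<Rightarrow> tN_256_88 m' | Num.Bit1 m' \<Rightarrow> tN_256_216 m')"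
definition tN_128_89 :: "num \<Rightarrow> rowt" where "tN_128_89 m = (case m of Num.One \<Rightarrow> (19020, 0, 463, 218779, 2934970) | Num.Bit0 m' \<Rightarrow> tN_256_89 m' | Num.Bit1 m' \<Rightarrow> tN_256_217 m')"
definition tN_128_90 :: "num \<Rightarrow> rowt" where "tN_128_90 m = (case m of Num.One \<Rightarrow> (19098, 0, 463, 218779, 2953990) | Num.Bit0 m' \<Rightarrow> tN_256_90 m' | Num.Bit1 m' \<Rightarrow> tN_256_218 m')"
definition tN_128_91 :: "num \<Rightarrow> rowt" where "tN_128_91 m = (case m of Num.One \<Rightarrow> (19176, 0, 463, 218779, 2973088) | Num.Bit0 m' \<Rightarrow> tN_256_91 m' | Num.Bit1 m' \<Rightarrow> tN_256_219 m')"
definition tN_128_92 :: "num \<Rightarrow> rowt" where "tN_128_92 m = (case m of Num.One \<Rightarrow> (19255, 0, 463, 218779, 2992264) | Num.Bit0 m' \<Rightarrow> tN_256_92 m' | Num.Bit1 m' \<Rightarrow> tN_256_220 m')"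
definition tN_128_93 :: "num \<Rightarrow> rowt" where "tN_128_93 m = (case m of Num.One \<Rightarrow> (19334, 0, 464, 218779, 3011519) | Num.Bit0 m' \<Rightarrow> tN_256_93 m' | Num.Bit1 m' \<Rightarrow> tN_256_221 m')"
definition tN_128_94 :: "num \<Rightarrow> rowt" where "tN_128_94 m = (case m of Num.One \<Rightarrow> (19414, 0, 464, 218779, 3030853) | Num.Bit0 m' \<Rightarrow> tN_256_94 m' | Num.Bit1 m' \<Rightarrow> tN_256_222 m')"
definition tN_128_95 :: "num \<Rightarrow> rowt" where "tN_128_95 m = (case m of Num.One \<Rightarrow> (19495, 0, 464, 218779, 3050267) | Num.Bit0 m' \<Rightarrow> tN_256_95 m' | Num.Bit1 m' \<Rightarrow> tN_256_223 m')"
definition tN_128_96 :: "num \<Rightarrow> rowt" where "tN_128_96 m = (case m of Num.One \<Rightarrow> (19576, 0, 464, 218779, 3069762) | Num.Bit0 m' \<Rightarrow> tN_256_96 m' | Num.Bit1 m' \<Rightarrow> tN_256_224 m')"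
definition tN_128_97 :: "num \<Rightarrow> rowt" where "tN_128_97 m = (case m of Num.One \<Rightarrow> (19658, 0, 464, 218779, 3089338) | Num.Bit0 m' \<Rightarrow> tN_256_97 m' | Num.Bit1 m' \<Rightarrow> tN_256_225 m')"
definition tN_128_98 :: "num \<Rightarrow> rowt" where "tN_128_98 m = (case m of Num.One \<Rightarrow> (19740, 0, 465, 218779, 3108996) | Num.Bit0 m' \<Rightarrow> tN_256_98 m' | Num.Bit1 m' \<Rightarrow> tN_256_226 m')"
definition tN_128_99 :: "num \<Rightarrow> rowt" where "tN_128_99 m = (case m of Num.One \<Rightarrow> (19823, 0, 465, 218779, 3128736) | Num.Bit0 m' \<Rightarrow> tN_256_99 m' | Num.Bit1 m' \<Rightarrow> tN_256_227 m')"
definition tN_128_100 :: "num \<Rightarrow> rowt" where "tN_128_100 m = (case m of Num.One \<Rightarrow> (19907, 0, 465, 218779, 3148559) | Num.Bit0 m' \<Rightarrow> tN_256_100 m' | Num.Bit1 m' \<Rightarrow> tN_256_228 m')"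
definition tN_128_101 :: "num \<Rightarrow> rowt" where "tN_128_101 m = (case m of Num.One \<Rightarrow> (19991, 0, 465, 218779, 3168466) | Num.Bit0 m' \<Rightarrow> tN_256_101 m' | Num.Bit1 m' \<Rightarrow> tN_256_229 m')"
definition tN_128_102 :: "num \<Rightarrow> rowt" where "tN_128_102 m = (case m of Num.One \<Rightarrow> (20076, 0, 465, 218779, 3188457) | Num.Bit0 m' \<Rightarrow> tN_256_102 m' | Num.Bit1 m' \<Rightarrow> tN_256_230 m')"
definition tN_128_103 :: "num \<Rightarrow> rowt" where "tN_128_103 m = (case m of Num.One \<Rightarrow> (20162, 0, 466, 218779, 3208533) | Num.Bit0 m' \<Rightarrow> tN_256_103 m' | Num.Bit1 m' \<Rightarrow> tN_256_231 m')"
definition tN_128_104 :: "num \<Rightarrow> rowt" where "tN_128_104 m = (case m of Num.One \<Rightarrow> (20248, 0, 466, 218779, 3228695) | Num.Bit0 m' \<Rightarrow> tN_256_104 m' | Num.Bit1 m' \<Rightarrow> tN_256_232 m')"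
definition tN_128_105 :: "num \<Rightarrow> rowt" where "tN_128_105 m = (case m of Num.One \<Rightarrow> (20335, 0, 466, 218779, 3248943) | Num.Bit0 m' \<Rightarrow> tN_256_105 m' | Num.Bit1 m' \<Rightarrow> tN_256_233 m')"
definition tN_128_106 :: "num \<Rightarrow> rowt" where "tN_128_106 m = (case m of Num.One \<Rightarrow> (20423, 0, 466, 218779, 3269278) | Num.Bit0 m' \<Rightarrow> tN_256_106 m' | Num.Bit1 m' \<Rightarrow> tN_256_234 m')"
definition tN_128_107 :: "num \<Rightarrow> rowt" where "tN_128_107 m = (case m of Num.One \<Rightarrow> (20511, 0, 467, 218779, 3289701) | Num.Bit0 m' \<Rightarrow> tN_256_107 m' | Num.Bit1 m' \<Rightarrow> tN_256_235 m')"
definition tN_128_108 :: "num \<Rightarrow> rowt" where "tN_128_108 m = (case m of Num.One \<Rightarrow> (20600, 0, 467, 218779, 3310212) | Num.Bit0 m' \<Rightarrow> tN_256_108 m' | Num.Bit1 m' \<Rightarrow> tN_256_236 m')"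
definition tN_128_109 :: "num \<Rightarrow> rowt" where "tN_128_109 m = (case m of Num.One \<Rightarrow> (20689, 0, 467, 218779, 3330812) | Num.Bit0 m' \<Rightarrow> tN_256_109 m' | Num.Bit1 m' \<Rightarrow> tN_256_237 m')"
definition tN_128_110 :: "num \<Rightarrow> rowt" where "tN_128_110 m = (case m of Num.One \<Rightarrow> (20780, 0, 467, 218779, 3351501) | Num.Bit0 m' \<Rightarrow> tN_256_110 m' | Num.Bit1 m' \<Rightarrow> tN_256_238 m')"
definition tN_128_111 :: "num \<Rightarrow> rowt" where "tN_128_111 m = (case m of Num.One \<Rightarrow> (20871, 0, 467, 218779, 3372281) | Num.Bit0 m' \<Rightarrow> tN_256_111 m' | Num.Bit1 m' \<Rightarrow> tN_256_239 m')"
definition tN_128_112 :: "num \<Rightarrow> rowt" where "tN_128_112 m = (case m of Num.One \<Rightarrow> (20962, 0, 468, 218779, 3393152) | Num.Bit0 m' \<Rightarrow> tN_256_112 m' | Num.Bit1 m' \<Rightarrow> tN_256_240 m')"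
definition tN_128_113 :: "num \<Rightarrow> rowt" where "tN_128_113 m = (case m of Num.One \<Rightarrow> (21055, 0, 468, 218779, 3414114) | Num.Bit0 m' \<Rightarrow> tN_256_113 m' | Num.Bit1 m' \<Rightarrow> tN_256_241 m')"
definition tN_128_114 :: "num \<Rightarrow> rowt" where "tN_128_114 m = (case m of Num.One \<Rightarrow> (21148, 0, 468, 218779, 3435169) | Num.Bit0 m' \<Rightarrow> tN_256_114 m' | Num.Bit1 m' \<Rightarrow> tN_256_242 m')"
definition tN_128_115 :: "num \<Rightarrow> rowt" where "tN_128_115 m = (case m of Num.One \<Rightarrow> (21242, 0, 468, 218779, 3456317) | Num.Bit0 m' \<Rightarrow> tN_256_115 m' | Num.Bit1 m' \<Rightarrow> tN_256_243 m')"
definition tN_128_116 :: "num \<Rightarrow> rowt" where "tN_128_116 m = (case m of Num.One \<Rightarrow> (21336, 0, 469, 218779, 3477559) | Num.Bit0 m' \<Rightarrow> tN_256_116 m' | Num.Bit1 m' \<Rightarrow> tN_256_244 m')"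
definition tN_128_117 :: "num \<Rightarrow> rowt" where "tN_128_117 m = (case m of Num.One \<Rightarrow> (21432, 0, 469, 218779, 3498895) | Num.Bit0 m' \<Rightarrow> tN_256_117 m' | Num.Bit1 m' \<Rightarrow> tN_256_245 m')"
definition tN_128_118 :: "num \<Rightarrow> rowt" where "tN_128_118 m = (case m of Num.One \<Rightarrow> (21528, 0, 469, 218779, 3520327) | Num.Bit0 m' \<Rightarrow> tN_256_118 m' | Num.Bit1 m' \<Rightarrow> tN_256_246 m')"
definition tN_128_119 :: "num \<Rightarrow> rowt" where "tN_128_119 m = (case m of Num.One \<Rightarrow> (21625, 0, 469, 218779, 3541855) | Num.Bit0 m' \<Rightarrow> tN_256_119 m' | Num.Bit1 m' \<Rightarrow> tN_256_247 m')"
definition tN_128_120 :: "num \<Rightarrow> rowt" where "tN_128_120 m = (case m of Num.One \<Rightarrow> (21722, 0, 470, 218779, 3563480) | Num.Bit0 m' \<Rightarrow> tN_256_120 m' | Num.Bit1 m' \<Rightarrow> tN_256_248 m')"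
definition tN_128_121 :: "num \<Rightarrow> rowt" where "tN_128_121 m = (case m of Num.One \<Rightarrow> (21821, 0, 470, 218779, 3585202) | Num.Bit0 m' \<Rightarrow> tN_256_121 m' | Num.Bit1 m' \<Rightarrow> tN_256_249 m')"
definition tN_128_122 :: "num \<Rightarrow> rowt" where "tN_128_122 m = (case m of Num.One \<Rightarrow> (21920, 0, 470, 218779, 3607023) | Num.Bit0 m' \<Rightarrow> tN_256_122 m' | Num.Bit1 m' \<Rightarrow> tN_256_250 m')"
definition tN_128_123 :: "num \<Rightarrow> rowt" where "tN_128_123 m = (case m of Num.One \<Rightarrow> (22020, 0, 470, 218779, 3628943) | Num.Bit0 m' \<Rightarrow> tN_256_123 m' | Num.Bit1 m' \<Rightarrow> tN_256_251 m')"
definition tN_128_124 :: "num \<Rightarrow> rowt" where "tN_128_124 m = (case m of Num.One \<Rightarrow> (22121, 0, 470, 218779, 3650963) | Num.Bit0 m' \<Rightarrow> tN_256_124 m' | Num.Bit1 m' \<Rightarrow> tN_256_252 m')"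
definition tN_128_125 :: "num \<Rightarrow> rowt" where "tN_128_125 m = (case m of Num.One \<Rightarrow> (22223, 0, 471, 218779, 3673084) | Num.Bit0 m' \<Rightarrow> tN_256_125 m' | Num.Bit1 m' \<Rightarrow> tN_256_253 m')"
definition tN_128_126 :: "num \<Rightarrow> rowt" where "tN_128_126 m = (case m of Num.One \<Rightarrow> (22325, 0, 471, 218779, 3695307) | Num.Bit0 m' \<Rightarrow> tN_256_126 m' | Num.Bit1 m' \<Rightarrow> tN_256_254 m')"
definition tN_128_127 :: "num \<Rightarrow> rowt" where "tN_128_127 m = (case m of Num.One \<Rightarrow> (22428, 0, 471, 218779, 3717632) | Num.Bit0 m' \<Rightarrow> tN_256_127 m' | Num.Bit1 m' \<Rightarrow> tN_256_255 m')"
definition tN_64_0 :: "num \<Rightarrow> rowt" where "tN_64_0 m = (case m of Num.One \<Rightarrow> (11650, 1852, 438, 162021, 688654) | Num.Bit0 m' \<Rightarrow> tN_128_0 m' | Num.Bit1 m' \<Rightarrow> tN_128_64 m')"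
definition tN_64_1 :: "num \<Rightarrow> rowt" where "tN_64_1 m = (case m of Num.One \<Rightarrow> (11677, 1826, 438, 163873, 700304) | Num.Bit0 m' \<Rightarrow> tN_128_1 m' | Num.Bit1 m' \<Rightarrow> tN_128_65 m')"
definition tN_64_2 :: "num \<Rightarrow> rowt" where "tN_64_2 m = (case m of Num.One \<Rightarrow> (11703, 1800, 438, 165699, 711981) | Num.Bit0 m' \<Rightarrow> tN_128_2 m' | Num.Bit1 m' \<Rightarrow> tN_128_66 m')"
definition tN_64_3 :: "num \<Rightarrow> rowt" where "tN_64_3 m = (case m of Num.One \<Rightarrow> (11730, 1773, 438, 167499, 723684) | Num.Bit0 m' \<Rightarrow> tN_128_3 m' | Num.Bit1 m' \<Rightarrow> tN_128_67 m')"
definition tN_64_4 :: "num \<Rightarrow> rowt" where "tN_64_4 m = (case m of Num.One \<Rightarrow> (11757, 1746, 438, 169272, 735414) | Num.Bit0 m' \<Rightarrow> tN_128_4 m' | Num.Bit1 m' \<Rightarrow> tN_128_68 m')"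
definition tN_64_5 :: "num \<Rightarrow> rowt" where "tN_64_5 m = (case m of Num.One \<Rightarrow> (11784, 1719, 438, 171018, 747171) | Num.Bit0 m' \<Rightarrow> tN_128_5 m' | Num.Bit1 m' \<Rightarrow> tN_128_69 m')"
definition tN_64_6 :: "num \<Rightarrow> rowt" where "tN_64_6 m = (case m of Num.One \<Rightarrow> (11811, 1692, 439, 172737, 758955) | Num.Bit0 m' \<Rightarrow> tN_128_6 m' | Num.Bit1 m' \<Rightarrow> tN_128_70 m')"
definition tN_64_7 :: "num \<Rightarrow> rowt" where "tN_64_7 m = (case m of Num.One \<Rightarrow> (11839, 1664, 439, 174429, 770766) | Num.Bit0 m' \<Rightarrow> tN_128_7 m' | Num.Bit1 m' \<Rightarrow> tN_128_71 m')"
definition tN_64_8 :: "num \<Rightarrow> rowt" where "tN_64_8 m = (case m of Num.One \<Rightarrow> (11866, 1636, 439, 176093, 782605) | Num.Bit0 m' \<Rightarrow> tN_128_8 m' | Num.Bit1 m' \<Rightarrow> tN_128_72 m')"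
definition tN_64_9 :: "num \<Rightarrow> rowt" where "tN_64_9 m = (case m of Num.One \<Rightarrow> (11894, 1608, 439, 177729, 794471) | Num.Bit0 m' \<Rightarrow> tN_128_9 m' | Num.Bit1 m' \<Rightarrow> tN_128_73 m')"
definition tN_64_10 :: "num \<Rightarrow> rowt" where "tN_64_10 m = (case m of Num.One \<Rightarrow> (11923, 1580, 439, 179337, 806365) | Num.Bit0 m' \<Rightarrow> tN_128_10 m' | Num.Bit1 m' \<Rightarrow> tN_128_74 m')"
definition tN_64_11 :: "num \<Rightarrow> rowt" where "tN_64_11 m = (case m of Num.One \<Rightarrow> (11951, 1552, 439, 180917, 818288) | Num.Bit0 m' \<Rightarrow> tN_128_11 m' | Num.Bit1 m' \<Rightarrow> tN_128_75 m')"
definition tN_64_12 :: "num \<Rightarrow> rowt" where "tN_64_12 m = (case m of Num.One \<Rightarrow> (11980, 1523, 439, 182469, 830239) | Num.Bit0 m' \<Rightarrow> tN_128_12 m' | Num.Bit1 m' \<Rightarrow> tN_128_76 m')"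
definition tN_64_13 :: "num \<Rightarrow> rowt" where "tN_64_13 m = (case m of Num.One \<Rightarrow> (12009, 1494, 439, 183992, 842219) | Num.Bit0 m' \<Rightarrow> tN_128_13 m' | Num.Bit1 m' \<Rightarrow> tN_128_77 m')"
definition tN_64_14 :: "num \<Rightarrow> rowt" where "tN_64_14 m = (case m of Num.One \<Rightarrow> (12038, 1465, 439, 185486, 854228) | Num.Bit0 m' \<Rightarrow> tN_128_14 m' | Num.Bit1 m' \<Rightarrow> tN_128_78 m')"
definition tN_64_15 :: "num \<Rightarrow> rowt" where "tN_64_15 m = (case m of Num.One \<Rightarrow> (12067, 1436, 440, 186951, 866266) | Num.Bit0 m' \<Rightarrow> tN_128_15 m' | Num.Bit1 m' \<Rightarrow> tN_128_79 m')"
definition tN_64_16 :: "num \<Rightarrow> rowt" where "tN_64_16 m = (case m of Num.One \<Rightarrow> (12097, 1406, 440, 188387, 878333) | Num.Bit0 m' \<Rightarrow> tN_128_16 m' | Num.Bit1 m' \<Rightarrow> tN_128_80 m')"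
definition tN_64_17 :: "num \<Rightarrow> rowt" where "tN_64_17 m = (case m of Num.One \<Rightarrow> (12126, 1376, 440, 189793, 890430) | Num.Bit0 m' \<Rightarrow> tN_128_17 m' | Num.Bit1 m' \<Rightarrow> tN_128_81 m')"
definition tN_64_18 :: "num \<Rightarrow> rowt" where "tN_64_18 m = (case m of Num.One \<Rightarrow> (12156, 1346, 440, 191169, 902556) | Num.Bit0 m' \<Rightarrow> tN_128_18 m' | Num.Bit1 m' \<Rightarrow> tN_128_82 m')"
definition tN_64_19 :: "num \<Rightarrow> rowt" where "tN_64_19 m = (case m of Num.One \<Rightarrow> (12187, 1316, 440, 192515, 914712) | Num.Bit0 m' \<Rightarrow> tN_128_19 m' | Num.Bit1 m' \<Rightarrow> tN_128_83 m')"
definition tN_64_20 :: "num \<Rightarrow> rowt" where "tN_64_20 m = (case m of Num.One \<Rightarrow> (12217, 1286, 440, 193831, 926899) | Num.Bit0 m' \<Rightarrow> tN_128_20 m' | Num.Bit1 m' \<Rightarrow> tN_128_84 m')"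
definition tN_64_21 :: "num \<Rightarrow> rowt" where "tN_64_21 m = (case m of Num.One \<Rightarrow> (12248, 1255, 440, 195117, 939116) | Num.Bit0 m' \<Rightarrow> tN_128_21 m' | Num.Bit1 m' \<Rightarrow> tN_128_85 m')"
definition tN_64_22 :: "num \<Rightarrow> rowt" where "tN_64_22 m = (case m of Num.One \<Rightarrow> (12279, 1224, 440, 196372, 951364) | Num.Bit0 m' \<Rightarrow> tN_128_22 m' | Num.Bit1 m' \<Rightarrow> tN_128_86 m')"
definition tN_64_23 :: "num \<Rightarrow> rowt" where "tN_64_23 m = (case m of Num.One \<Rightarrow> (12310, 1193, 441, 197596, 963643) | Num.Bit0 m' \<Rightarrow> tN_128_23 m' | Num.Bit1 m' \<Rightarrow> tN_128_87 m')"
definition tN_64_24 :: "num \<Rightarrow> rowt" where "tN_64_24 m = (case m of Num.One \<Rightarrow> (12342, 1161, 441, 198789, 975953) | Num.Bit0 m' \<Rightarrow> tN_128_24 m' | Num.Bit1 m' \<Rightarrow> tN_128_88 m')"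
definition tN_64_25 :: "num \<Rightarrow> rowt" where "tN_64_25 m = (case m of Num.One \<Rightarrow> (12374, 1129, 441, 199950, 988295) | Num.Bit0 m' \<Rightarrow> tN_128_25 m' | Num.Bit1 m' \<Rightarrow> tN_128_89 m')"
definition tN_64_26 :: "num \<Rightarrow> rowt" where "tN_64_26 m = (case m of Num.One \<Rightarrow> (12406, 1097, 441, 201079, 1000669) | Num.Bit0 m' \<Rightarrow> tN_128_26 m' | Num.Bit1 m' \<Rightarrow> tN_128_90 m')"
definition tN_64_27 :: "num \<Rightarrow> rowt" where "tN_64_27 m = (case m of Num.One \<Rightarrow> (12438, 1065, 441, 202176, 1013075) | Num.Bit0 m' \<Rightarrow> tN_128_27 m' | Num.Bit1 m' \<Rightarrow> tN_128_91 m')"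
definition tN_64_28 :: "num \<Rightarrow> rowt" where "tN_64_28 m = (case m of Num.One \<Rightarrow> (12471, 1032, 441, 203241, 1025513) | Num.Bit0 m' \<Rightarrow> tN_128_28 m' | Num.Bit1 m' \<Rightarrow> tN_128_92 m')"
definition tN_64_29 :: "num \<Rightarrow> rowt" where "tN_64_29 m = (case m of Num.One \<Rightarrow> (12503, 999, 441, 204273, 1037984) | Num.Bit0 m' \<Rightarrow> tN_128_29 m' | Num.Bit1 m' \<Rightarrow> tN_128_93 m')"
definition tN_64_30 :: "num \<Rightarrow> rowt" where "tN_64_30 m = (case m of Num.One \<Rightarrow> (12537, 966, 441, 205272, 1050487) | Num.Bit0 m' \<Rightarrow> tN_128_30 m' | Num.Bit1 m' \<Rightarrow> tN_128_94 m')"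
definition tN_64_31 :: "num \<Rightarrow> rowt" where "tN_64_31 m = (case m of Num.One \<Rightarrow> (12570, 933, 442, 206238, 1063024) | Num.Bit0 m' \<Rightarrow> tN_128_31 m' | Num.Bit1 m' \<Rightarrow> tN_128_95 m')"
definition tN_64_32 :: "num \<Rightarrow> rowt" where "tN_64_32 m = (case m of Num.One \<Rightarrow> (12604, 899, 442, 207171, 1075594) | Num.Bit0 m' \<Rightarrow> tN_128_32 m' | Num.Bit1 m' \<Rightarrow> tN_128_96 m')"
definition tN_64_33 :: "num \<Rightarrow> rowt" where "tN_64_33 m = (case m of Num.One \<Rightarrow> (12637, 865, 442, 208070, 1088198) | Num.Bit0 m' \<Rightarrow> tN_128_33 m' | Num.Bit1 m' \<Rightarrow> tN_128_97 m')"
definition tN_64_34 :: "num \<Rightarrow> rowt" where "tN_64_34 m = (case m of Num.One \<Rightarrow> (12672, 831, 442, 208935, 1100835) | Num.Bit0 m' \<Rightarrow> tN_128_34 m' | Num.Bit1 m' \<Rightarrow> tN_128_98 m')"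
definition tN_64_35 :: "num \<Rightarrow> rowt" where "tN_64_35 m = (case m of Num.One \<Rightarrow> (12706, 797, 442, 209766, 1113507) | Num.Bit0 m' \<Rightarrow> tN_128_35 m' | Num.Bit1 m' \<Rightarrow> tN_128_99 m')"
definition tN_64_36 :: "num \<Rightarrow> rowt" where "tN_64_36 m = (case m of Num.One \<Rightarrow> (12741, 762, 442, 210563, 1126213) | Num.Bit0 m' \<Rightarrow> tN_128_36 m' | Num.Bit1 m' \<Rightarrow> tN_128_100 m')"
definition tN_64_37 :: "num \<Rightarrow> rowt" where "tN_64_37 m = (case m of Num.One \<Rightarrow> (12776, 727, 442, 211325, 1138954) | Num.Bit0 m' \<Rightarrow> tN_128_37 m' | Num.Bit1 m' \<Rightarrow> tN_128_101 m')"
definition tN_64_38 :: "num \<Rightarrow> rowt" where "tN_64_38 m = (case m of Num.One \<Rightarrow> (12812, 691, 443, 212052, 1151730) | Num.Bit0 m' \<Rightarrow> tN_128_38 m' | Num.Bit1 m' \<Rightarrow> tN_128_102 m')"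
definition tN_64_39 :: "num \<Rightarrow> rowt" where "tN_64_39 m = (case m of Num.One \<Rightarrow> (12847, 656, 443, 212743, 1164542) | Num.Bit0 m' \<Rightarrow> tN_128_39 m' | Num.Bit1 m' \<Rightarrow> tN_128_103 m')"
definition tN_64_40 :: "num \<Rightarrow> rowt" where "tN_64_40 m = (case m of Num.One \<Rightarrow> (12883, 620, 443, 213399, 1177389) | Num.Bit0 m' \<Rightarrow> tN_128_40 m' | Num.Bit1 m' \<Rightarrow> tN_128_104 m')"
definition tN_64_41 :: "num \<Rightarrow> rowt" where "tN_64_41 m = (case m of Num.One \<Rightarrow> (12919, 583, 443, 214019, 1190272) | Num.Bit0 m' \<Rightarrow> tN_128_41 m' | Num.Bit1 m' \<Rightarrow> tN_128_105 m')"
definition tN_64_42 :: "num \<Rightarrow> rowt" where "tN_64_42 m = (case m of Num.One \<Rightarrow> (12956, 547, 443, 214602, 1203191) | Num.Bit0 m' \<Rightarrow> tN_128_42 m' | Num.Bit1 m' \<Rightarrow> tN_128_106 m')"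
definition tN_64_43 :: "num \<Rightarrow> rowt" where "tN_64_43 m = (case m of Num.One \<Rightarrow> (12993, 510, 443, 215149, 1216147) | Num.Bit0 m' \<Rightarrow> tN_128_43 m' | Num.Bit1 m' \<Rightarrow> tN_128_107 m')"
definition tN_64_44 :: "num \<Rightarrow> rowt" where "tN_64_44 m = (case m of Num.One \<Rightarrow> (13030, 473, 443, 215659, 1229140) | Num.Bit0 m' \<Rightarrow> tN_128_44 m' | Num.Bit1 m' \<Rightarrow> tN_128_108 m')"
definition tN_64_45 :: "num \<Rightarrow> rowt" where "tN_64_45 m = (case m of Num.One \<Rightarrow> (13068, 435, 444, 216132, 1242170) | Num.Bit0 m' \<Rightarrow> tN_128_45 m' | Num.Bit1 m' \<Rightarrow> tN_128_109 m')"
definition tN_64_46 :: "num \<Rightarrow> rowt" where "tN_64_46 m = (case m of Num.One \<Rightarrow> (13106, 397, 444, 216567, 1255238) | Num.Bit0 m' \<Rightarrow> tN_128_46 m' | Num.Bit1 m' \<Rightarrow> tN_128_110 m')"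
definition tN_64_47 :: "num \<Rightarrow> rowt" where "tN_64_47 m = (case m of Num.One \<Rightarrow> (13144, 359, 444, 216964, 1268344) | Num.Bit0 m' \<Rightarrow> tN_128_47 m' | Num.Bit1 m' \<Rightarrow> tN_128_111 m')"
definition tN_64_48 :: "num \<Rightarrow> rowt" where "tN_64_48 m = (case m of Num.One \<Rightarrow> (13182, 320, 444, 217323, 1281488) | Num.Bit0 m' \<Rightarrow> tN_128_48 m' | Num.Bit1 m' \<Rightarrow> tN_128_112 m')"
definition tN_64_49 :: "num \<Rightarrow> rowt" where "tN_64_49 m = (case m of Num.One \<Rightarrow> (13221, 282, 444, 217643, 1294670) | Num.Bit0 m' \<Rightarrow> tN_128_49 m' | Num.Bit1 m' \<Rightarrow> tN_128_113 m')"
definition tN_64_50 :: "num \<Rightarrow> rowt" where "tN_64_50 m = (case m of Num.One \<Rightarrow> (13260, 242, 444, 217925, 1307891) | Num.Bit0 m' \<Rightarrow> tN_128_50 m' | Num.Bit1 m' \<Rightarrow> tN_128_114 m')"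
definition tN_64_51 :: "num \<Rightarrow> rowt" where "tN_64_51 m = (case m of Num.One \<Rightarrow> (13300, 203, 444, 218167, 1321151) | Num.Bit0 m' \<Rightarrow> tN_128_51 m' | Num.Bit1 m' \<Rightarrow> tN_128_115 m')"
definition tN_64_52 :: "num \<Rightarrow> rowt" where "tN_64_52 m = (case m of Num.One \<Rightarrow> (13340, 163, 445, 218370, 1334451) | Num.Bit0 m' \<Rightarrow> tN_128_52 m' | Num.Bit1 m' \<Rightarrow> tN_128_116 m')"
definition tN_64_53 :: "num \<Rightarrow> rowt" where "tN_64_53 m = (case m of Num.One \<Rightarrow> (13380, 123, 445, 218533, 1347791) | Num.Bit0 m' \<Rightarrow> tN_128_53 m' | Num.Bit1 m' \<Rightarrow> tN_128_117 m')"
definition tN_64_54 :: "num \<Rightarrow> rowt" where "tN_64_54 m = (case m of Num.One \<Rightarrow> (13421, 82, 445, 218656, 1361171) | Num.Bit0 m' \<Rightarrow> tN_128_54 m' | Num.Bit1 m' \<Rightarrow> tN_128_118 m')"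
definition tN_64_55 :: "num \<Rightarrow> rowt" where "tN_64_55 m = (case m of Num.One \<Rightarrow> (13462, 41, 445, 218738, 1374592) | Num.Bit0 m' \<Rightarrow> tN_128_55 m' | Num.Bit1 m' \<Rightarrow> tN_128_119 m')"
definition tN_64_56 :: "num \<Rightarrow> rowt" where "tN_64_56 m = (case m of Num.One \<Rightarrow> (13503, 0, 445, 218779, 1388054) | Num.Bit0 m' \<Rightarrow> tN_128_56 m' | Num.Bit1 m' \<Rightarrow> tN_128_120 m')"
definition tN_64_57 :: "num \<Rightarrow> rowt" where "tN_64_57 m = (case m of Num.One \<Rightarrow> (13545, 0, 445, 218779, 1401557) | Num.Bit0 m' \<Rightarrow> tN_128_57 m' | Num.Bit1 m' \<Rightarrow> tN_128_121 m')"
definition tN_64_58 :: "num \<Rightarrow> rowt" where "tN_64_58 m = (case m of Num.One \<Rightarrow> (13586, 0, 445, 218779, 1415102) | Num.Bit0 m' \<Rightarrow> tN_128_58 m' | Num.Bit1 m' \<Rightarrow> tN_128_122 m')"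
definition tN_64_59 :: "num \<Rightarrow> rowt" where "tN_64_59 m = (case m of Num.One \<Rightarrow> (13629, 0, 446, 218779, 1428688) | Num.Bit0 m' \<Rightarrow> tN_128_59 m' | Num.Bit1 m' \<Rightarrow> tN_128_123 m')"
definition tN_64_60 :: "num \<Rightarrow> rowt" where "tN_64_60 m = (case m of Num.One \<Rightarrow> (13671, 0, 446, 218779, 1442317) | Num.Bit0 m' \<Rightarrow> tN_128_60 m' | Num.Bit1 m' \<Rightarrow> tN_128_124 m')"
definition tN_64_61 :: "num \<Rightarrow> rowt" where "tN_64_61 m = (case m of Num.One \<Rightarrow> (13713, 0, 446, 218779, 1455988) | Num.Bit0 m' \<Rightarrow> tN_128_61 m' | Num.Bit1 m' \<Rightarrow> tN_128_125 m')"
definition tN_64_62 :: "num \<Rightarrow> rowt" where "tN_64_62 m = (case m of Num.One \<Rightarrow> (13756, 0, 446, 218779, 1469701) | Num.Bit0 m' \<Rightarrow> tN_128_62 m' | Num.Bit1 m' \<Rightarrow> tN_128_126 m')"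
definition tN_64_63 :: "num \<Rightarrow> rowt" where "tN_64_63 m = (case m of Num.One \<Rightarrow> (13799, 0, 446, 218779, 1483457) | Num.Bit0 m' \<Rightarrow> tN_128_63 m' | Num.Bit1 m' \<Rightarrow> tN_128_127 m')"
definition tN_32_0 :: "num \<Rightarrow> rowt" where "tN_32_0 m = (case m of Num.One \<Rightarrow> (10906, 2596, 435, 89994, 328594) | Num.Bit0 m' \<Rightarrow> tN_64_0 m' | Num.Bit1 m' \<Rightarrow> tN_64_32 m')"
definition tN_32_1 :: "num \<Rightarrow> rowt" where "tN_32_1 m = (case m of Num.One \<Rightarrow> (10927, 2576, 435, 92590, 339500) | Num.Bit0 m' \<Rightarrow> tN_64_1 m' | Num.Bit1 m' \<Rightarrow> tN_64_33 m')"
definition tN_32_2 :: "num \<Rightarrow> rowt" where "tN_32_2 m = (case m of Num.One \<Rightarrow> (10948, 2555, 435, 95166, 350427) | Num.Bit0 m' \<Rightarrow> tN_64_2 m' | Num.Bit1 m' \<Rightarrow> tN_64_34 m')"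
definition tN_32_3 :: "num \<Rightarrow> rowt" where "tN_32_3 m = (case m of Num.One \<Rightarrow> (10969, 2534, 435, 97721, 361375) | Num.Bit0 m' \<Rightarrow> tN_64_3 m' | Num.Bit1 m' \<Rightarrow> tN_64_35 m')"
definition tN_32_4 :: "num \<Rightarrow> rowt" where "tN_32_4 m = (case m of Num.One \<Rightarrow> (10990, 2513, 435, 100255, 372344) | Num.Bit0 m' \<Rightarrow> tN_64_4 m' | Num.Bit1 m' \<Rightarrow> tN_64_36 m')"
definition tN_32_5 :: "num \<Rightarrow> rowt" where "tN_32_5 m = (case m of Num.One \<Rightarrow> (11011, 2492, 435, 102768, 383334) | Num.Bit0 m' \<Rightarrow> tN_64_5 m' | Num.Bit1 m' \<Rightarrow> tN_64_37 m')"
definition tN_32_6 :: "num \<Rightarrow> rowt" where "tN_32_6 m = (case m of Num.One \<Rightarrow> (11033, 2470, 435, 105260, 394345) | Num.Bit0 m' \<Rightarrow> tN_64_6 m' | Num.Bit1 m' \<Rightarrow> tN_64_38 m')"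
definition tN_32_7 :: "num \<Rightarrow> rowt" where "tN_32_7 m = (case m of Num.One \<Rightarrow> (11054, 2448, 435, 107730, 405378) | Num.Bit0 m' \<Rightarrow> tN_64_7 m' | Num.Bit1 m' \<Rightarrow> tN_64_39 m')"
definition tN_32_8 :: "num \<Rightarrow> rowt" where "tN_32_8 m = (case m of Num.One \<Rightarrow> (11076, 2427, 435, 110178, 416432) | Num.Bit0 m' \<Rightarrow> tN_64_8 m' | Num.Bit1 m' \<Rightarrow> tN_64_40 m')"
definition tN_32_9 :: "num \<Rightarrow> rowt" where "tN_32_9 m = (case m of Num.One \<Rightarrow> (11098, 2405, 435, 112605, 427508) | Num.Bit0 m' \<Rightarrow> tN_64_9 m' | Num.Bit1 m' \<Rightarrow> tN_64_41 m')"
definition tN_32_10 :: "num \<Rightarrow> rowt" where "tN_32_10 m = (case m of Num.One \<Rightarrow> (11120, 2383, 436, 115010, 438606) | Num.Bit0 m' \<Rightarrow> tN_64_10 m' | Num.Bit1 m' \<Rightarrow> tN_64_42 m')"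
definition tN_32_11 :: "num \<Rightarrow> rowt" where "tN_32_11 m = (case m of Num.One \<Rightarrow> (11142, 2360, 436, 117393, 449726) | Num.Bit0 m' \<Rightarrow> tN_64_11 m' | Num.Bit1 m' \<Rightarrow> tN_64_43 m')"
definition tN_32_12 :: "num \<Rightarrow> rowt" where "tN_32_12 m = (case m of Num.One \<Rightarrow> (11165, 2338, 436, 119753, 460868) | Num.Bit0 m' \<Rightarrow> tN_64_12 m' | Num.Bit1 m' \<Rightarrow> tN_64_44 m')"
definition tN_32_13 :: "num \<Rightarrow> rowt" where "tN_32_13 m = (case m of Num.One \<Rightarrow> (11187, 2315, 436, 122091, 472033) | Num.Bit0 m' \<Rightarrow> tN_64_13 m' | Num.Bit1 m' \<Rightarrow> tN_64_45 m')"
definition tN_32_14 :: "num \<Rightarrow> rowt" where "tN_32_14 m = (case m of Num.One \<Rightarrow> (11210, 2293, 436, 124406, 483220) | Num.Bit0 m' \<Rightarrow> tN_64_14 m' | Num.Bit1 m' \<Rightarrow> tN_64_46 m')"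
definition tN_32_15 :: "num \<Rightarrow> rowt" where "tN_32_15 m = (case m of Num.One \<Rightarrow> (11233, 2270, 436, 126699, 494430) | Num.Bit0 m' \<Rightarrow> tN_64_15 m' | Num.Bit1 m' \<Rightarrow> tN_64_47 m')"
definition tN_32_16 :: "num \<Rightarrow> rowt" where "tN_32_16 m = (case m of Num.One \<Rightarrow> (11256, 2247, 436, 128969, 505663) | Num.Bit0 m' \<Rightarrow> tN_64_16 m' | Num.Bit1 m' \<Rightarrow> tN_64_48 m')"
definition tN_32_17 :: "num \<Rightarrow> rowt" where "tN_32_17 m = (case m of Num.One \<Rightarrow> (11279, 2223, 436, 131216, 516919) | Num.Bit0 m' \<Rightarrow> tN_64_17 m' | Num.Bit1 m' \<Rightarrow> tN_64_49 m')"
definition tN_32_18 :: "num \<Rightarrow> rowt" where "tN_32_18 m = (case m of Num.One \<Rightarrow> (11303, 2200, 436, 133439, 528198) | Num.Bit0 m' \<Rightarrow> tN_64_18 m' | Num.Bit1 m' \<Rightarrow> tN_64_50 m')"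
definition tN_32_19 :: "num \<Rightarrow> rowt" where "tN_32_19 m = (case m of Num.One \<Rightarrow> (11327, 2176, 436, 135639, 539501) | Num.Bit0 m' \<Rightarrow> tN_64_19 m' | Num.Bit1 m' \<Rightarrow> tN_64_51 m')"
definition tN_32_20 :: "num \<Rightarrow> rowt" where "tN_32_20 m = (case m of Num.One \<Rightarrow> (11350, 2152, 437, 137815, 550828) | Num.Bit0 m' \<Rightarrow> tN_64_20 m' | Num.Bit1 m' \<Rightarrow> tN_64_52 m')"
definition tN_32_21 :: "num \<Rightarrow> rowt" where "tN_32_21 m = (case m of Num.One \<Rightarrow> (11374, 2129, 437, 139967, 562178) | Num.Bit0 m' \<Rightarrow> tN_64_21 m' | Num.Bit1 m' \<Rightarrow> tN_64_53 m')"
definition tN_32_22 :: "num \<Rightarrow> rowt" where "tN_32_22 m = (case m of Num.One \<Rightarrow> (11398, 2104, 437, 142096, 573552) | Num.Bit0 m' \<Rightarrow> tN_64_22 m' | Num.Bit1 m' \<Rightarrow> tN_64_54 m')"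
definition tN_32_23 :: "num \<Rightarrow> rowt" where "tN_32_23 m = (case m of Num.One \<Rightarrow> (11423, 2080, 437, 144200, 584950) | Num.Bit0 m' \<Rightarrow> tN_64_23 m' | Num.Bit1 m' \<Rightarrow> tN_64_55 m')"
definition tN_32_24 :: "num \<Rightarrow> rowt" where "tN_32_24 m = (case m of Num.One \<Rightarrow> (11447, 2056, 437, 146280, 596373) | Num.Bit0 m' \<Rightarrow> tN_64_24 m' | Num.Bit1 m' \<Rightarrow> tN_64_56 m')"
definition tN_32_25 :: "num \<Rightarrow> rowt" where "tN_32_25 m = (case m of Num.One \<Rightarrow> (11472, 2031, 437, 148336, 607820) | Num.Bit0 m' \<Rightarrow> tN_64_25 m' | Num.Bit1 m' \<Rightarrow> tN_64_57 m')"
definition tN_32_26 :: "num \<Rightarrow> rowt" where "tN_32_26 m = (case m of Num.One \<Rightarrow> (11497, 2006, 437, 150367, 619292) | Num.Bit0 m' \<Rightarrow> tN_64_26 m' | Num.Bit1 m' \<Rightarrow> tN_64_58 m')"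
definition tN_32_27 :: "num \<Rightarrow> rowt" where "tN_32_27 m = (case m of Num.One \<Rightarrow> (11522, 1981, 437, 152373, 630789) | Num.Bit0 m' \<Rightarrow> tN_64_27 m' | Num.Bit1 m' \<Rightarrow> tN_64_59 m')"
definition tN_32_28 :: "num \<Rightarrow> rowt" where "tN_32_28 m = (case m of Num.One \<Rightarrow> (11547, 1955, 437, 154354, 642311) | Num.Bit0 m' \<Rightarrow> tN_64_28 m' | Num.Bit1 m' \<Rightarrow> tN_64_60 m')"
definition tN_32_29 :: "num \<Rightarrow> rowt" where "tN_32_29 m = (case m of Num.One \<Rightarrow> (11573, 1930, 438, 156309, 653858) | Num.Bit0 m' \<Rightarrow> tN_64_29 m' | Num.Bit1 m' \<Rightarrow> tN_64_61 m')"
definition tN_32_30 :: "num \<Rightarrow> rowt" where "tN_32_30 m = (case m of Num.One \<Rightarrow> (11599, 1904, 438, 158239, 665431) | Num.Bit0 m' \<Rightarrow> tN_64_30 m' | Num.Bit1 m' \<Rightarrow> tN_64_62 m')"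
definition tN_32_31 :: "num \<Rightarrow> rowt" where "tN_32_31 m = (case m of Num.One \<Rightarrow> (11624, 1878, 438, 160143, 677030) | Num.Bit0 m' \<Rightarrow> tN_64_31 m' | Num.Bit1 m' \<Rightarrow> tN_64_63 m')"
definition tN_16_0 :: "num \<Rightarrow> rowt" where "tN_16_0 m = (case m of Num.One \<Rightarrow> (10595, 2908, 433, 45754, 156789) | Num.Bit0 m' \<Rightarrow> tN_32_0 m' | Num.Bit1 m' \<Rightarrow> tN_32_16 m')"
definition tN_16_1 :: "num \<Rightarrow> rowt" where "tN_16_1 m = (case m of Num.One \<Rightarrow> (10613, 2890, 433, 48662, 167384) | Num.Bit0 m' \<Rightarrow> tN_32_1 m' | Num.Bit1 m' \<Rightarrow> tN_32_17 m')"
definition tN_16_2 :: "num \<Rightarrow> rowt" where "tN_16_2 m = (case m of Num.One \<Rightarrow> (10632, 2871, 433, 51552, 177997) | Num.Bit0 m' \<Rightarrow> tN_32_2 m' | Num.Bit1 m' \<Rightarrow> tN_32_18 m')"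
definition tN_16_3 :: "num \<Rightarrow> rowt" where "tN_16_3 m = (case m of Num.One \<Rightarrow> (10651, 2852, 433, 54423, 188629) | Num.Bit0 m' \<Rightarrow> tN_32_3 m' | Num.Bit1 m' \<Rightarrow> tN_32_19 m')"
definition tN_16_4 :: "num \<Rightarrow> rowt" where "tN_16_4 m = (case m of Num.One \<Rightarrow> (10669, 2833, 434, 57275, 199280) | Num.Bit0 m' \<Rightarrow> tN_32_4 m' | Num.Bit1 m' \<Rightarrow> tN_32_20 m')"
definition tN_16_5 :: "num \<Rightarrow> rowt" where "tN_16_5 m = (case m of Num.One \<Rightarrow> (10688, 2815, 434, 60108, 209949) | Num.Bit0 m' \<Rightarrow> tN_32_5 m' | Num.Bit1 m' \<Rightarrow> tN_32_21 m')"
definition tN_16_6 :: "num \<Rightarrow> rowt" where "tN_16_6 m = (case m of Num.One \<Rightarrow> (10707, 2795, 434, 62923, 220637) | Num.Bit0 m' \<Rightarrow> tN_32_6 m' | Num.Bit1 m' \<Rightarrow> tN_32_22 m')"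
definition tN_16_7 :: "num \<Rightarrow> rowt" where "tN_16_7 m = (case m of Num.One \<Rightarrow> (10727, 2776, 434, 65718, 231344) | Num.Bit0 m' \<Rightarrow> tN_32_7 m' | Num.Bit1 m' \<Rightarrow> tN_32_23 m')"
definition tN_16_8 :: "num \<Rightarrow> rowt" where "tN_16_8 m = (case m of Num.One \<Rightarrow> (10746, 2757, 434, 68494, 242071) | Num.Bit0 m' \<Rightarrow> tN_32_8 m' | Num.Bit1 m' \<Rightarrow> tN_32_24 m')"
definition tN_16_9 :: "num \<Rightarrow> rowt" where "tN_16_9 m = (case m of Num.One \<Rightarrow> (10766, 2737, 434, 71251, 252817) | Num.Bit0 m' \<Rightarrow> tN_32_9 m' | Num.Bit1 m' \<Rightarrow> tN_32_25 m')"
definition tN_16_10 :: "num \<Rightarrow> rowt" where "tN_16_10 m = (case m of Num.One \<Rightarrow> (10785, 2718, 434, 73988, 263583) | Num.Bit0 m' \<Rightarrow> tN_32_10 m' | Num.Bit1 m' \<Rightarrow> tN_32_26 m')"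
definition tN_16_11 :: "num \<Rightarrow> rowt" where "tN_16_11 m = (case m of Num.One \<Rightarrow> (10805, 2698, 434, 76706, 274368) | Num.Bit0 m' \<Rightarrow> tN_32_11 m' | Num.Bit1 m' \<Rightarrow> tN_32_27 m')"
definition tN_16_12 :: "num \<Rightarrow> rowt" where "tN_16_12 m = (case m of Num.One \<Rightarrow> (10825, 2678, 434, 79404, 285173) | Num.Bit0 m' \<Rightarrow> tN_32_12 m' | Num.Bit1 m' \<Rightarrow> tN_32_28 m')"
definition tN_16_13 :: "num \<Rightarrow> rowt" where "tN_16_13 m = (case m of Num.One \<Rightarrow> (10845, 2658, 434, 82082, 295998) | Num.Bit0 m' \<Rightarrow> tN_32_13 m' | Num.Bit1 m' \<Rightarrow> tN_32_29 m')"
definition tN_16_14 :: "num \<Rightarrow> rowt" where "tN_16_14 m = (case m of Num.One \<Rightarrow> (10865, 2637, 434, 84740, 306843) | Num.Bit0 m' \<Rightarrow> tN_32_14 m' | Num.Bit1 m' \<Rightarrow> tN_32_30 m')"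
definition tN_16_15 :: "num \<Rightarrow> rowt" where "tN_16_15 m = (case m of Num.One \<Rightarrow> (10886, 2617, 435, 87377, 317708) | Num.Bit0 m' \<Rightarrow> tN_32_15 m' | Num.Bit1 m' \<Rightarrow> tN_32_31 m')"
definition tN_8_0 :: "num \<Rightarrow> rowt" where "tN_8_0 m = (case m of Num.One \<Rightarrow> (10452, 3051, 433, 21839, 72681) | Num.Bit0 m' \<Rightarrow> tN_16_0 m' | Num.Bit1 m' \<Rightarrow> tN_16_8 m')"
definition tN_8_1 :: "num \<Rightarrow> rowt" where "tN_8_1 m = (case m of Num.One \<Rightarrow> (10469, 3034, 433, 24890, 83133) | Num.Bit0 m' \<Rightarrow> tN_16_1 m' | Num.Bit1 m' \<Rightarrow> tN_16_9 m')"
definition tN_8_2 :: "num \<Rightarrow> rowt" where "tN_8_2 m = (case m of Num.One \<Rightarrow> (10487, 3016, 433, 27924, 93602) | Num.Bit0 m' \<Rightarrow> tN_16_2 m' | Num.Bit1 m' \<Rightarrow> tN_16_10 m')"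
definition tN_8_3 :: "num \<Rightarrow> rowt" where "tN_8_3 m = (case m of Num.One \<Rightarrow> (10504, 2999, 433, 30940, 104089) | Num.Bit0 m' \<Rightarrow> tN_16_3 m' | Num.Bit1 m' \<Rightarrow> tN_16_11 m')"
definition tN_8_4 :: "num \<Rightarrow> rowt" where "tN_8_4 m = (case m of Num.One \<Rightarrow> (10522, 2981, 433, 33939, 114593) | Num.Bit0 m' \<Rightarrow> tN_16_4 m' | Num.Bit1 m' \<Rightarrow> tN_16_12 m')"
definition tN_8_5 :: "num \<Rightarrow> rowt" where "tN_8_5 m = (case m of Num.One \<Rightarrow> (10540, 2963, 433, 36920, 125115) | Num.Bit0 m' \<Rightarrow> tN_16_5 m' | Num.Bit1 m' \<Rightarrow> tN_16_13 m')"
definition tN_8_6 :: "num \<Rightarrow> rowt" where "tN_8_6 m = (case m of Num.One \<Rightarrow> (10558, 2945, 433, 39883, 135655) | Num.Bit0 m' \<Rightarrow> tN_16_6 m' | Num.Bit1 m' \<Rightarrow> tN_16_14 m')"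
definition tN_8_7 :: "num \<Rightarrow> rowt" where "tN_8_7 m = (case m of Num.One \<Rightarrow> (10576, 2926, 433, 42828, 146213) | Num.Bit0 m' \<Rightarrow> tN_16_7 m' | Num.Bit1 m' \<Rightarrow> tN_16_15 m')"
definition tN_4_0 :: "num \<Rightarrow> rowt" where "tN_4_0 m = (case m of Num.One \<Rightarrow> (10383, 3120, 432, 9461, 31047) | Num.Bit0 m' \<Rightarrow> tN_8_0 m' | Num.Bit1 m' \<Rightarrow> tN_8_4 m')"
definition tN_4_1 :: "num \<Rightarrow> rowt" where "tN_4_1 m = (case m of Num.One \<Rightarrow> (10400, 3103, 432, 12581, 41430) | Num.Bit0 m' \<Rightarrow> tN_8_1 m' | Num.Bit1 m' \<Rightarrow> tN_8_5 m')"
definition tN_4_2 :: "num \<Rightarrow> rowt" where "tN_4_2 m = (case m of Num.One \<Rightarrow> (10417, 3086, 432, 15684, 51830) | Num.Bit0 m' \<Rightarrow> tN_8_2 m' | Num.Bit1 m' \<Rightarrow> tN_8_6 m')"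
definition tN_4_3 :: "num \<Rightarrow> rowt" where "tN_4_3 m = (case m of Num.One \<Rightarrow> (10434, 3069, 433, 18770, 62247) | Num.Bit0 m' \<Rightarrow> tN_8_3 m' | Num.Bit1 m' \<Rightarrow> tN_8_7 m')"
definition tN_2_0 :: "num \<Rightarrow> rowt" where "tN_2_0 m = (case m of Num.One \<Rightarrow> (10349, 3154, 432, 3170, 10332) | Num.Bit0 m' \<Rightarrow> tN_4_0 m' | Num.Bit1 m' \<Rightarrow> tN_4_2 m')"
definition tN_2_1 :: "num \<Rightarrow> rowt" where "tN_2_1 m = (case m of Num.One \<Rightarrow> (10366, 3137, 432, 6324, 20681) | Num.Bit0 m' \<Rightarrow> tN_4_1 m' | Num.Bit1 m' \<Rightarrow> tN_4_3 m')"
definition tN_1_0 :: "num \<Rightarrow> rowt" where "tN_1_0 m = (case m of Num.One \<Rightarrow> (10332, 3170, 432, 0, 0) | Num.Bit0 m' \<Rightarrow> tN_2_0 m' | Num.Bit1 m' \<Rightarrow> tN_2_1 m')"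
definition tab :: "nat \<Rightarrow> rowt" where "tab j = tN_1_0 (num_of_nat j)"
lemmas tN_defs = tN_1_0_def tN_2_0_def tN_2_1_def tN_4_0_def tN_4_1_def tN_4_2_def tN_4_3_def tN_8_0_def tN_8_1_def tN_8_2_def tN_8_3_def tN_8_4_def tN_8_5_def tN_8_6_def tN_8_7_def tN_16_0_def tN_16_1_def tN_16_2_def tN_16_3_def tN_16_4_def tN_16_5_def tN_16_6_def tN_16_7_def tN_16_8_def tN_16_9_def tN_16_10_def tN_16_11_def tN_16_12_def tN_16_13_def tN_16_14_def tN_16_15_def tN_32_0_def tN_32_1_def tN_32_2_def tN_32_3_def tN_32_4_def tN_32_5_def tN_32_6_def tN_32_7_def tN_32_8_def tN_32_9_def tN_32_10_def tN_32_11_def tN_32_12_def tN_32_13_def tN_32_14_def tN_32_15_def tN_32_16_def tN_32_17_def tN_32_18_def tN_32_19_def tN_32_20_def tN_32_21_def tN_32_22_def tN_32_23_def tN_32_24_def tN_32_25_def tN_32_26_def tN_32_27_def tN_32_28_def tN_32_29_def tN_32_30_def tN_32_31_def tN_64_0_def tN_64_1_def tN_64_2_def tN_64_3_def tN_64_4_def tN_64_5_def tN_64_6_def tN_64_7_def tN_64_8_def tN_64_9_def tN_64_10_def tN_64_11_def tN_64_12_def tN_64_13_def tN_64_14_def tN_64_15_def tN_64_16_def tN_64_17_def tN_64_18_def tN_64_19_def tN_64_20_def tN_64_21_def tN_64_22_def tN_64_23_def tN_64_24_def tN_64_25_def tN_64_26_def tN_64_27_def tN_64_28_def tN_64_29_def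 tN_64_30_def tN_64_31_def tN_64_32_def tN_64_33_def tN_64_34_def tN_64_35_def tN_64_36_def tN_64_37_def tN_64_38_def tN_64_39_def tN_64_40_def tN_64_41_def tN_64_42_def tN_64_43_def tN_64_44_def tN_64_45_def tN_64_46_def tN_64_47_def tN_64_48_def tN_64_49_def tN_64_50_def tN_64_51_def tN_64_52_def tN_64_53_def tN_64_54_def tN_64_55_def tN_64_56_def tN_64_57_def tN_64_58_def tN_64_59_def tN_64_60_def tN_64_61_def tN_64_62_def tN_64_63_def tN_128_0_def tN_128_1_def tN_128_2_def tN_128_3_def tN_128_4_def tN_128_5_def tN_128_6_def tN_128_7_def tN_128_8_def tN_128_9_def tN_128_10_def tN_128_11_def tN_128_12_def tN_128_13_def tN_128_14_def tN_128_15_def tN_128_16_def tN_128_17_def tN_128_18_def tN_128_19_def tN_128_20_def tN_128_21_def tN_128_22_def tN_128_23_def tN_128_24_def tN_128_25_def tN_128_26_def tN_128_27_def tN_128_28_def tN_128_29_def tN_128_30_def tN_128_31_def tN_128_32_def tN_128_33_def tN_128_34_def tN_128_35_def tN_128_36_def tN_128_37_def tN_128_38_def tN_128_39_def tN_128_40_def tN_128_41_def tN_128_42_def tN_128_43_def tN_128_44_def tN_128_45_def tN_128_46_def tN_128_47_def tN_128_48_def tN_128_49_def tN_128_50_def tN_128_51_def tN_128_52_def tN_128_53_def tN_128_54_def tN_128_55_def tN_128_56_def tN_128_57_def tN_128_58_def tN_128_59_def tN_128_60_def tN_128_61_def tN_128_62_def tN_128_63_def tN_128_64_def tN_128_65_def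 tN_128_66_def tN_128_67_def tN_128_68_def tN_128_69_def tN_128_70_def tN_128_71_def tN_128_72_def tN_128_73_def tN_128_74_def tN_128_75_def tN_128_76_def tN_128_77_def tN_128_78_def tN_128_79_def tN_128_80_def tN_128_81_def tN_128_82_def tN_128_83_def tN_128_84_def tN_128_85_def tN_128_86_def tN_128_87_def tN_128_88_def tN_128_89_def tN_128_90_def tN_128_91_def tN_128_92_def tN_128_93_def tN_128_94_def tN_128_95_def tN_128_96_def tN_128_97_def tN_128_98_def tN_128_99_def tN_128_100_def tN_128_101_def tN_128_102_def tN_128_103_def tN_128_104_def tN_128_105_def tN_128_106_def tN_128_107_def tN_128_108_def tN_128_109_def tN_128_110_def tN_128_111_def tN_128_112_def tN_128_113_def tN_128_114_def tN_128_115_def tN_128_116_def tN_128_117_def tN_128_118_def tN_128_119_def tN_128_120_def tN_128_121_def tN_128_122_def tN_128_123_def tN_128_124_def tN_128_125_def tN_128_126_def tN_128_127_def tN_256_0_def tN_256_1_def tN_256_2_def tN_256_3_def tN_256_4_def tN_256_5_def tN_256_6_def tN_256_7_def tN_256_8_def tN_256_9_def tN_256_10_def tN_256_11_def tN_256_12_def tN_256_13_def tN_256_14_def tN_256_15_def tN_256_16_def tN_256_17_def tN_256_18_def tN_256_19_def tN_256_20_def tN_256_21_def tN_256_22_def tN_256_23_def tN_256_24_def tN_256_25_def tN_256_26_def tN_256_27_def tN_256_28_def tN_256_29_def tN_256_30_def tN_256_31_def tN_256_32_def tN_256_33_def tN_256_34_def tN_256_35_def tN_256_36_def tN_256_37_def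 tN_256_38_def tN_256_39_def tN_256_40_def tN_256_41_def tN_256_42_def tN_256_43_def tN_256_44_def tN_256_45_def tN_256_46_def tN_256_47_def tN_256_48_def tN_256_49_def tN_256_50_def tN_256_51_def tN_256_52_def tN_256_53_def tN_256_54_def tN_256_55_def tN_256_56_def tN_256_57_def tN_256_58_def tN_256_59_def tN_256_60_def tN_256_61_def tN_256_62_def tN_256_63_def tN_256_64_def tN_256_65_def tN_256_66_def tN_256_67_def tN_256_68_def tN_256_69_def tN_256_70_def tN_256_71_def tN_256_72_def tN_256_73_def tN_256_74_def tN_256_75_def tN_256_76_def tN_256_77_def tN_256_78_def tN_256_79_def tN_256_80_def tN_256_81_def tN_256_82_def tN_256_83_def tN_256_84_def tN_256_85_def tN_256_86_def tN_256_87_def tN_256_88_def tN_256_89_def tN_256_90_def tN_256_91_def tN_256_92_def tN_256_93_def tN_256_94_def tN_256_95_def tN_256_96_def tN_256_97_def tN_256_98_def tN_256_99_def tN_256_100_def tN_256_101_def tN_256_102_def tN_256_103_def tN_256_104_def tN_256_105_def tN_256_106_def tN_256_107_def tN_256_108_def tN_256_109_def tN_256_110_def tN_256_111_def tN_256_112_def tN_256_113_def tN_256_114_def tN_256_115_def tN_256_116_def tN_256_117_def tN_256_118_def tN_256_119_def tN_256_120_def tN_256_121_def tN_256_122_def tN_256_123_def tN_256_124_def tN_256_125_def tN_256_126_def tN_256_127_def tN_256_128_def tN_256_129_def tN_256_130_def tN_256_131_def tN_256_132_def tN_256_133_def tN_256_134_def tN_256_135_def tN_256_136_def tN_256_137_def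 tN_256_138_def tN_256_139_def tN_256_140_def tN_256_141_def tN_256_142_def tN_256_143_def tN_256_144_def tN_256_145_def tN_256_146_def tN_256_147_def tN_256_148_def tN_256_149_def tN_256_150_def tN_256_151_def tN_256_152_def tN_256_153_def tN_256_154_def tN_256_155_def tN_256_156_def tN_256_157_def tN_256_158_def tN_256_159_def tN_256_160_def tN_256_161_def tN_256_162_def tN_256_163_def tN_256_164_def tN_256_165_def tN_256_166_def tN_256_167_def tN_256_168_def tN_256_169_def tN_256_170_def tN_256_171_def tN_256_172_def tN_256_173_def tN_256_174_def tN_256_175_def tN_256_176_def tN_256_177_def tN_256_178_def tN_256_179_def tN_256_180_def tN_256_181_def tN_256_182_def tN_256_183_def tN_256_184_def tN_256_185_def tN_256_186_def tN_256_187_def tN_256_188_def tN_256_189_def tN_256_190_def tN_256_191_def tN_256_192_def tN_256_193_def tN_256_194_def tN_256_195_def tN_256_196_def tN_256_197_def tN_256_198_def tN_256_199_def tN_256_200_def tN_256_201_def tN_256_202_def tN_256_203_def tN_256_204_def tN_256_205_def tN_256_206_def tN_256_207_def tN_256_208_def tN_256_209_def tN_256_210_def tN_256_211_def tN_256_212_def tN_256_213_def tN_256_214_def tN_256_215_def tN_256_216_def tN_256_217_def tN_256_218_def tN_256_219_def tN_256_220_def tN_256_221_def tN_256_222_def tN_256_223_def tN_256_224_def tN_256_225_def tN_256_226_def tN_256_227_def tN_256_228_def tN_256_229_def tN_256_230_def tN_256_231_def tN_256_232_def tN_256_233_def tN_256_234_def tN_256_235_def tN_256_236_def tN_256_237_def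 tN_256_238_def tN_256_239_def tN_256_240_def tN_256_241_def tN_256_242_def tN_256_243_def tN_256_244_def tN_256_245_def tN_256_246_def tN_256_247_def tN_256_248_def tN_256_249_def tN_256_250_def tN_256_251_def tN_256_252_def tN_256_253_def tN_256_254_def tN_256_255_def tN_512_0_def tN_512_1_def tN_512_2_def tN_512_3_def tN_512_4_def tN_512_5_def tN_512_6_def tN_512_7_def tN_512_8_def tN_512_9_def tN_512_10_def tN_512_11_def tN_512_12_def tN_512_13_def tN_512_14_def tN_512_15_def tN_512_16_def tN_512_17_def tN_512_18_def tN_512_19_def tN_512_20_def tN_512_21_def tN_512_22_def tN_512_23_def tN_512_24_def tN_512_25_def tN_512_26_def tN_512_27_def tN_512_28_def tN_512_29_def tN_512_30_def tN_512_31_def tN_512_32_def tN_512_33_def tN_512_34_def tN_512_35_def tN_512_36_def tN_512_37_def tN_512_38_def tN_512_39_def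
definition "Kc = (550::nat)"
definition "Fc = (3913613::int)"
definition "Mc = (40506::int)"
definition "Tc = (120::nat)"

definition At :: "nat \<Rightarrow> int" where "At j = fst (tab j)"
definition Dt :: "nat \<Rightarrow> int" where "Dt j = fst (snd (tab j))"
definition Qt :: "nat \<Rightarrow> nat" where "Qt j = fst (snd (snd (tab j)))"
definition Pt :: "nat \<Rightarrow> int" where "Pt j = fst (snd (snd (snd (tab j))))"
definition PAt :: "nat \<Rightarrow> int" where "PAt j = snd (snd (snd (snd (tab j))))"
lemma tab_num: "tab (numeral n) = tN_1_0 n" "tab 1 = tN_1_0 Num.One" "tab (Suc 0) = tN_1_0 Num.One" by (simp_all add: tab_def)
lemma two_nat: "Suc (Suc 0) = 2" by simp
fun allr :: "(nat \<Rightarrow> bool) \<Rightarrow> nat \<Rightarrow> nat \<Rightarrow> bool" where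
  "allr P a 0 = True" | "allr P a (Suc n) = (P a \<and> allr P (a+1) n)"
lemma allr_num: "allr P a (numeral n) = (P a \<and> allr P (a+1) (pred_numeral n))"
  by (simp add: numeral_eq_Suc)
lemma allr_app: "allr P a n \<Longrightarrow> allr P (a+n) m \<Longrightarrow> allr P a (n+m)"
  by (induction n arbitrary: a) auto

lemma allr_sound: "allr P a n \<Longrightarrow> a \<le> j \<Longrightarrow> j < a + n \<Longrightarrow> P j"
proof (induction n arbitrary: a)
  case 0 then show ?case by simp
next
  case (Suc n)
  show ?case
  proof (cases "a = j")
    case True then show ?thesis using Suc.prems by simp
  next
    case False
    then have "Suc a \<le> j" using Suc.prems by simp
    moreover have "allr P (Suc a) n" using Suc.prems by simp
    ultimately show ?thesis using Suc.IH[of "Suc a"] Suc.prems by simp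
  qed
qed

definition Pc :: "nat \<Rightarrow> bool" where
 "Pc j = (case tab j of (a, dd, q, p, pa) \<Rightarrow> case tab (j+1) of (a', d', _, p', pa') \<Rightarrow>
   case tab q of (_, dq, _, pq, _) \<Rightarrow> case tab (q-1) of (_, dq1, _, _, _) \<Rightarrow>
   0 \<le> dd \<and> dd \<le> a \<and> a - 3*dd \<le> Mc \<and> Mc \<le> 3*a + 3*dd \<and>
   (j < Kc \<longrightarrow> a \<le> a') \<and>
   j \<le> q \<and> q \<le> Kc+1 \<and> (q \<le> Kc \<longrightarrow> Tc \<le> q \<and> a \<le> dq) \<and> (j < q \<longrightarrow> dq1 \<le> a) \<and>
   int (q-j)*a - (pq - p) \<le> Fc \<and>
   p' = p + dd \<and> pa' = pa + a \<and>
   (j+1 < Tc \<longrightarrow> d' \<le> dd) \<and> (Tc \<le> j \<and> j < Kc \<longrightarrow> dd \<le> d'))"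

lemma Pc_eq: "Pc j = Pg At Dt Qt Pt PAt Kc Tc Fc Mc j"
  unfolding Pc_def Pg_def At_def Dt_def Qt_def Pt_def PAt_def Let_def
  by (simp split: prod.splits)

lemmas evs = Pc_def tab_num tN_defs allr_num two_nat Kc_def Tc_def Fc_def Mc_def
lemma ch0: "allr Pc 1 55" by (simp add: evs cong: num.case_cong_weak prod.case_cong_weak)
lemma ch1: "allr Pc 56 55" by (simp add: evs cong: num.case_cong_weak prod.case_cong_weak)
lemma ch2: "allr Pc 111 55" by (simp add: evs cong: num.case_cong_weak prod.case_cong_weak)
lemma ch3: "allr Pc 166 55" by (simp add: evs cong: num.case_cong_weak prod.case_cong_weak)
lemma ch4: "allr Pc 221 55" by (simp add: evs cong: num.case_cong_weak prod.case_cong_weak)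
lemma ch5: "allr Pc 276 55" by (simp add: evs cong: num.case_cong_weak prod.case_cong_weak)
lemma ch6: "allr Pc 331 55" by (simp add: evs cong: num.case_cong_weak prod.case_cong_weak)
lemma ch7: "allr Pc 386 55" by (simp add: evs cong: num.case_cong_weak prod.case_cong_weak)
lemma ch8: "allr Pc 441 55" by (simp add: evs cong: num.case_cong_weak prod.case_cong_weak)
lemma ch9: "allr Pc 496 55" by (simp add: evs cong: num.case_cong_weak prod.case_cong_weak)

lemma all_chunks: "allr Pc 1 550"
proof -
  have "allr Pc 1 110" using allr_app[OF ch0, of 55] ch1 by simp
  then have "allr Pc 1 165" using allr_app[of Pc 1 110 55] ch2 by simp
  then have "allr Pc 1 220" using allr_app[of Pc 1 165 55] ch3 by simp
  then have "allr Pc 1 275" using allr_app[of Pc 1 220 55] ch4 by simp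
  then have "allr Pc 1 330" using allr_app[of Pc 1 275 55] ch5 by simp
  then have "allr Pc 1 385" using allr_app[of Pc 1 330 55] ch6 by simp
  then have "allr Pc 1 440" using allr_app[of Pc 1 385 55] ch7 by simp
  then have "allr Pc 1 495" using allr_app[of Pc 1 440 55] ch8 by simp
  then show "allr Pc 1 550" using allr_app[of Pc 1 495 55] ch9 by simp
qed

theorem lemma4:
  shows "(SUP k\<in>{1::nat..}. lp_value k) \<ge> ereal 3.220"
proof (rule main_gen)
  show "\<forall>j\<in>{1..Kc}. Pg At Dt Qt Pt PAt Kc Tc Fc Mc j"
  proof
    fix j assume "j \<in> {1..Kc}"
    then have "1 \<le> j" "j < 1 + 550" by (auto simp: Kc_def)
    then have "Pc j" using allr_sound[OF all_chunks] by blast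
    then show "Pg At Dt Qt Pt PAt Kc Tc Fc Mc j" by (simp add: Pc_eq)
  qed
  show "1 \<le> Kc" by (simp add: Kc_def)
  show "Pt 1 = 0" by (simp add: Pt_def evs cong: num.case_cong_weak prod.case_cong_weak)
  show "PAt 1 = 0" by (simp add: PAt_def evs cong: num.case_cong_weak prod.case_cong_weak)
  show "0 \<le> Fc" by (simp add: Fc_def)
  show "0 < Fc + Pt (Suc Kc)" by (simp add: Pt_def evs cong: num.case_cong_weak prod.case_cong_weak)
  show "322 * (Fc + Pt (Suc Kc)) \<le> 100 * PAt (Suc Kc)"
    by (simp add: Pt_def PAt_def evs cong: num.case_cong_weak prod.case_cong_weak)
qed

end
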